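(* The class of ph-homogeneous partial cubes is closed under convex subgraphs, gated amalgams, and finite Cartesian products as well as (weak) Cartesian products of infinite families.
   Context: Graphs are simple, undirected, possibly infinite. In a connected graph $G$, $I_G(x,y)$ is the set of vertices on shortest $(x,y)$-paths; $A\subseteq V(G)$ is convex if $I_G(x,y)\subseteq A$ for all $x,y\in A$; $co_G(A)$ is the convex hull; a subgraph is convex if its vertex set is convex; $\mathcal{I}_G(A)=\bigcup_{x,y\in A}I_G(x,y)$. A partial cube is an isometric subgraph of a (possibly infinite) hypercube. A copoint at $x$ is a convex set maximal with respect to not containing $x$. The pre-hull number $ph(G)$ is the least $n$ with $co_G(C\cup\{x\})=\mathcal{I}^n_G(C\cup\{x\})$ for every vertex $x$ and every copoint $C$ at $x$. A graph is ph-homogeneous if each of its finite convex subgraphs has pre-hull number at most $1$. A set $A$ is gated if every vertex $x$ has a vertex $y\in A$ with $y\in I_G(x,z)$ for all $z\in A$. A graph $G$ is the gated amalgam of $G_0$ and $G_1$ if $G_0,G_1$ are isomorphic to two intersecting gated subgraphs of $G$ whose union is $G$. The weak Cartesian product of an infinite family of connected graphs is a connected component of their Cartesian product. *)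

theory Defs
  imports Main "HOL-Library.FuncSet"
begin

type_synonym 'a graph = "'a set \<times> ('a \<times> 'a) set"

definition verts :: "'a graph \<Rightarrow> 'a set" where
  "verts G = fst G"

definition edges :: "'a graph \<Rightarrow> ('a \<times> 'a) set" where
  "edges G = snd G"

definition graph :: "'a graph \<Rightarrow> bool" where
  "graph G \<longleftrightarrow> edges G \<subseteq> verts G \<times> verts G \<and> sym (edges G) \<and> irrefl (edges G)"

text \<open>A walk is a nonempty list of vertices, consecutive ones adjacent; it has
  length p - 1 (number of edges).\<close>
definition walk :: "'a graph \<Rightarrow> 'a list \<Rightarrow> bool" where
  "walk G p \<longleftrightarrow> p \<noteq> [] \<and> set p \<subseteq> verts G \<and>
     (\<forall>i. Suc i < length p \<longrightarrow> (p ! i, p ! Suc i) \<in> edges G)"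

definition connected_graph :: "'a graph \<Rightarrow> bool" where
  "connected_graph G \<longleftrightarrow> verts G \<noteq> {} \<and>
     (\<forall>x\<in>verts G. \<forall>y\<in>verts G. \<exists>p. walk G p \<and> hd p = x \<and> last p = y)"

definition induced :: "'a graph \<Rightarrow> 'a set \<Rightarrow> 'a graph" where
  "induced G A = (A, edges G \<inter> (A \<times> A))"

definition subgraph :: "'a graph \<Rightarrow> 'a graph \<Rightarrow> bool" where
  "subgraph H G \<longleftrightarrow> graph H \<and> verts H \<subseteq> verts G \<and> edges H \<subseteq> edges G"

definition graph_iso :: "'a graph \<Rightarrow> 'b graph \<Rightarrow> bool" where
  "graph_iso G H \<longleftrightarrow> (\<exists>f. bij_betw f (verts G) (verts H) \<and>
     (\<forall>u\<in>verts G. \<forall>v\<in>verts G. (u, v) \<in> edges G \<longleftrightarrow> (f u, f v) \<in> edges H))"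

definition dist :: "'a graph \<Rightarrow> 'a \<Rightarrow> 'a \<Rightarrow> nat" where
  "dist G x y = (LEAST n. \<exists>p. walk G p \<and> hd p = x \<and> last p = y \<and> length p = Suc n)"

definition interval :: "'a graph \<Rightarrow> 'a \<Rightarrow> 'a \<Rightarrow> 'a set" where
  "interval G x y = {z. \<exists>p. walk G p \<and> hd p = x \<and> last p = y \<and>
      length p = Suc (dist G x y) \<and> z \<in> set p}"

definition convex :: "'a graph \<Rightarrow> 'a set \<Rightarrow> bool" where
  "convex G A \<longleftrightarrow> A \<subseteq> verts G \<and> (\<forall>x\<in>A. \<forall>y\<in>A. interval G x y \<subseteq> A)"

definition convex_hull :: "'a graph \<Rightarrow> 'a set \<Rightarrow> 'a set" where
  "convex_hull G A = \<Inter> {C. convex G C \<and> A \<subseteq> C}"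

definition interval_set :: "'a graph \<Rightarrow> 'a set \<Rightarrow> 'a set" where
  "interval_set G A = (\<Union>x\<in>A. \<Union>y\<in>A. interval G x y)"

definition copoint :: "'a graph \<Rightarrow> 'a \<Rightarrow> 'a set \<Rightarrow> bool" where
  "copoint G x C \<longleftrightarrow> convex G C \<and> x \<notin> C \<and>
     (\<forall>D. convex G D \<and> C \<subseteq> D \<and> x \<notin> D \<longrightarrow> D = C)"

text \<open>The defining property of the pre-hull number for a given n.\<close>
definition ph_property :: "'a graph \<Rightarrow> nat \<Rightarrow> bool" where
  "ph_property G n \<longleftrightarrow> (\<forall>x\<in>verts G. \<forall>C. copoint G x C \<longrightarrow>
      convex_hull G (insert x C) = (interval_set G ^^ n) (insert x C))"

text \<open>ph(G) \<le> k: the least n with ph_property exists and is at most k.\<close>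
definition ph_at_most :: "'a graph \<Rightarrow> nat \<Rightarrow> bool" where
  "ph_at_most G k \<longleftrightarrow> (\<exists>n\<le>k. ph_property G n)"

definition ph_homogeneous :: "'a graph \<Rightarrow> bool" where
  "ph_homogeneous G \<longleftrightarrow> (\<forall>A. finite A \<and> convex G A \<longrightarrow> ph_at_most (induced G A) 1)"

definition hypercube :: "'i set \<Rightarrow> 'i set graph" where
  "hypercube X = ({S. S \<subseteq> X \<and> finite S},
      {(S, T). S \<subseteq> X \<and> finite S \<and> T \<subseteq> X \<and> finite T \<and> card ((S - T) \<union> (T - S)) = 1})"

definition isometric_subgraph :: "'a graph \<Rightarrow> 'a graph \<Rightarrow> bool" where
  "isometric_subgraph H G \<longleftrightarrow> subgraph H G \<and> connected_graph H \<and>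
     (\<forall>u\<in>verts H. \<forall>v\<in>verts H. dist H u v = dist G u v)"

text \<open>Coordinates are taken in the type 'a set (e.g. half-spaces); this type is always
  large enough.\<close>
definition partial_cube :: "'a graph \<Rightarrow> bool" where
  "partial_cube G \<longleftrightarrow> graph G \<and>
     (\<exists>(X :: 'a set set) H. isometric_subgraph H (hypercube X) \<and> graph_iso G H)"

definition gated :: "'a graph \<Rightarrow> 'a set \<Rightarrow> bool" where
  "gated G A \<longleftrightarrow> A \<subseteq> verts G \<and>
     (\<forall>x\<in>verts G. \<exists>y\<in>A. \<forall>z\<in>A. y \<in> interval G x z)"

definition gated_amalgam :: "'a graph \<Rightarrow> 'b graph \<Rightarrow> 'c graph \<Rightarrow> bool" where
  "gated_amalgam G G0 G1 \<longleftrightarrow> graph G \<and> connected_graph G \<and>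
     (\<exists>A0 A1. gated G A0 \<and> gated G A1 \<and> A0 \<inter> A1 \<noteq> {} \<and>
        A0 \<union> A1 = verts G \<and>
        edges G = edges (induced G A0) \<union> edges (induced G A1) \<and>
        graph_iso (induced G A0) G0 \<and> graph_iso (induced G A1) G1)"

definition cart_prod :: "'i set \<Rightarrow> ('i \<Rightarrow> 'a graph) \<Rightarrow> ('i \<Rightarrow> 'a) graph" where
  "cart_prod I Gs = (PiE I (\<lambda>i. verts (Gs i)),
     {(f, g). f \<in> PiE I (\<lambda>i. verts (Gs i)) \<and> g \<in> PiE I (\<lambda>i. verts (Gs i)) \<and>
        (\<exists>i\<in>I. (f i, g i) \<in> edges (Gs i) \<and> (\<forall>j\<in>I. j \<noteq> i \<longrightarrow> f j = g j))})"

definition component :: "'a graph \<Rightarrow> 'a \<Rightarrow> 'a graph" where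
  "component G a = induced G {b. \<exists>p. walk G p \<and> hd p = a \<and> last p = b}"

definition weak_cart_prod :: "'i set \<Rightarrow> ('i \<Rightarrow> 'a graph) \<Rightarrow> ('i \<Rightarrow> 'a) \<Rightarrow> ('i \<Rightarrow> 'a) graph" where
  "weak_cart_prod I Gs a = component (cart_prod I Gs) a"

end

theory Submission
  imports Defs
begin


definition reach :: "'a graph \<Rightarrow> 'a \<Rightarrow> 'a \<Rightarrow> bool" where
  "reach G x y \<longleftrightarrow> (\<exists>p. walk G p \<and> hd p = x \<and> last p = y)"

lemma walk_single: "x \<in> verts G \<Longrightarrow> walk G [x]"
  by (auto simp: walk_def)

lemma walk_verts: "walk G p \<Longrightarrow> x \<in> set p \<Longrightarrow> x \<in> verts G"
  by (auto simp: walk_def)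

lemma walk_hd: "walk G p \<Longrightarrow> hd p \<in> verts G"
  by (auto simp: walk_def)

lemma walk_last: "walk G p \<Longrightarrow> last p \<in> verts G"
  by (auto simp: walk_def)

lemma walk_Cons: "walk G (x # p) \<longleftrightarrow> x \<in> verts G \<and> (p = [] \<or> (walk G p \<and> (x, hd p) \<in> edges G))"
proof (cases p)
  case Nil
  then show ?thesis by (auto simp: walk_def)
next
  case (Cons y q)
  show ?thesis
  proof
    assume w: "walk G (x # p)"
    have "\<forall>i. Suc i < length p \<longrightarrow> (p ! i, p ! Suc i) \<in> edges G"
    proof (intro allI impI)
      fix i assume "Suc i < length p"
      then have "Suc (Suc i) < length (x # p)" by simp
      with w have "((x#p) ! Suc i, (x#p) ! Suc (Suc i)) \<in> edges G" unfolding walk_def by blast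
      then show "(p ! i, p ! Suc i) \<in> edges G" by simp
    qed
    moreover have "(x, hd p) \<in> edges G" using w Cons unfolding walk_def by force
    ultimately show "x \<in> verts G \<and> (p = [] \<or> (walk G p \<and> (x, hd p) \<in> edges G))"
      using w Cons unfolding walk_def by auto
  next
    assume h: "x \<in> verts G \<and> (p = [] \<or> (walk G p \<and> (x, hd p) \<in> edges G))"
    then have wp: "walk G p" and e: "(x, hd p) \<in> edges G" using Cons by auto
    show "walk G (x # p)" unfolding walk_def
    proof (intro conjI allI impI)
      show "x # p \<noteq> []" by simp
      show "set (x # p) \<subseteq> verts G" using h wp by (auto simp: walk_def)
      fix i assume "Suc i < length (x # p)"
      then show "((x # p) ! i, (x # p) ! Suc i) \<in> edges G"
        using wp e Cons by (cases i) (auto simp: walk_def)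
    qed
  qed
qed

lemma walk_ConsCons: "walk G (x # y # p) \<longleftrightarrow> (x, y) \<in> edges G \<and> x \<in> verts G \<and> walk G (y # p)"
  by (auto simp: walk_Cons)

lemma walk_append:
  assumes "walk G p" "walk G q" "last p = hd q"
  shows "walk G (p @ tl q)"
  using assms
proof (induction p)
  case Nil then show ?case by (simp add: walk_def)
next
  case (Cons x p)
  show ?case
  proof (cases p)
    case Nil
    then show ?thesis using Cons.prems by (cases q) auto
  next
    case (Cons y r)
    then have "walk G p" "(x, y) \<in> edges G" "x \<in> verts G" using Cons.prems by (auto simp: walk_Cons)
    moreover have "last p = hd q" using Cons.prems \<open>p = y # r\<close> by simp
    ultimately have "walk G (p @ tl q)" using Cons.IH Cons.prems by blast
    then show ?thesis using \<open>p = y # r\<close> \<open>(x, y) \<in> edges G\<close> \<open>x \<in> verts G\<close>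
      by (simp add: walk_Cons)
  qed
qed

lemma hd_append_tl: "p \<noteq> [] \<Longrightarrow> hd (p @ tl q) = hd p" by simp

lemma last_append_tl: "p \<noteq> [] \<Longrightarrow> q \<noteq> [] \<Longrightarrow> last p = hd q \<Longrightarrow> last (p @ tl q) = last q"
  by (cases q) auto

lemma walk_nonempty: "walk G p \<Longrightarrow> p \<noteq> []" by (simp add: walk_def)

lemma walk_rev:
  assumes "graph G" "walk G p"
  shows "walk G (rev p)"
  unfolding walk_def
proof (intro conjI allI impI)
  show "rev p \<noteq> []" "set (rev p) \<subseteq> verts G" using assms(2) by (auto simp: walk_def)
  fix i assume i: "Suc i < length (rev p)"
  let ?n = "length p"
  have a: "rev p ! i = p ! (?n - Suc i)" using i by (simp add: rev_nth)
  have b: "rev p ! Suc i = p ! (?n - Suc (Suc i))" using i by (simp add: rev_nth)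
  have e: "Suc (?n - Suc (Suc i)) = ?n - Suc i" using i by simp
  have "Suc (?n - Suc (Suc i)) < ?n" using i by simp
  then have "(p ! (?n - Suc (Suc i)), p ! Suc (?n - Suc (Suc i))) \<in> edges G"
    using assms(2) unfolding walk_def by blast
  then have "(p ! (?n - Suc (Suc i)), p ! (?n - Suc i)) \<in> edges G" by (simp only: e)
  then show "(rev p ! i, rev p ! Suc i) \<in> edges G"
    using assms(1) a b unfolding graph_def by (metis symD)
qed

lemma walk_take: "walk G p \<Longrightarrow> 0 < n \<Longrightarrow> walk G (take n p)"
  unfolding walk_def by (auto dest: in_set_takeD)

lemma walk_drop: "walk G p \<Longrightarrow> n < length p \<Longrightarrow> walk G (drop n p)"
  unfolding walk_def by (auto dest: in_set_dropD)

lemma reach_refl: "x \<in> verts G \<Longrightarrow> reach G x x"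
  unfolding reach_def by (rule exI[of _ "[x]"]) (simp add: walk_def)

lemma reach_trans: "reach G x y \<Longrightarrow> reach G y z \<Longrightarrow> reach G x z"
  unfolding reach_def
proof (elim exE conjE)
  fix p q assume *: "walk G p" "hd p = x" "last p = y" "walk G q" "hd q = y" "last q = z"
  then show "\<exists>p. walk G p \<and> hd p = x \<and> last p = z"
    by (intro exI[of _ "p @ tl q"])
       (auto simp: walk_append walk_nonempty last_append_tl)
qed

lemma reach_sym: "graph G \<Longrightarrow> reach G x y \<Longrightarrow> reach G y x"
  unfolding reach_def
  by (metis walk_rev walk_nonempty hd_rev last_rev)

lemma reach_verts: "reach G x y \<Longrightarrow> x \<in> verts G \<and> y \<in> verts G"
  unfolding reach_def using walk_hd walk_last by blast

lemma reach_edge: "(x, y) \<in> edges G \<Longrightarrow> graph G \<Longrightarrow> reach G x y"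
  unfolding reach_def graph_def
  by (rule exI[of _ "[x, y]"]) (auto simp: walk_def less_Suc_eq)

lemma connected_reach: "connected_graph G \<Longrightarrow> x \<in> verts G \<Longrightarrow> y \<in> verts G \<Longrightarrow> reach G x y"
  unfolding connected_graph_def reach_def by blast

section \<open>Distance\<close>

lemma dist_witness:
  assumes "reach G x y"
  shows "\<exists>p. walk G p \<and> hd p = x \<and> last p = y \<and> length p = Suc (dist G x y)"
proof -
  obtain p where p: "walk G p" "hd p = x" "last p = y" using assms unfolding reach_def by blast
  then have "p \<noteq> []" by (simp add: walk_nonempty)
  then have "\<exists>n p. walk G p \<and> hd p = x \<and> last p = y \<and> length p = Suc n"
    using p by (intro exI[of _ "length p - 1"] exI[of _ p]) simp
  then show ?thesis unfolding dist_def by (rule LeastI_ex)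
qed

lemma dist_le_walk:
  assumes "walk G p" "hd p = x" "last p = y"
  shows "dist G x y \<le> length p - 1"
proof -
  have "p \<noteq> []" using assms by (simp add: walk_nonempty)
  then have "length p = Suc (length p - 1)" by simp
  then show ?thesis unfolding dist_def using assms by (intro Least_le) blast
qed

lemma dist_self: "x \<in> verts G \<Longrightarrow> dist G x x = 0"
  using dist_le_walk[of G "[x]" x x] by (simp add: walk_single)

lemma dist_0_eq:
  assumes "reach G x y" "dist G x y = 0" shows "x = y"
proof -
  obtain p where "walk G p" "hd p = x" "last p = y" "length p = Suc 0"
    using dist_witness[OF assms(1)] assms(2) by auto
  then show ?thesis by (cases p) auto
qed

lemma dist_sym:
  assumes "graph G" "reach G x y" shows "dist G x y = dist G y x"
proof -
  have "dist G y x \<le> dist G x y"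
  proof -
    obtain p where p: "walk G p" "hd p = x" "last p = y" "length p = Suc (dist G x y)"
      using dist_witness[OF assms(2)] by blast
    then have "walk G (rev p)" using walk_rev assms(1) by blast
    moreover have "hd (rev p) = y" "last (rev p) = x" using p walk_nonempty
      by (auto simp: hd_rev last_rev)
    ultimately show ?thesis using dist_le_walk[of G "rev p" y x] p by simp
  qed
  moreover have "dist G x y \<le> dist G y x"
  proof -
    obtain p where p: "walk G p" "hd p = y" "last p = x" "length p = Suc (dist G y x)"
      using dist_witness[OF reach_sym[OF assms]] by blast
    then have "walk G (rev p)" using walk_rev assms(1) by blast
    moreover have "hd (rev p) = x" "last (rev p) = y" using p walk_nonempty
      by (auto simp: hd_rev last_rev)
    ultimately show ?thesis using dist_le_walk[of G "rev p" x y] p by simp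
  qed
  ultimately show ?thesis by simp
qed

lemma dist_triangle:
  assumes "reach G x y" "reach G y z"
  shows "dist G x z \<le> dist G x y + dist G y z"
proof -
  obtain p where p: "walk G p" "hd p = x" "last p = y" "length p = Suc (dist G x y)"
    using dist_witness[OF assms(1)] by blast
  obtain q where q: "walk G q" "hd q = y" "last q = z" "length q = Suc (dist G y z)"
    using dist_witness[OF assms(2)] by blast
  have ne: "p \<noteq> []" "q \<noteq> []" using p q by (auto simp: walk_def)
  have "walk G (p @ tl q)" using p q walk_append by metis
  moreover have "hd (p @ tl q) = x" "last (p @ tl q) = z" using p q ne
    by (auto simp: last_append_tl)
  ultimately have "dist G x z \<le> length (p @ tl q) - 1" by (rule dist_le_walk)
  then show ?thesis using p q by simp
qed

lemma dist_edge:
  assumes "graph G" "(x, y) \<in> edges G" shows "dist G x y = 1"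
proof -
  have "walk G [x, y]" using assms unfolding graph_def walk_def by (auto simp: less_Suc_eq)
  then have "dist G x y \<le> 1" using dist_le_walk[of G "[x,y]" x y] by simp
  moreover have "x \<noteq> y" using assms unfolding graph_def irrefl_def by auto
  then have "dist G x y \<noteq> 0" using dist_0_eq reach_edge assms by metis
  ultimately show ?thesis by simp
qed

lemma dist_1_edge:
  assumes "reach G x y" "dist G x y = 1" shows "(x, y) \<in> edges G"
proof -
  obtain p where p: "walk G p" "hd p = x" "last p = y" "length p = 2"
    using dist_witness[OF assms(1)] assms(2) by auto
  then obtain a b where "p = [a, b]" by (cases p; cases "tl p") auto
  then show ?thesis using p unfolding walk_def by auto
qed

text \<open>lower bound through a potential function\<close>
lemma walk_potential:
  assumes "walk G p" "\<And>u v. (u, v) \<in> edges G \<Longrightarrow> f u \<le> f v + (1::nat)"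
  shows "f (hd p) \<le> f (last p) + (length p - 1)"
  using assms(1)
proof (induction p)
  case Nil then show ?case by (simp add: walk_def)
next
  case (Cons x p)
  show ?case
  proof (cases p)
    case Nil then show ?thesis by simp
  next
    case (Cons y q)
    then have "walk G p" "(x, y) \<in> edges G" using Cons.prems by (auto simp: walk_Cons)
    then have "f (hd p) \<le> f (last p) + (length p - 1)" "f x \<le> f y + 1"
      using Cons.IH assms(2) by auto
    then show ?thesis using \<open>p = y # q\<close> by simp
  qed
qed

lemma dist_potential:
  assumes "reach G x y" "\<And>u v. (u, v) \<in> edges G \<Longrightarrow> f u \<le> f v + (1::nat)"
  shows "f x \<le> f y + dist G x y"
proof -
  obtain p where p: "walk G p" "hd p = x" "last p = y" "length p = Suc (dist G x y)"
    using dist_witness[OF assms(1)] by blast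
  then show ?thesis using walk_potential[OF p(1) assms(2)] by simp
qed

lemma walk_change:
  assumes "walk G p" "P (hd p)" "\<not> P (last p)"
  shows "\<exists>u v. (u, v) \<in> edges G \<and> P u \<and> \<not> P v"
  using assms
proof (induction p)
  case Nil then show ?case by (simp add: walk_def)
next
  case (Cons x p)
  show ?case
  proof (cases p)
    case Nil then show ?thesis using Cons.prems by simp
  next
    case (Cons y q)
    then have w: "walk G p" "(x, y) \<in> edges G" using Cons.prems by (auto simp: walk_Cons)
    show ?thesis
    proof (cases "P y")
      case True
      then show ?thesis using Cons.IH w Cons.prems \<open>p = y # q\<close> by auto
    next
      case False
      then show ?thesis using w Cons.prems by auto
    qed
  qed
qed

section \<open>Intervals\<close>

lemma interval_char:
  assumes "graph G" "reach G x y"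
  shows "z \<in> interval G x y \<longleftrightarrow> reach G x z \<and> reach G z y \<and> dist G x z + dist G z y = dist G x y"
proof
  assume "z \<in> interval G x y"
  then obtain p where p: "walk G p" "hd p = x" "last p = y" "length p = Suc (dist G x y)" "z \<in> set p"
    unfolding interval_def by blast
  then obtain i where i: "i < length p" "p ! i = z" by (auto simp: in_set_conv_nth)
  let ?p1 = "take (Suc i) p" and ?p2 = "drop i p"
  have w1: "walk G ?p1" using walk_take p by blast
  have w2: "walk G ?p2" using walk_drop p i by blast
  have h1: "hd ?p1 = x" "last ?p1 = z" using p(2) i
    by (simp, simp add: take_Suc_conv_app_nth[OF i(1)])
  have h2: "hd ?p2 = z" "last ?p2 = y" using p i by (auto simp: hd_drop_conv_nth)
  have r1: "reach G x z" using w1 h1 unfolding reach_def by blast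
  have r2: "reach G z y" using w2 h2 unfolding reach_def by blast
  have "dist G x z \<le> i" using dist_le_walk[OF w1 h1] i by simp
  moreover have "dist G z y \<le> length p - 1 - i" using dist_le_walk[OF w2 h2] i by simp
  moreover have "dist G x y \<le> dist G x z + dist G z y" by (rule dist_triangle[OF r1 r2])
  ultimately have "dist G x z + dist G z y = dist G x y" using p(4) i(1) by linarith
  then show "reach G x z \<and> reach G z y \<and> dist G x z + dist G z y = dist G x y"
    using r1 r2 by blast
next
  assume h: "reach G x z \<and> reach G z y \<and> dist G x z + dist G z y = dist G x y"
  obtain p where p: "walk G p" "hd p = x" "last p = z" "length p = Suc (dist G x z)"
    using dist_witness[of G x z] h by blast
  obtain q where q: "walk G q" "hd q = z" "last q = y" "length q = Suc (dist G z y)"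
    using dist_witness[of G z y] h by blast
  have "p \<noteq> []" "q \<noteq> []" using p q by (auto simp: walk_def)
  have "walk G (p @ tl q)" using p q walk_append by metis
  moreover have "hd (p @ tl q) = x" "last (p @ tl q) = y" using p q \<open>p \<noteq> []\<close> \<open>q \<noteq> []\<close>
    by (auto simp: last_append_tl)
  moreover have "length (p @ tl q) = Suc (dist G x y)" using p(4) q(4) h \<open>q \<noteq> []\<close> by simp
  moreover have "z \<in> set (p @ tl q)" using p \<open>p \<noteq> []\<close> by (auto intro: last_in_set)
  ultimately show "z \<in> interval G x y" unfolding interval_def by blast
qed

lemma interval_verts: "interval G x y \<subseteq> verts G"
  unfolding interval_def by (auto simp: walk_def)

lemma interval_conn:
  assumes "graph G" "connected_graph G" "x \<in> verts G" "y \<in> verts G"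
  shows "z \<in> interval G x y \<longleftrightarrow> z \<in> verts G \<and> dist G x z + dist G z y = dist G x y"
proof -
  have r: "reach G x y" using connected_reach[OF assms(2-4)] .
  show ?thesis
  proof
    assume "z \<in> interval G x y" then show "z \<in> verts G \<and> dist G x z + dist G z y = dist G x y"
      using interval_char[OF assms(1) r] interval_verts[of G x y] by blast
  next
    assume h: "z \<in> verts G \<and> dist G x z + dist G z y = dist G x y"
    then have "reach G x z" "reach G z y" using connected_reach[OF assms(2)] assms(3,4) by auto
    then show "z \<in> interval G x y" using interval_char[OF assms(1) r] h by blast
  qed
qed

lemma interval_ends:
  assumes "graph G" "reach G x y" shows "x \<in> interval G x y" "y \<in> interval G x y"
proof -
  have v: "x \<in> verts G" "y \<in> verts G" using reach_verts[OF assms(2)] by auto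
  show "x \<in> interval G x y" unfolding interval_char[OF assms]
    using assms reach_refl[OF v(1)] dist_self[OF v(1)] by simp
  show "y \<in> interval G x y" unfolding interval_char[OF assms]
    using assms reach_refl[OF v(2)] dist_self[OF v(2)] by simp
qed

lemma interval_sym_sub:
  assumes "graph G" "reach G x y" shows "interval G x y \<subseteq> interval G y x"
proof
  have r: "reach G y x" using reach_sym[OF assms] .
  fix z assume "z \<in> interval G x y"
  then have a: "reach G x z" "reach G z y" "dist G x z + dist G z y = dist G x y"
    using interval_char[OF assms] by auto
  have b: "dist G x z = dist G z x" using dist_sym[OF assms(1) a(1)] .
  have c: "dist G z y = dist G y z" using dist_sym[OF assms(1) a(2)] .
  have d: "dist G x y = dist G y x" using dist_sym[OF assms] .
  have "reach G y z" "reach G z x" using reach_sym[OF assms(1)] a by auto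
  then show "z \<in> interval G y x" unfolding interval_char[OF assms(1) r]
    using a b c d by simp
qed

lemma interval_sym:
  assumes "graph G" "reach G x y" shows "interval G x y = interval G y x"
  using interval_sym_sub[OF assms] interval_sym_sub[OF assms(1) reach_sym[OF assms]] by blast

lemma interval_self: assumes "graph G" "x \<in> verts G" shows "interval G x x = {x}"
proof
  have r: "reach G x x" using reach_refl[OF assms(2)] .
  show "{x} \<subseteq> interval G x x" using interval_ends[OF assms(1) r] by blast
  show "interval G x x \<subseteq> {x}"
  proof
    fix z assume "z \<in> interval G x x"
    then have "reach G x z" "dist G x z + dist G z x = dist G x x" using interval_char[OF assms(1) r] by auto
    then show "z \<in> {x}" using dist_self[OF assms(2)] dist_0_eq[of G x z] by simp
  qed
qed


lemma verts_induced[simp]: "verts (induced G A) = A"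
  by (simp add: induced_def verts_def)

lemma edges_induced[simp]: "edges (induced G A) = edges G \<inter> (A \<times> A)"
  by (simp add: induced_def edges_def)

lemma graph_induced: "graph G \<Longrightarrow> graph (induced G A)"
  unfolding graph_def by (auto simp: sym_def irrefl_def)

lemma induced_induced: "B \<subseteq> A \<Longrightarrow> induced (induced G A) B = induced G B"
  unfolding induced_def edges_def by auto

lemma walk_induced_walk: "walk (induced G A) p \<Longrightarrow> A \<subseteq> verts G \<Longrightarrow> walk G p"
  unfolding walk_def by auto

lemma walk_induced_iff: assumes "A \<subseteq> verts G"
  shows "walk (induced G A) p \<longleftrightarrow> walk G p \<and> set p \<subseteq> A"
proof
  assume "walk (induced G A) p" then show "walk G p \<and> set p \<subseteq> A"
    using walk_induced_walk[OF _ assms] unfolding walk_def by simp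
next
  assume h: "walk G p \<and> set p \<subseteq> A"
  show "walk (induced G A) p" unfolding walk_def
  proof (intro conjI allI impI)
    show "p \<noteq> []" "set p \<subseteq> verts (induced G A)" using h by (auto simp: walk_def)
    fix i assume i: "Suc i < length p"
    then have "p ! i \<in> A" "p ! Suc i \<in> A" using h nth_mem[of i p] nth_mem[of "Suc i" p] by auto
    moreover have "(p ! i, p ! Suc i) \<in> edges G" using h i by (auto simp: walk_def)
    ultimately show "(p ! i, p ! Suc i) \<in> edges (induced G A)" by simp
  qed
qed

lemma reach_induced_reach: "reach (induced G A) x y \<Longrightarrow> A \<subseteq> verts G \<Longrightarrow> reach G x y"
  unfolding reach_def using walk_induced_walk[of G A] by blast

lemma dist_walk_interval:
  assumes "graph G" "walk G p" "hd p = x" "last p = y" "length p = Suc (dist G x y)"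
  shows "set p \<subseteq> interval G x y"
  using assms unfolding interval_def by blast

lemma convex_induced_dist:
  assumes g: "graph G" and A: "convex G A" and xy: "x \<in> A" "y \<in> A" and r: "reach G x y"
  shows "reach (induced G A) x y \<and> dist (induced G A) x y = dist G x y"
proof -
  obtain p where p: "walk G p" "hd p = x" "last p = y" "length p = Suc (dist G x y)"
    using dist_witness[OF r] by blast
  have AV: "A \<subseteq> verts G" using A unfolding convex_def by blast
  have "set p \<subseteq> A" using dist_walk_interval[OF g p] A xy unfolding convex_def by blast
  then have w: "walk (induced G A) p" using p(1) walk_induced_iff[OF AV] by blast
  then have r': "reach (induced G A) x y" using p unfolding reach_def by blast
  have "dist (induced G A) x y \<le> dist G x y" using dist_le_walk[OF w p(2,3)] p(4) by simp
  moreover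
  obtain q where q: "walk (induced G A) q" "hd q = x" "last q = y"
      "length q = Suc (dist (induced G A) x y)"
    using dist_witness[OF r'] by blast
  have "dist G x y \<le> dist (induced G A) x y"
    using dist_le_walk[OF walk_induced_walk[OF q(1) AV] q(2,3)] q(4) by simp
  ultimately show ?thesis using r' by simp
qed

lemma convex_induced_interval:
  assumes g: "graph G" and A: "convex G A" and xy: "x \<in> A" "y \<in> A" and r: "reach G x y"
  shows "interval (induced G A) x y = interval G x y"
proof
  have gi: "graph (induced G A)" using graph_induced[OF g] .
  have AV: "A \<subseteq> verts G" using A unfolding convex_def by blast
  have d: "reach (induced G A) x y" "dist (induced G A) x y = dist G x y"
    using convex_induced_dist[OF g A xy r] by auto
  show "interval (induced G A) x y \<subseteq> interval G x y"
  proof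
    fix z assume "z \<in> interval (induced G A) x y"
    then have z: "reach (induced G A) x z" "reach (induced G A) z y"
      "dist (induced G A) x z + dist (induced G A) z y = dist (induced G A) x y"
      using interval_char[OF gi d(1)] by auto
    have zA: "z \<in> A" using reach_verts[OF z(1)] by simp
    have "dist (induced G A) x z = dist G x z" "dist (induced G A) z y = dist G z y"
      using convex_induced_dist[OF g A xy(1) zA reach_induced_reach[OF z(1) AV]]
        convex_induced_dist[OF g A zA xy(2) reach_induced_reach[OF z(2) AV]] by auto
    then show "z \<in> interval G x y" unfolding interval_char[OF g r]
      using z d reach_induced_reach[OF _ AV] by metis
  qed
  show "interval G x y \<subseteq> interval (induced G A) x y"
  proof
    fix z assume zi: "z \<in> interval G x y"
    then have z: "reach G x z" "reach G z y" "dist G x z + dist G z y = dist G x y"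
      using interval_char[OF g r] by auto
    have zA: "z \<in> A" using zi A xy unfolding convex_def by blast
    have "reach (induced G A) x z \<and> dist (induced G A) x z = dist G x z"
      "reach (induced G A) z y \<and> dist (induced G A) z y = dist G z y"
      using convex_induced_dist[OF g A xy(1) zA z(1)] convex_induced_dist[OF g A zA xy(2) z(2)]
      by auto
    then show "z \<in> interval (induced G A) x y" unfolding interval_char[OF gi d(1)]
      using z d by simp
  qed
qed

lemma convex_connected_induced:
  assumes g: "graph G" "connected_graph G" and A: "convex G A" "A \<noteq> {}"
  shows "connected_graph (induced G A)"
  unfolding connected_graph_def
proof (intro conjI ballI)
  show "verts (induced G A) \<noteq> {}" using A by simp
  fix x y assume "x \<in> verts (induced G A)" "y \<in> verts (induced G A)"
  then have xy: "x \<in> A" "y \<in> A" by auto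
  have "reach G x y" using connected_reach[OF g(2)] xy A unfolding convex_def by auto
  then have "reach (induced G A) x y" using convex_induced_dist[OF g(1) A(1) xy] by blast
  then show "\<exists>p. walk (induced G A) p \<and> hd p = x \<and> last p = y" unfolding reach_def .
qed

lemma convex_verts: "convex G (verts G)"
  unfolding convex_def using interval_verts[of G] by blast

lemma convex_empty: "convex G {}"
  unfolding convex_def by blast

lemma convex_Int: "convex G A \<Longrightarrow> convex G B \<Longrightarrow> convex G (A \<inter> B)"
  unfolding convex_def by blast

lemma convex_Inter: "S \<noteq> {} \<Longrightarrow> (\<And>A. A \<in> S \<Longrightarrow> convex G A) \<Longrightarrow> convex G (\<Inter> S)"
  unfolding convex_def by blast

lemma convex_single: "graph G \<Longrightarrow> x \<in> verts G \<Longrightarrow> convex G {x}"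
  unfolding convex_def using interval_self[of G x] by auto

lemma hull_convex: "S \<subseteq> verts G \<Longrightarrow> convex G (convex_hull G S)"
  unfolding convex_hull_def by (rule convex_Inter) (use convex_verts[of G] in auto)

lemma hull_sub: "S \<subseteq> convex_hull G S"
  unfolding convex_hull_def by blast

lemma hull_min: "convex G C \<Longrightarrow> S \<subseteq> C \<Longrightarrow> convex_hull G S \<subseteq> C"
  unfolding convex_hull_def by blast

lemma hull_verts: "S \<subseteq> verts G \<Longrightarrow> convex_hull G S \<subseteq> verts G"
  using hull_min[of G "verts G" S] convex_verts[of G] by blast

lemma interval_set_sub:
  assumes "graph G" "S \<subseteq> verts G" shows "S \<subseteq> interval_set G S"
proof
  fix x assume "x \<in> S"
  then have "x \<in> interval G x x" using interval_self[OF assms(1), of x] assms(2) by blast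
  then show "x \<in> interval_set G S" unfolding interval_set_def using \<open>x \<in> S\<close> by blast
qed

lemma interval_set_convex_sub: "convex G C \<Longrightarrow> S \<subseteq> C \<Longrightarrow> interval_set G S \<subseteq> C"
  unfolding interval_set_def convex_def by blast

lemma interval_set_hull:
  assumes "S \<subseteq> verts G" shows "interval_set G S \<subseteq> convex_hull G S"
  using interval_set_convex_sub[OF hull_convex[OF assms] hull_sub] .

lemma interval_set_verts: "interval_set G S \<subseteq> verts G"
  unfolding interval_set_def using interval_verts[of G] by blast

definition ph1 :: "'a graph \<Rightarrow> bool" where
  "ph1 G \<longleftrightarrow> (\<forall>x\<in>verts G. \<forall>C. copoint G x C \<longrightarrow> convex G (interval_set G (insert x C)))"

lemma copoint_verts: "copoint G x C \<Longrightarrow> C \<subseteq> verts G"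
  unfolding copoint_def convex_def by blast

lemma ph_at_most_1_iff:
  assumes g: "graph G" shows "ph_at_most G 1 \<longleftrightarrow> ph1 G"
proof
  assume "ph_at_most G 1"
  then obtain n where n: "n \<le> 1" "ph_property G n" unfolding ph_at_most_def by blast
  show "ph1 G" unfolding ph1_def
  proof (intro ballI allI impI)
    fix x C assume x: "x \<in> verts G" and c: "copoint G x C"
    let ?S = "insert x C"
    have S: "?S \<subseteq> verts G" using x copoint_verts[OF c] by blast
    have h: "convex_hull G ?S = (interval_set G ^^ n) ?S" using n(2) x c unfolding ph_property_def by blast
    show "convex G (interval_set G ?S)"
    proof (cases "n = 0")
      case True
      then have "convex_hull G ?S = ?S" using h by simp
      then have "interval_set G ?S = ?S"
        using interval_set_sub[OF g S] interval_set_hull[OF S] by blast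
      then show ?thesis using hull_convex[OF S] \<open>convex_hull G ?S = ?S\<close> by simp
    next
      case False
      then have "n = 1" using n by simp
      then show ?thesis using h hull_convex[OF S] by simp
    qed
  qed
next
  assume p: "ph1 G"
  have "ph_property G 1" unfolding ph_property_def
  proof (intro ballI allI impI)
    fix x C assume x: "x \<in> verts G" and c: "copoint G x C"
    let ?S = "insert x C"
    have S: "?S \<subseteq> verts G" using x copoint_verts[OF c] by blast
    have cv: "convex G (interval_set G ?S)" using p x c unfolding ph1_def by blast
    have "convex_hull G ?S \<subseteq> interval_set G ?S" using hull_min[OF cv interval_set_sub[OF g S]] .
    then show "convex_hull G ?S = (interval_set G ^^ 1) ?S" using interval_set_hull[OF S] by simp
  qed
  then show "ph_at_most G 1" unfolding ph_at_most_def by blast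
qed

section \<open>Convex subsets and induced subgraphs\<close>

locale convsub =
  fixes G :: "'a graph" and A :: "'a set"
  assumes g: "graph G" and conn: "connected_graph G" and A: "convex G A"
begin

lemma AV: "A \<subseteq> verts G" using A unfolding convex_def by blast

lemma reachA: "x \<in> A \<Longrightarrow> y \<in> A \<Longrightarrow> reach G x y"
  using connected_reach[OF conn] AV by blast

lemma dist_eq: "x \<in> A \<Longrightarrow> y \<in> A \<Longrightarrow> dist (induced G A) x y = dist G x y"
  using convex_induced_dist[OF g A _ _ reachA] by blast

lemma interval_eq: "x \<in> A \<Longrightarrow> y \<in> A \<Longrightarrow> interval (induced G A) x y = interval G x y"
  using convex_induced_interval[OF g A _ _ reachA] by blast

lemma convex_iff: "convex (induced G A) B \<longleftrightarrow> B \<subseteq> A \<and> convex G B"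
proof
  assume h: "convex (induced G A) B"
  then have B: "B \<subseteq> A" unfolding convex_def by simp
  have "\<forall>x\<in>B. \<forall>y\<in>B. interval G x y \<subseteq> B"
    using h B interval_eq unfolding convex_def by (metis subsetD)
  then show "B \<subseteq> A \<and> convex G B" using B AV unfolding convex_def by blast
next
  assume h: "B \<subseteq> A \<and> convex G B"
  have "\<forall>x\<in>B. \<forall>y\<in>B. interval (induced G A) x y \<subseteq> B"
    using h interval_eq unfolding convex_def by (metis subsetD)
  then show "convex (induced G A) B" using h unfolding convex_def by simp
qed

lemma interval_set_eq: "S \<subseteq> A \<Longrightarrow> interval_set (induced G A) S = interval_set G S"
  unfolding interval_set_def
proof -
  assume S: "S \<subseteq> A"
  have "\<And>x y. x \<in> S \<Longrightarrow> y \<in> S \<Longrightarrow> interval (induced G A) x y = interval G x y"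
    using interval_eq S by blast
  then show "(\<Union>x\<in>S. \<Union>y\<in>S. interval (induced G A) x y) = (\<Union>x\<in>S. \<Union>y\<in>S. interval G x y)"
    by simp
qed

lemma interval_set_A: "S \<subseteq> A \<Longrightarrow> interval_set G S \<subseteq> A"
  using interval_set_convex_sub[OF A] .

lemma hull_eq: assumes S: "S \<subseteq> A" shows "convex_hull (induced G A) S = convex_hull G S"
proof
  have h: "convex_hull G S \<subseteq> A" using hull_min[OF A S] .
  have c: "convex G (convex_hull G S)" using hull_convex[of S G] S AV by blast
  have ci: "convex (induced G A) (convex_hull G S)" using convex_iff h c by blast
  show "convex_hull (induced G A) S \<subseteq> convex_hull G S"
    using hull_min[OF ci hull_sub] .
  show "convex_hull G S \<subseteq> convex_hull (induced G A) S"
  proof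
    fix z assume z: "z \<in> convex_hull G S"
    show "z \<in> convex_hull (induced G A) S" unfolding convex_hull_def
    proof
      fix C assume "C \<in> {C. convex (induced G A) C \<and> S \<subseteq> C}"
      then have "convex G C" "S \<subseteq> C" using convex_iff by auto
      then show "z \<in> C" using z hull_min[of G C S] by blast
    qed
  qed
qed

lemma copoint_iff:
  "copoint (induced G A) x C \<longleftrightarrow> C \<subseteq> A \<and> convex G C \<and> x \<notin> C \<and>
     (\<forall>D. D \<subseteq> A \<and> convex G D \<and> C \<subseteq> D \<and> x \<notin> D \<longrightarrow> D = C)"
  unfolding copoint_def convex_iff by meson

lemma graph_ind: "graph (induced G A)" using graph_induced[OF g] .

lemma ph1_iff: "ph1 (induced G A) \<longleftrightarrow>
  (\<forall>x\<in>A. \<forall>C. copoint (induced G A) x C \<longrightarrow> convex G (interval_set G (insert x C)))"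
proof -
  have "\<And>x C. x \<in> A \<Longrightarrow> copoint (induced G A) x C \<Longrightarrow>
     convex (induced G A) (interval_set (induced G A) (insert x C)) \<longleftrightarrow> convex G (interval_set G (insert x C))"
  proof -
    fix x C assume x: "x \<in> A" and c: "copoint (induced G A) x C"
    have S: "insert x C \<subseteq> A" using x c copoint_iff by blast
    show "convex (induced G A) (interval_set (induced G A) (insert x C)) \<longleftrightarrow> convex G (interval_set G (insert x C))"
      using interval_set_eq[OF S] interval_set_A[OF S] convex_iff by simp
  qed
  then show ?thesis unfolding ph1_def by auto
qed

end


definition isof :: "'a graph \<Rightarrow> 'b graph \<Rightarrow> ('a \<Rightarrow> 'b) \<Rightarrow> bool" where
  "isof G H f \<longleftrightarrow> bij_betw f (verts G) (verts H) \<and>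
     (\<forall>u\<in>verts G. \<forall>v\<in>verts G. (u, v) \<in> edges G \<longleftrightarrow> (f u, f v) \<in> edges H)"

lemma graph_iso_isof: "graph_iso G H \<longleftrightarrow> (\<exists>f. isof G H f)"
  unfolding graph_iso_def isof_def by blast

lemma isof_inv:
  assumes "isof G H f" shows "isof H G (inv_into (verts G) f)"
proof -
  have b: "bij_betw f (verts G) (verts H)" using assms unfolding isof_def by blast
  have b': "bij_betw (inv_into (verts G) f) (verts H) (verts G)" using bij_betw_inv_into[OF b] .
  have "\<forall>u\<in>verts H. \<forall>v\<in>verts H. (u, v) \<in> edges H \<longleftrightarrow>
      (inv_into (verts G) f u, inv_into (verts G) f v) \<in> edges G"
  proof (intro ballI)
    fix u v assume uv: "u \<in> verts H" "v \<in> verts H"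
    let ?g = "inv_into (verts G) f"
    have gu: "?g u \<in> verts G" "f (?g u) = u" using b uv
      by (auto simp: bij_betw_def inv_into_into f_inv_into_f)
    have gv: "?g v \<in> verts G" "f (?g v) = v" using b uv
      by (auto simp: bij_betw_def inv_into_into f_inv_into_f)
    show "(u, v) \<in> edges H \<longleftrightarrow> (?g u, ?g v) \<in> edges G"
      using assms gu gv unfolding isof_def by metis
  qed
  then show ?thesis using b' unfolding isof_def by blast
qed

lemma isof_walk:
  assumes "isof G H f" "walk G p" shows "walk H (map f p)"
proof -
  have b: "bij_betw f (verts G) (verts H)" using assms unfolding isof_def by blast
  show ?thesis unfolding walk_def
  proof (intro conjI allI impI)
    show "map f p \<noteq> []" using assms(2) by (simp add: walk_def)
    show "set (map f p) \<subseteq> verts H" using assms(2) b by (auto simp: walk_def bij_betw_def)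
    fix i assume i: "Suc i < length (map f p)"
    then have "(p ! i, p ! Suc i) \<in> edges G" "p ! i \<in> verts G" "p ! Suc i \<in> verts G"
      using assms(2) nth_mem[of i p] nth_mem[of "Suc i" p] unfolding walk_def by auto
    then show "(map f p ! i, map f p ! Suc i) \<in> edges H"
      using assms(1) i unfolding isof_def by simp
  qed
qed

lemma isof_reach:
  assumes "isof G H f" "u \<in> verts G" "v \<in> verts G"
  shows "reach H (f u) (f v) \<longleftrightarrow> reach G u v"
proof
  assume "reach G u v"
  then obtain p where p: "walk G p" "hd p = u" "last p = v" unfolding reach_def by blast
  have "p \<noteq> []" using p by (simp add: walk_def)
  then show "reach H (f u) (f v)" unfolding reach_def using isof_walk[OF assms(1) p(1)] p
    by (intro exI[of _ "map f p"]) (simp add: hd_map last_map)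
next
  let ?g = "inv_into (verts G) f"
  have b: "bij_betw f (verts G) (verts H)" using assms unfolding isof_def by blast
  have gi: "?g (f u) = u" "?g (f v) = v" using b assms(2,3) by (auto simp: bij_betw_def)
  assume "reach H (f u) (f v)"
  then obtain p where p: "walk H p" "hd p = f u" "last p = f v" unfolding reach_def by blast
  have "p \<noteq> []" using p by (simp add: walk_def)
  then show "reach G u v" unfolding reach_def using isof_walk[OF isof_inv[OF assms(1)] p(1)] p gi
    by (intro exI[of _ "map ?g p"]) (simp add: hd_map last_map)
qed

lemma isof_dist_le:
  assumes "isof G H f" "u \<in> verts G" "v \<in> verts G" "reach G u v"
  shows "dist H (f u) (f v) \<le> dist G u v"
proof -
  obtain p where p: "walk G p" "hd p = u" "last p = v" "length p = Suc (dist G u v)"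
    using dist_witness[OF assms(4)] by blast
  have "p \<noteq> []" using p by (simp add: walk_def)
  then have "walk H (map f p)" "hd (map f p) = f u" "last (map f p) = f v"
    using isof_walk[OF assms(1) p(1)] p by (auto simp: hd_map last_map)
  then show ?thesis using dist_le_walk[of H "map f p" "f u" "f v"] p by simp
qed

lemma isof_dist:
  assumes "isof G H f" "u \<in> verts G" "v \<in> verts G" "reach G u v"
  shows "dist H (f u) (f v) = dist G u v"
proof -
  let ?g = "inv_into (verts G) f"
  have b: "bij_betw f (verts G) (verts H)" using assms unfolding isof_def by blast
  have fu: "f u \<in> verts H" "f v \<in> verts H" using b assms(2,3) by (auto simp: bij_betw_def)
  have gi: "?g (f u) = u" "?g (f v) = v" using b assms(2,3) by (auto simp: bij_betw_def)
  have r: "reach H (f u) (f v)" using isof_reach[OF assms(1-3)] assms(4) by simp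
  have "dist G (?g (f u)) (?g (f v)) \<le> dist H (f u) (f v)"
    using isof_dist_le[OF isof_inv[OF assms(1)] fu r] .
  then show ?thesis using isof_dist_le[OF assms] gi by simp
qed

lemma isof_connected:
  assumes "isof G H f" "connected_graph G" shows "connected_graph H"
  unfolding connected_graph_def
proof (intro conjI ballI)
  have b: "bij_betw f (verts G) (verts H)" using assms unfolding isof_def by blast
  show "verts H \<noteq> {}" using assms(2) b unfolding connected_graph_def bij_betw_def by auto
  fix x y assume xy: "x \<in> verts H" "y \<in> verts H"
  then obtain u v where uv: "u \<in> verts G" "v \<in> verts G" "x = f u" "y = f v"
    using b unfolding bij_betw_def by (metis imageE)
  have "reach G u v" using connected_reach[OF assms(2) uv(1,2)] .
  then have "reach H x y" using isof_reach[OF assms(1) uv(1,2)] uv by simp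
  then show "\<exists>p. walk H p \<and> hd p = x \<and> last p = y" unfolding reach_def .
qed

lemma isof_graph:
  assumes "isof G H f" "graph H" "edges G \<subseteq> verts G \<times> verts G" shows "graph G"
proof -
  have b: "bij_betw f (verts G) (verts H)" using assms unfolding isof_def by blast
  have "sym (edges G)"
  proof (rule symI)
    fix a b assume e: "(a, b) \<in> edges G"
    then have ab: "a \<in> verts G" "b \<in> verts G" using assms(3) by auto
    then have "(f a, f b) \<in> edges H" using assms(1) e unfolding isof_def by blast
    then have "(f b, f a) \<in> edges H" using assms(2) unfolding graph_def by (meson symD)
    then show "(b, a) \<in> edges G" using assms(1) ab unfolding isof_def by blast
  qed
  moreover have "irrefl (edges G)"
  proof -
    have "(a, a) \<notin> edges G" for a
    proof
      assume e: "(a, a) \<in> edges G"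
      then have a: "a \<in> verts G" using assms(3) by auto
      then have "(f a, f a) \<in> edges H" using assms(1) e unfolding isof_def by blast
      then show False using assms(2) unfolding graph_def irrefl_def by blast
    qed
    then show ?thesis unfolding irrefl_def by blast
  qed
  ultimately show ?thesis using assms(3) unfolding graph_def by blast
qed


lemma isof_induced:
  assumes "isof G H f" "A \<subseteq> verts G" shows "isof (induced G A) (induced H (f ` A)) f"
proof -
  have b: "bij_betw f (verts G) (verts H)" using assms unfolding isof_def by blast
  have "bij_betw f A (f ` A)" using bij_betw_subset[OF b assms(2)] by (simp add: bij_betw_def)
  moreover have "\<forall>u\<in>A. \<forall>v\<in>A. (u, v) \<in> edges G \<longleftrightarrow> (f u, f v) \<in> edges H"
    using assms unfolding isof_def by blast
  ultimately show ?thesis unfolding isof_def by auto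
qed

locale isoc =
  fixes G :: "'a graph" and H :: "'b graph" and f :: "'a \<Rightarrow> 'b"
  assumes iso: "isof G H f" and gG: "graph G" and gH: "graph H" and cG: "connected_graph G"
begin

lemma bij: "bij_betw f (verts G) (verts H)" using iso unfolding isof_def by blast

lemma fV: "x \<in> verts G \<Longrightarrow> f x \<in> verts H" using bij by (auto simp: bij_betw_def)

lemma cH: "connected_graph H" using isof_connected[OF iso cG] .

lemma ontoH: "y \<in> verts H \<Longrightarrow> \<exists>x\<in>verts G. y = f x" using bij unfolding bij_betw_def by auto

lemma injV: "x \<in> verts G \<Longrightarrow> y \<in> verts G \<Longrightarrow> f x = f y \<longleftrightarrow> x = y"
  using bij unfolding bij_betw_def inj_on_def by blast

lemma distf: "x \<in> verts G \<Longrightarrow> y \<in> verts G \<Longrightarrow> dist H (f x) (f y) = dist G x y"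
  using isof_dist[OF iso _ _ connected_reach[OF cG]] by blast

lemma interval_mem:
  assumes "x \<in> verts G" "y \<in> verts G" "w \<in> verts G"
  shows "f w \<in> interval H (f x) (f y) \<longleftrightarrow> w \<in> interval G x y"
proof -
  have d: "dist H (f x) (f w) = dist G x w" "dist H (f w) (f y) = dist G w y" "dist H (f x) (f y) = dist G x y"
    using distf assms by auto
  show ?thesis
    unfolding interval_conn[OF gG cG assms(1,2)] interval_conn[OF gH cH fV[OF assms(1)] fV[OF assms(2)]] d
    using assms(3) fV[OF assms(3)] by blast
qed

lemma interval_img:
  assumes "x \<in> verts G" "y \<in> verts G"
  shows "interval H (f x) (f y) = f ` interval G x y"
proof
  show "interval H (f x) (f y) \<subseteq> f ` interval G x y"
  proof
    fix z assume z: "z \<in> interval H (f x) (f y)"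
    then have "z \<in> verts H" using interval_verts[of H] by blast
    then obtain w where w: "w \<in> verts G" "z = f w" using ontoH by blast
    then show "z \<in> f ` interval G x y" using interval_mem[OF assms w(1)] z by blast
  qed
  show "f ` interval G x y \<subseteq> interval H (f x) (f y)"
  proof
    fix z assume "z \<in> f ` interval G x y"
    then obtain w where w: "w \<in> interval G x y" "z = f w" by blast
    have "w \<in> verts G" using w interval_verts[of G] by blast
    then show "z \<in> interval H (f x) (f y)" using interval_mem[OF assms] w by blast
  qed
qed

lemma img_sub: "S \<subseteq> verts G \<Longrightarrow> f ` S \<subseteq> verts H" using fV by blast

lemma img_mem: assumes "S \<subseteq> verts G" "w \<in> verts G" shows "f w \<in> f ` S \<longleftrightarrow> w \<in> S"
proof
  assume "f w \<in> f ` S"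
  then obtain s where s: "s \<in> S" "f w = f s" by blast
  then have "w = s" using injV[OF assms(2), of s] assms(1) by blast
  then show "w \<in> S" using s by simp
qed simp

lemma convex_img: assumes "S \<subseteq> verts G" shows "convex H (f ` S) \<longleftrightarrow> convex G S"
proof
  assume c: "convex H (f ` S)"
  show "convex G S" unfolding convex_def
  proof (intro conjI ballI)
    show "S \<subseteq> verts G" using assms .
    fix x y assume xy: "x \<in> S" "y \<in> S"
    show "interval G x y \<subseteq> S"
    proof
      fix w assume w: "w \<in> interval G x y"
      then have wv: "w \<in> verts G" using interval_verts[of G] by blast
      have "f w \<in> interval H (f x) (f y)" using interval_img assms xy w by blast
      then have "f w \<in> f ` S" using c xy unfolding convex_def by blast
      then show "w \<in> S" using img_mem[OF assms wv] by blast
    qed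
  qed
next
  assume c: "convex G S"
  show "convex H (f ` S)" unfolding convex_def
  proof (intro conjI ballI)
    show "f ` S \<subseteq> verts H" using img_sub[OF assms] .
    fix a b assume ab: "a \<in> f ` S" "b \<in> f ` S"
    then obtain x y where xy: "x \<in> S" "y \<in> S" "a = f x" "b = f y" by blast
    have "interval G x y \<subseteq> S" using c xy unfolding convex_def by blast
    moreover have "interval H a b = f ` interval G x y" using interval_img xy assms by auto
    ultimately show "interval H a b \<subseteq> f ` S" by blast
  qed
qed

definition g where "g = inv_into (verts G) f"

lemma g_f: "x \<in> verts G \<Longrightarrow> g (f x) = x" unfolding g_def using bij by (simp add: bij_betw_def)

lemma f_g: "y \<in> verts H \<Longrightarrow> f (g y) = y" unfolding g_def using bij by (simp add: bij_betw_def f_inv_into_f)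

lemma gV: "y \<in> verts H \<Longrightarrow> g y \<in> verts G" unfolding g_def using bij
  by (simp add: bij_betw_def inv_into_into)

lemma img_g: assumes "T \<subseteq> verts H" shows "f ` (g ` T) = T \<and> g ` T \<subseteq> verts G"
proof (intro conjI)
  show "f ` (g ` T) = T"
  proof
    show "f ` g ` T \<subseteq> T" using f_g assms by auto
    show "T \<subseteq> f ` g ` T"
    proof
      fix y assume "y \<in> T"
      then have "y = f (g y)" using f_g assms by auto
      then show "y \<in> f ` g ` T" using \<open>y \<in> T\<close> by blast
    qed
  qed
  show "g ` T \<subseteq> verts G" using gV assms by auto
qed

lemma copoint_img:
  assumes x: "x \<in> verts G" and C: "C \<subseteq> verts G"
  shows "copoint H (f x) (f ` C) \<longleftrightarrow> copoint G x C"
proof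
  assume h: "copoint H (f x) (f ` C)"
  show "copoint G x C" unfolding copoint_def
  proof (intro conjI allI impI)
    show "convex G C" using h convex_img[OF C] unfolding copoint_def by blast
    show "x \<notin> C" using h img_mem[OF C x] unfolding copoint_def by blast
    fix D assume D: "convex G D \<and> C \<subseteq> D \<and> x \<notin> D"
    then have DV: "D \<subseteq> verts G" unfolding convex_def by blast
    have "convex H (f ` D)" "f ` C \<subseteq> f ` D" "f x \<notin> f ` D"
      using D convex_img[OF DV] img_mem[OF DV x] by auto
    then have "f ` D = f ` C" using h unfolding copoint_def by blast
    moreover have "inj_on f (verts G)" using bij by (simp add: bij_betw_def)
    ultimately show "D = C" using DV C by (simp add: inj_on_image_eq_iff)
  qed
next
  assume h: "copoint G x C"
  show "copoint H (f x) (f ` C)" unfolding copoint_def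
  proof (intro conjI allI impI)
    show "convex H (f ` C)" using h convex_img[OF C] unfolding copoint_def by blast
    show "f x \<notin> f ` C" using h img_mem[OF C x] unfolding copoint_def by blast
    fix D assume D: "convex H D \<and> f ` C \<subseteq> D \<and> f x \<notin> D"
    then have DV: "D \<subseteq> verts H" unfolding convex_def by blast
    define D' where "D' = g ` D"
    have D'1: "f ` D' = D" "D' \<subseteq> verts G" using img_g[OF DV] D'_def by auto
    have "convex G D'" using convex_img[OF D'1(2)] D D'1 by simp
    moreover have "C \<subseteq> D'" using D D'1 C img_mem[OF D'1(2)] by blast
    moreover have "x \<notin> D'" using D D'1 img_mem[OF D'1(2) x] by blast
    ultimately have "D' = C" using h unfolding copoint_def by blast
    then show "D = f ` C" using D'1 by simp
  qed
qed

lemma interval_set_img: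
  assumes "S \<subseteq> verts G" shows "interval_set H (f ` S) = f ` interval_set G S"
proof -
  have "interval_set H (f ` S) = (\<Union>x\<in>S. \<Union>y\<in>S. interval H (f x) (f y))"
    unfolding interval_set_def by simp
  also have "\<dots> = (\<Union>x\<in>S. \<Union>y\<in>S. f ` interval G x y)"
    using interval_img assms by (intro SUP_cong refl) blast
  also have "\<dots> = f ` interval_set G S" unfolding interval_set_def by (simp add: image_UN)
  finally show ?thesis .
qed

lemma ph1_iso: "ph1 G \<longleftrightarrow> ph1 H"
proof
  assume p: "ph1 G"
  show "ph1 H" unfolding ph1_def
  proof (intro ballI allI impI)
    fix y C assume y: "y \<in> verts H" and c: "copoint H y C"
    have CV: "C \<subseteq> verts H" using copoint_verts[OF c] .
    define C' where "C' = g ` C"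
    have C'1: "f ` C' = C" "C' \<subseteq> verts G" using img_g[OF CV] C'_def by auto
    have gy: "g y \<in> verts G" "f (g y) = y" using gV f_g y by auto
    have "copoint G (g y) C'" using copoint_img[OF gy(1) C'1(2)] c C'1 gy by simp
    then have cv: "convex G (interval_set G (insert (g y) C'))" using p gy unfolding ph1_def by blast
    have S: "insert (g y) C' \<subseteq> verts G" using gy C'1 by blast
    have "convex H (f ` interval_set G (insert (g y) C'))"
      using convex_img[of "interval_set G (insert (g y) C')"] cv interval_set_verts[of G] by blast
    moreover have "f ` interval_set G (insert (g y) C') = interval_set H (insert y C)"
      using interval_set_img[OF S] C'1 gy by simp
    ultimately show "convex H (interval_set H (insert y C))" by simp
  qed
next
  assume p: "ph1 H"
  show "ph1 G" unfolding ph1_def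
  proof (intro ballI allI impI)
    fix x C assume x: "x \<in> verts G" and c: "copoint G x C"
    have CV: "C \<subseteq> verts G" using copoint_verts[OF c] .
    have "copoint H (f x) (f ` C)" using copoint_img[OF x CV] c by simp
    then have cv: "convex H (interval_set H (insert (f x) (f ` C)))" using p fV[OF x] unfolding ph1_def by blast
    have S: "insert x C \<subseteq> verts G" using x CV by blast
    have "interval_set H (insert (f x) (f ` C)) = f ` interval_set G (insert x C)"
      using interval_set_img[OF S] by simp
    then show "convex G (interval_set G (insert x C))"
      using cv convex_img[of "interval_set G (insert x C)"] interval_set_verts[of G] by simp
  qed
qed

end


definition sd :: "'a set \<Rightarrow> 'a set \<Rightarrow> 'a set" where
  "sd S T = (S - T) \<union> (T - S)"

lemma hc_verts: "verts (hypercube X) = {S. S \<subseteq> X \<and> finite S}"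
  by (simp add: hypercube_def verts_def)

lemma hc_edges: "edges (hypercube X) = {(S, T). S \<subseteq> X \<and> finite S \<and> T \<subseteq> X \<and> finite T \<and> card (sd S T) = 1}"
  by (simp add: hypercube_def edges_def sd_def)

lemma sd_comm: "sd S T = sd T S" unfolding sd_def by blast

lemma sd_self: "sd S S = {}" unfolding sd_def by blast

lemma sd_eq_empty: "sd S T = {} \<longleftrightarrow> S = T" unfolding sd_def by blast

lemma sd_tri: "sd S U \<subseteq> sd S T \<union> sd T U" unfolding sd_def by blast

lemma finite_sd: "finite S \<Longrightarrow> finite T \<Longrightarrow> finite (sd S T)" unfolding sd_def by blast

lemma graph_hc: "graph (hypercube X)"
  unfolding graph_def hc_verts hc_edges
proof (intro conjI)
  show "sym {(S, T). S \<subseteq> X \<and> finite S \<and> T \<subseteq> X \<and> finite T \<and> card (sd S T) = 1}"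
    by (rule symI) (auto simp: sd_comm)
  show "irrefl {(S, T). S \<subseteq> X \<and> finite S \<and> T \<subseteq> X \<and> finite T \<and> card (sd S T) = 1}"
    by (auto simp: irrefl_def sd_self)
qed auto

lemma hc_lower:
  assumes "reach (hypercube X) S T"
  shows "card (sd S T) \<le> dist (hypercube X) S T"
proof -
  let ?f = "\<lambda>Z. card (sd Z T)"
  have T: "finite T" using reach_verts[OF assms] by (simp add: hc_verts)
  have "?f u \<le> ?f v + 1" if e: "(u, v) \<in> edges (hypercube X)" for u v
  proof -
    have fu: "finite u" "finite v" "card (sd u v) = 1" using e by (auto simp: hc_edges)
    have "sd u T \<subseteq> sd u v \<union> sd v T" by (rule sd_tri)
    then have "card (sd u T) \<le> card (sd u v \<union> sd v T)"
      by (intro card_mono) (use fu T finite_sd in auto)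
    also have "\<dots> \<le> card (sd u v) + card (sd v T)" by (rule card_Un_le)
    finally show ?thesis using fu by simp
  qed
  then have "?f S \<le> ?f T + dist (hypercube X) S T" using dist_potential[OF assms, of ?f] by blast
  then show ?thesis by (simp add: sd_self)
qed

lemma hc_walk:
  assumes "S \<in> verts (hypercube X)" "T \<in> verts (hypercube X)"
  shows "\<exists>p. walk (hypercube X) p \<and> hd p = S \<and> last p = T \<and> length p = Suc (card (sd S T))"
  using assms
proof (induction "card (sd S T)" arbitrary: S)
  case 0
  have "finite (sd S T)" using 0 by (simp add: hc_verts finite_sd)
  then have "S = T" using 0 sd_eq_empty by (metis card_0_eq)
  then show ?case using 0 by (intro exI[of _ "[S]"]) (simp add: walk_def)
next
  case (Suc n)
  have fin: "finite S" "finite T" "S \<subseteq> X" "T \<subseteq> X" using Suc.prems by (auto simp: hc_verts)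
  have "sd S T \<noteq> {}" using Suc.hyps(2) by auto
  then obtain e where e: "e \<in> sd S T" by blast
  define S' where "S' = (if e \<in> S then S - {e} else insert e S)"
  have S'v: "S' \<in> verts (hypercube X)" using fin e unfolding S'_def hc_verts sd_def by auto
  have "sd S S' = {e}" unfolding S'_def sd_def by auto
  then have edge: "(S, S') \<in> edges (hypercube X)" using S'v Suc.prems(1) by (simp add: hc_edges hc_verts)
  have "sd S' T = sd S T - {e}" using e unfolding S'_def sd_def by auto
  then have "card (sd S' T) = n" using Suc.hyps(2) e fin finite_sd by (simp add: card_Diff_singleton)
  then obtain p where p: "walk (hypercube X) p" "hd p = S'" "last p = T" "length p = Suc n"
    using Suc.hyps(1)[of S'] S'v Suc.prems(2) by auto
  have "walk (hypercube X) (S # p)"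
    using p edge Suc.prems(1) by (cases p) (auto simp: walk_Cons)
  then show ?case using p Suc.hyps(2) by (intro exI[of _ "S # p"]) (auto simp: walk_def)
qed

lemma hc_dist:
  assumes "S \<in> verts (hypercube X)" "T \<in> verts (hypercube X)"
  shows "reach (hypercube X) S T \<and> dist (hypercube X) S T = card (sd S T)"
proof -
  obtain p where p: "walk (hypercube X) p" "hd p = S" "last p = T" "length p = Suc (card (sd S T))"
    using hc_walk[OF assms] by blast
  then have r: "reach (hypercube X) S T" unfolding reach_def by blast
  have "dist (hypercube X) S T \<le> card (sd S T)" using dist_le_walk[OF p(1-3)] p(4) by simp
  then show ?thesis using hc_lower[OF r] r by simp
qed

section \<open>Families of cuts\<close>

definition sepi :: "'j set \<Rightarrow> ('j \<Rightarrow> 'a set) \<Rightarrow> 'a \<Rightarrow> 'a \<Rightarrow> 'j set" where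
  "sepi J h u v = {j \<in> J. (u \<in> h j) \<noteq> (v \<in> h j)}"

definition pcfami :: "'a graph \<Rightarrow> 'j set \<Rightarrow> ('j \<Rightarrow> 'a set) \<Rightarrow> bool" where
  "pcfami G J h \<longleftrightarrow> (\<forall>u\<in>verts G. \<forall>v\<in>verts G. finite (sepi J h u v) \<and> dist G u v = card (sepi J h u v))"

definition pcf :: "'a graph \<Rightarrow> bool" where
  "pcf G \<longleftrightarrow> graph G \<and> connected_graph G \<and> (\<exists>F :: 'a set set. pcfami G F id)"

lemma sepi_sym: "sepi J h u v = sepi J h v u" unfolding sepi_def by blast

lemma sepi_self: "sepi J h u u = {}" unfolding sepi_def by blast

lemma pcfam_reduce:
  assumes g: "graph G" and c: "connected_graph G" and p: "pcfami G J h"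
  shows "pcfami G (h ` J) id"
  unfolding pcfami_def
proof (intro ballI)
  fix u v assume uv: "u \<in> verts G" "v \<in> verts G"
  have inj: "inj_on h (sepi J h u v)"
  proof (rule inj_onI, rule ccontr)
    fix j j' assume j: "j \<in> sepi J h u v" "j' \<in> sepi J h u v" "h j = h j'" "j \<noteq> j'"
    obtain q where q: "walk G q" "hd q = u" "last q = v" using connected_reach[OF c uv] unfolding reach_def by blast
    have "\<exists>a b. (a, b) \<in> edges G \<and> (a \<in> h j) \<noteq> (b \<in> h j)"
    proof (cases "u \<in> h j")
      case True
      then have "v \<notin> h j" using j unfolding sepi_def by blast
      then show ?thesis using walk_change[OF q(1), of "\<lambda>z. z \<in> h j"] q True by auto
    next
      case False
      then have "v \<in> h j" using j unfolding sepi_def by blast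
      then show ?thesis using walk_change[OF q(1), of "\<lambda>z. z \<notin> h j"] q False by auto
    qed
    then obtain a b where ab: "(a, b) \<in> edges G" "(a \<in> h j) \<noteq> (b \<in> h j)" by blast
    have abv: "a \<in> verts G" "b \<in> verts G" using ab g unfolding graph_def by auto
    have "dist G a b = 1" using dist_edge[OF g ab(1)] .
    then have cd: "card (sepi J h a b) = 1" "finite (sepi J h a b)" using p abv unfolding pcfami_def by auto
    have "{j, j'} \<subseteq> sepi J h a b" using ab j unfolding sepi_def by auto
    then have "card {j, j'} \<le> 1" using cd card_mono by metis
    then show False using j(4) by simp
  qed
  have "sepi (h ` J) id u v = h ` sepi J h u v" unfolding sepi_def by auto
  then show "finite (sepi (h ` J) id u v) \<and> dist G u v = card (sepi (h ` J) id u v)"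
    using p uv card_image[OF inj] unfolding pcfami_def by auto
qed

lemma pcf_intro:
  assumes "graph G" "connected_graph G" "pcfami G J h"
  shows "pcf G"
  using pcfam_reduce[OF assms] assms unfolding pcf_def by blast


lemma sd_sepi:
  assumes "x \<in> V" "y \<in> V" "z \<in> V"
  shows "sd (sepi F id x z) (sepi F id y z) = sepi F id x y"
  unfolding sd_def sepi_def by auto

lemma partial_cube_pcf: fixes G :: "'a graph" shows "partial_cube G \<Longrightarrow> pcf G"
proof -
  assume pc: "partial_cube G"
  have gG: "graph G" using pc unfolding partial_cube_def by (rule conjunct1)
  have ex: "\<exists>(X :: 'a set set) H. isometric_subgraph H (hypercube X) \<and> graph_iso G H"
    using pc unfolding partial_cube_def by (rule conjunct2)
  from ex obtain X :: "'a set set" where "\<exists>H. isometric_subgraph H (hypercube X) \<and> graph_iso G H" ..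
  then obtain H where isogi: "isometric_subgraph H (hypercube X) \<and> graph_iso G H" ..
  then have iso: "isometric_subgraph H (hypercube X)" and gi: "graph_iso G H" by simp_all
  obtain f where f: "isof G H f" using gi graph_iso_isof by blast
  have sub: "subgraph H (hypercube X)" and cH: "connected_graph H"
    and dH: "\<forall>u\<in>verts H. \<forall>v\<in>verts H. dist H u v = dist (hypercube X) u v"
    using iso unfolding isometric_subgraph_def by auto
  have gH: "graph H" using sub unfolding subgraph_def by blast
  have cG: "connected_graph G" using isof_connected[OF isof_inv[OF f] cH] .
  interpret isoc G H f using f gG gH cG by unfold_locales
  define h where "h = (\<lambda>e. {v \<in> verts G. e \<in> f v})"
  have "pcfami G X h" unfolding pcfami_def
  proof (intro ballI conjI)
    fix u v assume uv: "u \<in> verts G" "v \<in> verts G"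
    have fuv: "f u \<in> verts (hypercube X)" "f v \<in> verts (hypercube X)"
      using fV uv sub unfolding subgraph_def by auto
    have e: "sepi X h u v = sd (f u) (f v)"
      using fuv uv unfolding sepi_def sd_def h_def hc_verts by auto
    have "finite (f u)" "finite (f v)" using fuv by (auto simp: hc_verts)
    then show "finite (sepi X h u v)" using e finite_sd by simp
    have "dist G u v = dist H (f u) (f v)" using distf uv by simp
    also have "\<dots> = dist (hypercube X) (f u) (f v)" using dH fV uv by blast
    also have "\<dots> = card (sd (f u) (f v))" using hc_dist[OF fuv] by simp
    finally show "dist G u v = card (sepi X h u v)" using e by simp
  qed
  then show "pcf G" using pcf_intro gG cG by blast
qed

lemma pcf_partial_cube:
  fixes G :: "'a graph"
  assumes "pcf G" shows "partial_cube G"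
proof -
  obtain F :: "'a set set" where g: "graph G" and c: "connected_graph G" and F: "pcfami G F id"
    using assms unfolding pcf_def by blast
  obtain v0 where v0: "v0 \<in> verts G" using c unfolding connected_graph_def by blast
  define \<phi> where "\<phi> = (\<lambda>v. sepi F id v v0)"
  define Hg :: "'a set set graph" where "Hg = (\<phi> ` verts G, {(\<phi> u, \<phi> v) | u v. (u, v) \<in> edges G})"
  have vH: "verts Hg = \<phi> ` verts G" and eH: "edges Hg = {(\<phi> u, \<phi> v) | u v. (u, v) \<in> edges G}"
    unfolding Hg_def verts_def edges_def by auto
  have sdphi: "sd (\<phi> u) (\<phi> v) = sepi F id u v" for u v
    unfolding \<phi>_def by (rule sd_sepi[of _ UNIV]) auto
  have fin: "finite (\<phi> v)" if "v \<in> verts G" for v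
    using F that v0 unfolding pcfami_def \<phi>_def by blast
  have inj: "inj_on \<phi> (verts G)"
  proof (rule inj_onI)
    fix u v assume uv: "u \<in> verts G" "v \<in> verts G" "\<phi> u = \<phi> v"
    then have "sepi F id u v = {}" using sdphi[of u v] sd_self by metis
    then have "dist G u v = 0" using F uv unfolding pcfami_def by auto
    then show "u = v" using dist_0_eq[OF connected_reach[OF c uv(1,2)]] by blast
  qed
  have EV: "edges G \<subseteq> verts G \<times> verts G" using g unfolding graph_def by blast
  have iso: "isof G Hg \<phi>" unfolding isof_def
  proof (intro conjI ballI)
    show "bij_betw \<phi> (verts G) (verts Hg)" using inj vH by (simp add: bij_betw_def)
    fix u v assume uv: "u \<in> verts G" "v \<in> verts G"
    show "(u, v) \<in> edges G \<longleftrightarrow> (\<phi> u, \<phi> v) \<in> edges Hg"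
    proof
      assume "(u, v) \<in> edges G" then show "(\<phi> u, \<phi> v) \<in> edges Hg" unfolding eH by blast
    next
      assume "(\<phi> u, \<phi> v) \<in> edges Hg"
      then obtain a b where ab: "(a, b) \<in> edges G" "\<phi> u = \<phi> a" "\<phi> v = \<phi> b" unfolding eH by blast
      have "a \<in> verts G" "b \<in> verts G" using ab EV by auto
      then have "a = u" "b = v" using inj_onD[OF inj ab(2)[symmetric]] inj_onD[OF inj ab(3)[symmetric]] uv
        by auto
      then show "(u, v) \<in> edges G" using ab by simp
    qed
  qed
  have gH: "graph Hg" unfolding graph_def
  proof (intro conjI)
    show "edges Hg \<subseteq> verts Hg \<times> verts Hg" using EV unfolding eH vH by blast
    show "sym (edges Hg)"
    proof (rule symI)
      fix a b assume "(a, b) \<in> edges Hg"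
      then obtain u v where "(u, v) \<in> edges G" "a = \<phi> u" "b = \<phi> v" unfolding eH by blast
      moreover have "(v, u) \<in> edges G" using calculation(1) g unfolding graph_def by (meson symD)
      ultimately show "(b, a) \<in> edges Hg" unfolding eH by blast
    qed
    show "irrefl (edges Hg)" unfolding irrefl_def
    proof
      fix a show "(a, a) \<notin> edges Hg"
      proof
        assume "(a, a) \<in> edges Hg"
        then obtain u v where uv: "(u, v) \<in> edges G" "a = \<phi> u" "a = \<phi> v" unfolding eH by blast
        have "u \<in> verts G" "v \<in> verts G" using uv EV by auto
        then have "u = v" using inj_onD[OF inj, of u v] uv by simp
        then show False using uv g unfolding graph_def irrefl_def by blast
      qed
    qed
  qed
  have cH: "connected_graph Hg" using isof_connected[OF iso c] .
  interpret isoc G Hg \<phi> using iso g gH c by unfold_locales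
  have vcube: "\<phi> v \<in> verts (hypercube F)" if "v \<in> verts G" for v
    using fin[OF that] unfolding hc_verts \<phi>_def sepi_def by auto
  have sub: "subgraph Hg (hypercube F)" unfolding subgraph_def
  proof (intro conjI)
    show "graph Hg" using gH .
    show "verts Hg \<subseteq> verts (hypercube F)"
    proof
      fix a assume "a \<in> verts Hg"
      then obtain v where "v \<in> verts G" "a = \<phi> v" unfolding vH by blast
      then show "a \<in> verts (hypercube F)" using vcube by simp
    qed
    show "edges Hg \<subseteq> edges (hypercube F)"
    proof
      fix e assume "e \<in> edges Hg"
      then obtain u v where uv: "(u, v) \<in> edges G" "e = (\<phi> u, \<phi> v)" unfolding eH by blast
      have v: "u \<in> verts G" "v \<in> verts G" using uv EV by auto
      have "dist G u v = 1" using dist_edge[OF g uv(1)] .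
      moreover have "dist G u v = card (sepi F id u v)" using F v unfolding pcfami_def by blast
      ultimately have "card (sd (\<phi> u) (\<phi> v)) = 1" using sdphi by simp
      then show "e \<in> edges (hypercube F)" using vcube v uv unfolding hc_edges hc_verts by auto
    qed
  qed
  have "isometric_subgraph Hg (hypercube F)" unfolding isometric_subgraph_def
  proof (intro conjI ballI)
    show "subgraph Hg (hypercube F)" using sub .
    show "connected_graph Hg" using cH .
    fix a b assume ab: "a \<in> verts Hg" "b \<in> verts Hg"
    then obtain u v where uv: "u \<in> verts G" "v \<in> verts G" "a = \<phi> u" "b = \<phi> v" unfolding vH by blast
    have "dist Hg a b = dist G u v" using distf uv by simp
    also have "\<dots> = card (sepi F id u v)" using F uv unfolding pcfami_def by blast
    also have "\<dots> = card (sd (\<phi> u) (\<phi> v))" using sdphi by simp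
    also have "\<dots> = dist (hypercube F) a b" using hc_dist[OF vcube[OF uv(1)] vcube[OF uv(2)]] uv by simp
    finally show "dist Hg a b = dist (hypercube F) a b" .
  qed
  moreover have "graph_iso G Hg" using iso graph_iso_isof by blast
  ultimately show ?thesis unfolding partial_cube_def using g by blast
qed

lemma partial_cube_iff: "partial_cube G \<longleftrightarrow> pcf G"
  using partial_cube_pcf pcf_partial_cube by blast


lemma pcf_graph: "pcf G \<Longrightarrow> graph G" unfolding pcf_def by blast
lemma pcf_conn: "pcf G \<Longrightarrow> connected_graph G" unfolding pcf_def by blast

lemma ph_homogeneous_iff:
  assumes "graph G"
  shows "ph_homogeneous G \<longleftrightarrow> (\<forall>A. finite A \<and> convex G A \<longrightarrow> ph1 (induced G A))"
  unfolding ph_homogeneous_def using ph_at_most_1_iff[OF graph_induced[OF assms]] by blast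

lemma pcf_convex:
  assumes p: "pcf G" and cA: "convex G A" and nA: "A \<noteq> {}"
  shows "pcf (induced G A)"
proof -
  have g: "graph G" and c: "connected_graph G" using p by (auto simp: pcf_def)
  obtain F :: "'a set set" where F: "pcfami G F id" using p unfolding pcf_def by blast
  interpret convsub G A using g c cA by unfold_locales
  have "pcfami (induced G A) F (\<lambda>H. H \<inter> A)" unfolding pcfami_def
  proof (intro ballI)
    fix u v assume uv: "u \<in> verts (induced G A)" "v \<in> verts (induced G A)"
    then have uvA: "u \<in> A" "v \<in> A" by auto
    have "sepi F (\<lambda>H. H \<inter> A) u v = sepi F id u v" using uvA unfolding sepi_def by auto
    moreover have "dist (induced G A) u v = dist G u v" using dist_eq uvA by blast
    moreover have "u \<in> verts G" "v \<in> verts G" using uvA AV by auto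
    ultimately show "finite (sepi F (\<lambda>H. H \<inter> A) u v) \<and> dist (induced G A) u v = card (sepi F (\<lambda>H. H \<inter> A) u v)"
      using F unfolding pcfami_def by simp
  qed
  then show ?thesis by (rule pcf_intro[OF graph_ind convex_connected_induced[OF g c cA nA]])
qed

lemma ph_homogeneous_convex:
  assumes g: "graph G" and c: "connected_graph G" and h: "ph_homogeneous G" and A: "convex G A"
  shows "ph_homogeneous (induced G A)"
  unfolding ph_homogeneous_def
proof (intro allI impI)
  interpret convsub G A using g c A by unfold_locales
  fix B assume B: "finite B \<and> convex (induced G A) B"
  then have "B \<subseteq> A" "convex G B" using convex_iff by auto
  then have "ph_at_most (induced G B) 1" using h B unfolding ph_homogeneous_def by blast
  then show "ph_at_most (induced (induced G A) B) 1" using induced_induced[OF \<open>B \<subseteq> A\<close>] by simp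
qed

theorem part1:
  fixes G :: "'a graph"
  assumes "partial_cube G" "ph_homogeneous G" "convex G A" "A \<noteq> {}"
  shows "partial_cube (induced G A) \<and> ph_homogeneous (induced G A)"
proof -
  have p: "pcf G" using assms(1) partial_cube_iff by blast
  have "pcf (induced G A)" using pcf_convex[OF p assms(3,4)] .
  then show ?thesis using partial_cube_iff ph_homogeneous_convex[OF pcf_graph[OF p] pcf_conn[OF p] assms(2,3)]
    by blast
qed


locale prodg =
  fixes I :: "'i set" and Gs :: "'i \<Rightarrow> 'd graph"
  assumes gr: "\<And>i. i \<in> I \<Longrightarrow> graph (Gs i)" and co: "\<And>i. i \<in> I \<Longrightarrow> connected_graph (Gs i)"
begin

abbreviation "P \<equiv> cart_prod I Gs"
abbreviation "V \<equiv> PiE I (\<lambda>i. verts (Gs i))"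

definition diff :: "('i \<Rightarrow> 'd) \<Rightarrow> ('i \<Rightarrow> 'd) \<Rightarrow> 'i set" where
  "diff f g = {i \<in> I. f i \<noteq> g i}"

lemma verts_P: "verts P = V" by (simp add: cart_prod_def verts_def)

lemma edges_P: "(f, g) \<in> edges P \<longleftrightarrow> f \<in> V \<and> g \<in> V \<and>
   (\<exists>i\<in>I. (f i, g i) \<in> edges (Gs i) \<and> (\<forall>j\<in>I. j \<noteq> i \<longrightarrow> f j = g j))"
  by (simp add: cart_prod_def edges_def)

lemma graph_P: "graph P"
  unfolding graph_def
proof (intro conjI)
  show "edges P \<subseteq> verts P \<times> verts P"
  proof
    fix e assume "e \<in> edges P"
    moreover obtain f g where "e = (f, g)" by fastforce
    ultimately show "e \<in> verts P \<times> verts P" using edges_P[of f g] verts_P by auto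
  qed
  show "sym (edges P)"
  proof (rule symI)
    fix f g assume "(f, g) \<in> edges P"
    then have "f \<in> V \<and> g \<in> V \<and> (\<exists>i\<in>I. (f i, g i) \<in> edges (Gs i) \<and> (\<forall>j\<in>I. j \<noteq> i \<longrightarrow> f j = g j))"
      unfolding edges_P[of f g] .
    then obtain i where i: "f \<in> V" "g \<in> V" "i \<in> I" "(f i, g i) \<in> edges (Gs i)" "\<forall>j\<in>I. j \<noteq> i \<longrightarrow> f j = g j"
      by blast
    have "(g i, f i) \<in> edges (Gs i)" using gr[OF i(3)] i(4) unfolding graph_def by (meson symD)
    moreover have "\<forall>j\<in>I. j \<noteq> i \<longrightarrow> g j = f j" using i by auto
    ultimately show "(g, f) \<in> edges P" unfolding edges_P[of g f] using i by blast
  qed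
  show "irrefl (edges P)" unfolding irrefl_def
  proof
    fix f show "(f, f) \<notin> edges P"
    proof
      assume "(f, f) \<in> edges P"
      then obtain i where "i \<in> I" "(f i, f i) \<in> edges (Gs i)" unfolding edges_P[of f f] by blast
      then show False using gr unfolding graph_def irrefl_def by blast
    qed
  qed
qed

lemma diff_self: "diff f f = {}" unfolding diff_def by simp

lemma diff_sym: "diff f g = diff g f" unfolding diff_def by auto

lemma diff_tri: "diff f h \<subseteq> diff f g \<union> diff g h" unfolding diff_def by auto

lemma diff_sub: "diff f g \<subseteq> I" unfolding diff_def by auto

lemma edge_diff:
  assumes "(f, g) \<in> edges P"
  shows "\<exists>i\<in>I. diff f g = {i} \<and> (f i, g i) \<in> edges (Gs i)"
proof -
  obtain i where i: "i \<in> I" "(f i, g i) \<in> edges (Gs i)" "\<forall>j\<in>I. j \<noteq> i \<longrightarrow> f j = g j"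
    using assms unfolding edges_P[of f g] by blast
  have "f i \<noteq> g i"
  proof
    assume "f i = g i"
    then have "(f i, f i) \<in> edges (Gs i)" using i(2) by simp
    then show False using gr[OF i(1)] unfolding graph_def irrefl_def by blast
  qed
  then have "diff f g = {i}" using i unfolding diff_def by auto
  then show ?thesis using i by blast
qed

lemma upd_V: "f \<in> V \<Longrightarrow> i \<in> I \<Longrightarrow> x \<in> verts (Gs i) \<Longrightarrow> f(i := x) \<in> V"
  by (auto simp: PiE_def Pi_def extensional_def)

lemma lift_walk:
  assumes f: "f \<in> V" and i: "i \<in> I" and q: "walk (Gs i) q"
  shows "walk P (map (\<lambda>x. f(i := x)) q)"
  unfolding walk_def
proof (intro conjI allI impI)
  show "map (\<lambda>x. f(i := x)) q \<noteq> []" using q by (simp add: walk_def)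
  show "set (map (\<lambda>x. f(i := x)) q) \<subseteq> verts P" using q f i upd_V verts_P by (auto simp: walk_def)
  fix k assume k: "Suc k < length (map (\<lambda>x. f(i := x)) q)"
  then have e: "(q ! k, q ! Suc k) \<in> edges (Gs i)" using q by (simp add: walk_def)
  have "q ! k \<in> verts (Gs i)" "q ! Suc k \<in> verts (Gs i)"
    using q k nth_mem[of k q] nth_mem[of "Suc k" q] by (auto simp: walk_def)
  then show "(map (\<lambda>x. f(i := x)) q ! k, map (\<lambda>x. f(i := x)) q ! Suc k) \<in> edges P"
    using e k f i upd_V unfolding edges_P by auto
qed

abbreviation d :: "'i \<Rightarrow> 'd \<Rightarrow> 'd \<Rightarrow> nat" where "d i \<equiv> dist (Gs i)"

definition S :: "'i set \<Rightarrow> ('i \<Rightarrow> 'd) \<Rightarrow> ('i \<Rightarrow> 'd) \<Rightarrow> nat" where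
  "S K f g = (\<Sum>j\<in>K. d j (f j) (g j))"

lemma S_super:
  assumes "f \<in> V" "finite K" "diff f g \<subseteq> K" "K \<subseteq> I"
  shows "S K f g = S (diff f g) f g"
  unfolding S_def
proof (rule sum.mono_neutral_right[OF assms(2) assms(3)])
  show "\<forall>j\<in>K - diff f g. d j (f j) (g j) = 0"
  proof
    fix j assume j: "j \<in> K - diff f g"
    then have "f j = g j" "j \<in> I" using assms(4) unfolding diff_def by auto
    moreover have "f j \<in> verts (Gs j)" using assms(1) \<open>j \<in> I\<close> by auto
    ultimately show "d j (f j) (g j) = 0" using dist_self by metis
  qed
qed

lemma upper:
  assumes "f \<in> V" "g \<in> V" "finite (diff f g)"
  shows "\<exists>p. walk P p \<and> hd p = f \<and> last p = g \<and> length p = Suc (S (diff f g) f g)"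
  using assms
proof (induction "card (diff f g)" arbitrary: f)
  case 0
  then have "diff f g = {}" by simp
  have "f x = g x" for x
  proof (cases "x \<in> I")
    case True then show ?thesis using \<open>diff f g = {}\<close> unfolding diff_def by blast
  next
    case False
    have "f \<in> V" "g \<in> V" using 0 by blast+
    then show ?thesis using PiE_arb[OF \<open>f \<in> V\<close> False] PiE_arb[OF \<open>g \<in> V\<close> False] by simp
  qed
  then have "f = g" by (rule ext)
  then show ?case using 0 \<open>diff f g = {}\<close>
    by (intro exI[of _ "[f]"]) (auto simp: walk_def verts_P S_def)
next
  case (Suc n)
  obtain i where i: "i \<in> diff f g" using Suc.hyps(2) by (metis card.empty ex_in_conv nat.distinct(1))
  have iI: "i \<in> I" using i diff_sub by blast
  have fi: "f i \<in> verts (Gs i)" "g i \<in> verts (Gs i)" using Suc.prems iI by auto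
  obtain q where q: "walk (Gs i) q" "hd q = f i" "last q = g i" "length q = Suc (d i (f i) (g i))"
    using dist_witness[OF connected_reach[OF co[OF iI] fi]] by blast
  define f' where "f' = f(i := g i)"
  have f'V: "f' \<in> V" using upd_V[OF Suc.prems(1) iI fi(2)] f'_def by simp
  have df': "diff f' g = diff f g - {i}" unfolding diff_def f'_def by auto
  have "card (diff f' g) = n" using df' Suc.hyps(2) Suc.prems(3) i by simp
  then obtain p where p: "walk P p" "hd p = f'" "last p = g" "length p = Suc (S (diff f' g) f' g)"
    using Suc.hyps(1)[of f'] f'V Suc.prems df' by auto
  let ?l = "map (\<lambda>x. f(i := x)) q"
  have wl: "walk P ?l" using lift_walk[OF Suc.prems(1) iI q(1)] .
  have ql: "q \<noteq> []" using q by (simp add: walk_def)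
  have hl: "hd ?l = f" "last ?l = f'" using q ql by (auto simp: hd_map last_map f'_def)
  have pl: "p \<noteq> []" using p by (simp add: walk_def)
  have w: "walk P (?l @ tl p)" using walk_append[OF wl p(1)] hl p by simp
  have Seq: "S (diff f g) f g = d i (f i) (g i) + S (diff f' g) f' g"
  proof -
    have "S (diff f g) f g = d i (f i) (g i) + S (diff f g - {i}) f g"
      unfolding S_def using Suc.prems(3) i by (simp add: sum.remove)
    moreover have "S (diff f g - {i}) f g = S (diff f' g) f' g"
      unfolding S_def df' by (intro sum.cong refl) (simp add: f'_def)
    ultimately show ?thesis by simp
  qed
  show ?case
    using w hl p pl ql q Seq by (intro exI[of _ "?l @ tl p"]) (auto simp: last_append_tl)
qed

lemma lower:
  assumes "walk P p"
  shows "finite (diff (hd p) (last p)) \<and> S (diff (hd p) (last p)) (hd p) (last p) \<le> length p - 1"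
  using assms
proof (induction p)
  case Nil then show ?case by (simp add: walk_def)
next
  case (Cons f p)
  show ?case
  proof (cases p)
    case Nil then show ?thesis by (simp add: diff_self S_def)
  next
    case (Cons f' r)
    have w: "walk P p" and e: "(f, f') \<in> edges P" using Cons.prems \<open>p = f' # r\<close> by (auto simp: walk_Cons)
    let ?g = "last p"
    have IH: "finite (diff f' ?g)" "S (diff f' ?g) f' ?g \<le> length p - 1" using Cons.IH[OF w] \<open>p = f' # r\<close> by auto
    obtain i where i: "i \<in> I" "diff f f' = {i}" "(f i, f' i) \<in> edges (Gs i)" using edge_diff[OF e] by blast
    have fV: "f \<in> V" "f' \<in> V" using e unfolding edges_P[of f f'] by auto
    have gV: "?g \<in> V" using walk_last[OF w] verts_P by simp
    define K where "K = diff f' ?g \<union> {i}"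
    have K: "finite K" "K \<subseteq> I" using IH(1) i diff_sub unfolding K_def by auto
    have dK: "diff f ?g \<subseteq> K" using diff_tri[of f ?g f'] i unfolding K_def by auto
    have fin: "finite (diff f ?g)" using dK K finite_subset by blast
    have iK: "i \<in> K" unfolding K_def by blast
    have a: "S K f ?g = d i (f i) (?g i) + S (K - {i}) f ?g" unfolding S_def using sum.remove[OF K(1) iK] .
    have b: "S K f' ?g = d i (f' i) (?g i) + S (K - {i}) f' ?g" unfolding S_def using sum.remove[OF K(1) iK] .
    have c: "S (K - {i}) f ?g = S (K - {i}) f' ?g" unfolding S_def
    proof (intro sum.cong refl)
      fix j assume "j \<in> K - {i}"
      then have "j \<in> I" "j \<notin> diff f f'" using K i by auto
      then have "f j = f' j" unfolding diff_def by auto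
      then show "d j (f j) (?g j) = d j (f' j) (?g j)" by simp
    qed
    have fi: "f i \<in> verts (Gs i)" "f' i \<in> verts (Gs i)" "?g i \<in> verts (Gs i)" using fV gV i by auto
    have "d i (f i) (?g i) \<le> d i (f i) (f' i) + d i (f' i) (?g i)"
      using dist_triangle connected_reach[OF co[OF i(1)]] fi by metis
    moreover have "d i (f i) (f' i) = 1" using dist_edge[OF gr[OF i(1)] i(3)] .
    ultimately have "S K f ?g \<le> 1 + S K f' ?g" using a b c by simp
    moreover have "S K f ?g = S (diff f ?g) f ?g" using S_super[OF fV(1) K(1) dK K(2)] .
    moreover have "S K f' ?g = S (diff f' ?g) f' ?g"
      using S_super[OF fV(2) K(1) _ K(2)] unfolding K_def by blast
    ultimately have "S (diff f ?g) f ?g \<le> 1 + (length p - 1)" using IH(2) by simp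
    then show ?thesis using fin \<open>p = f' # r\<close> by simp
  qed
qed

lemma reach_P: "reach P f g \<longleftrightarrow> f \<in> V \<and> g \<in> V \<and> finite (diff f g)"
proof
  assume r: "reach P f g"
  then obtain p where "walk P p" "hd p = f" "last p = g" unfolding reach_def by blast
  then show "f \<in> V \<and> g \<in> V \<and> finite (diff f g)" using lower reach_verts[OF r] verts_P by metis
next
  assume "f \<in> V \<and> g \<in> V \<and> finite (diff f g)"
  then show "reach P f g" using upper unfolding reach_def by blast
qed

lemma dist_P:
  assumes "reach P f g" shows "dist P f g = S (diff f g) f g"
proof -
  have h: "f \<in> V" "g \<in> V" "finite (diff f g)" using assms reach_P by auto
  obtain p where p: "walk P p" "hd p = f" "last p = g" "length p = Suc (S (diff f g) f g)"
    using upper[OF h] by blast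
  have "dist P f g \<le> S (diff f g) f g" using dist_le_walk[OF p(1-3)] p(4) by simp
  moreover obtain q where q: "walk P q" "hd q = f" "last q = g" "length q = Suc (dist P f g)"
    using dist_witness[OF assms] by blast
  have "S (diff f g) f g \<le> dist P f g" using lower[OF q(1)] q by simp
  ultimately show ?thesis by simp
qed

lemma dist_P_K:
  assumes "reach P f g" "finite K" "diff f g \<subseteq> K" "K \<subseteq> I"
  shows "dist P f g = S K f g"
  using dist_P[OF assms(1)] S_super[OF _ assms(2-4)] reach_P assms(1) by metis

end


lemma sum_eq_termwise:
  fixes a b :: "'x \<Rightarrow> nat"
  assumes "finite K" "\<forall>j\<in>K. b j \<le> a j" "sum a K = sum b K"
  shows "\<forall>j\<in>K. a j = b j"
proof (rule ccontr)
  assume "\<not> (\<forall>j\<in>K. a j = b j)"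
  then have "\<exists>j\<in>K. b j < a j" using assms(2) by force
  then have "sum b K < sum a K" using sum_strict_mono_ex1[OF assms(1)] assms(2) by blast
  then show False using assms(3) by simp
qed

context prodg
begin

lemma interval_P:
  assumes r: "reach P f g"
  shows "h \<in> interval P f g \<longleftrightarrow> h \<in> V \<and> (\<forall>j\<in>I. h j \<in> interval (Gs j) (f j) (g j))"
proof
  have fg: "f \<in> V" "g \<in> V" "finite (diff f g)" using r unfolding reach_P[of f g] by blast+
  assume "h \<in> interval P f g"
  then have h: "reach P f h" "reach P h g" "dist P f h + dist P h g = dist P f g"
    using interval_char[OF graph_P r] by auto
  have hV: "h \<in> V" using h(1) unfolding reach_P[of f h] by blast
  define K where "K = diff f g \<union> diff f h \<union> diff h g"
  have "finite (diff f h)" "finite (diff h g)" using h(1,2) unfolding reach_P[of f h] reach_P[of h g] by blast+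
  then have K: "finite K" "K \<subseteq> I" using fg(3) diff_sub unfolding K_def by auto
  have e1: "dist P f h = S K f h" using dist_P_K[OF h(1) K(1) _ K(2)] unfolding K_def by blast
  have e2: "dist P h g = S K h g" using dist_P_K[OF h(2) K(1) _ K(2)] unfolding K_def by blast
  have e3: "dist P f g = S K f g" using dist_P_K[OF r K(1) _ K(2)] unfolding K_def by blast
  have tri: "\<forall>j\<in>K. d j (f j) (g j) \<le> d j (f j) (h j) + d j (h j) (g j)"
  proof
    fix j assume "j \<in> K"
    then have j: "j \<in> I" using K by blast
    have "f j \<in> verts (Gs j)" "g j \<in> verts (Gs j)" "h j \<in> verts (Gs j)" using fg hV j by auto
    then show "d j (f j) (g j) \<le> d j (f j) (h j) + d j (h j) (g j)"
      using dist_triangle connected_reach[OF co[OF j]] by metis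
  qed
  have "sum (\<lambda>j. d j (f j) (h j) + d j (h j) (g j)) K = sum (\<lambda>j. d j (f j) (g j)) K"
    using h(3) e1 e2 e3 unfolding S_def by (simp add: sum.distrib)
  then have eq: "\<forall>j\<in>K. d j (f j) (h j) + d j (h j) (g j) = d j (f j) (g j)"
    using sum_eq_termwise[OF K(1) tri] by blast
  have "\<forall>j\<in>I. h j \<in> interval (Gs j) (f j) (g j)"
  proof
    fix j assume j: "j \<in> I"
    have v: "f j \<in> verts (Gs j)" "g j \<in> verts (Gs j)" "h j \<in> verts (Gs j)" using fg hV j by auto
    show "h j \<in> interval (Gs j) (f j) (g j)"
    proof (cases "j \<in> K")
      case True
      then show ?thesis using eq interval_conn[OF gr[OF j] co[OF j] v(1,2)] v(3) by blast
    next
      case False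
      then have "h j = f j" "g j = f j" using j unfolding K_def diff_def by auto
      then show ?thesis using interval_ends(1)[OF gr[OF j] reach_refl[OF v(1)]] by simp
    qed
  qed
  then show "h \<in> V \<and> (\<forall>j\<in>I. h j \<in> interval (Gs j) (f j) (g j))" using hV by blast
next
  have fg: "f \<in> V" "g \<in> V" "finite (diff f g)" using r unfolding reach_P[of f g] by blast+
  assume h: "h \<in> V \<and> (\<forall>j\<in>I. h j \<in> interval (Gs j) (f j) (g j))"
  have same: "h j = f j" if j: "j \<in> I" "f j = g j" for j
  proof -
    have "f j \<in> verts (Gs j)" using fg j by auto
    then have "interval (Gs j) (f j) (g j) = {f j}" using interval_self[OF gr[OF j(1)]] j by simp
    then show ?thesis using h j by blast
  qed
  have d1: "diff f h \<subseteq> diff f g" "diff h g \<subseteq> diff f g" using same unfolding diff_def by auto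
  have "finite (diff f h)" "finite (diff h g)" using d1 fg(3) finite_subset by blast+
  then have r1: "reach P f h" "reach P h g" unfolding reach_P[of f h] reach_P[of h g] using fg h by blast+
  let ?K = "diff f g"
  have e1: "dist P f h = S ?K f h" using dist_P_K[OF r1(1) fg(3) d1(1) diff_sub] .
  have e2: "dist P h g = S ?K h g" using dist_P_K[OF r1(2) fg(3) d1(2) diff_sub] .
  have e3: "dist P f g = S ?K f g" using dist_P[OF r] .
  have "\<forall>j\<in>?K. d j (f j) (h j) + d j (h j) (g j) = d j (f j) (g j)"
  proof
    fix j assume "j \<in> ?K" then have j: "j \<in> I" using diff_sub by blast
    have v: "f j \<in> verts (Gs j)" "g j \<in> verts (Gs j)" using fg j by auto
    show "d j (f j) (h j) + d j (h j) (g j) = d j (f j) (g j)"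
      using h j interval_conn[OF gr[OF j] co[OF j] v] by blast
  qed
  then have "dist P f h + dist P h g = dist P f g"
    using e1 e2 e3 unfolding S_def by (simp add: sum.distrib[symmetric])
  then show "h \<in> interval P f g" using interval_char[OF graph_P r] r1 by blast
qed

definition Comp :: "('i \<Rightarrow> 'd) \<Rightarrow> ('i \<Rightarrow> 'd) set" where
  "Comp a = {b. reach P a b}"

lemma Comp_eq: "a \<in> V \<Longrightarrow> Comp a = {b \<in> V. finite (diff a b)}"
  unfolding Comp_def using reach_P[of a] by blast

lemma Comp_reach: "b \<in> Comp a \<Longrightarrow> c \<in> Comp a \<Longrightarrow> reach P b c"
proof -
  assume "b \<in> Comp a" "c \<in> Comp a"
  then have "reach P a b" "reach P a c" unfolding Comp_def by auto
  then show "reach P b c" using reach_trans[OF reach_sym[OF graph_P] ] by blast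
qed

lemma Comp_self: "a \<in> V \<Longrightarrow> a \<in> Comp a"
  unfolding Comp_def using reach_refl[of a P] verts_P by simp

lemma Comp_convex: "a \<in> V \<Longrightarrow> convex P (Comp a)"
  unfolding convex_def
proof (intro conjI ballI subsetI)
  fix b assume "b \<in> Comp a" then show "b \<in> verts P" unfolding Comp_def using reach_verts[of P a b] by simp
next
  fix b c z assume bc: "b \<in> Comp a" "c \<in> Comp a" and z: "z \<in> interval P b c"
  have "reach P b c" using Comp_reach bc by blast
  then have "reach P b z" using interval_char[OF graph_P \<open>reach P b c\<close>, of z] z by blast
  moreover have "reach P a b" using bc unfolding Comp_def by simp
  ultimately show "z \<in> Comp a" unfolding Comp_def using reach_trans[of P a b z] by simp
qed

lemma weak_eq: "weak_cart_prod I Gs a = induced P (Comp a)"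
  unfolding weak_cart_prod_def component_def Comp_def reach_def ..

end


context prodg
begin

abbreviation "W a \<equiv> induced P (Comp a)"

lemma W_graph: "graph (W a)" using graph_induced[OF graph_P] .

lemma W_dist: "a \<in> V \<Longrightarrow> b \<in> Comp a \<Longrightarrow> c \<in> Comp a \<Longrightarrow> reach (W a) b c \<and> dist (W a) b c = dist P b c"
  using convex_induced_dist[OF graph_P Comp_convex _ _ Comp_reach] by blast

lemma W_interval: "a \<in> V \<Longrightarrow> b \<in> Comp a \<Longrightarrow> c \<in> Comp a \<Longrightarrow> interval (W a) b c = interval P b c"
  using convex_induced_interval[OF graph_P Comp_convex _ _ Comp_reach] by blast

lemma W_conn: assumes "a \<in> V" shows "connected_graph (W a)"
  unfolding connected_graph_def
proof (intro conjI ballI)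
  show "verts (W a) \<noteq> {}" using Comp_self[OF assms] by auto
  fix b c assume "b \<in> verts (W a)" "c \<in> verts (W a)"
  then have "reach (W a) b c" using W_dist[OF assms] by auto
  then show "\<exists>p. walk (W a) p \<and> hd p = b \<and> last p = c" unfolding reach_def .
qed

lemma W_convex_iff:
  assumes "a \<in> V"
  shows "convex (W a) B \<longleftrightarrow> B \<subseteq> Comp a \<and> convex P B"
proof
  assume h: "convex (W a) B"
  then have B: "B \<subseteq> Comp a" unfolding convex_def by simp
  have "\<forall>x\<in>B. \<forall>y\<in>B. interval P x y \<subseteq> B"
  proof (intro ballI)
    fix x y assume "x \<in> B" "y \<in> B"
    then show "interval P x y \<subseteq> B" using h B W_interval[OF assms, of x y] unfolding convex_def by auto
  qed
  moreover have "B \<subseteq> verts P" using B Comp_convex[OF assms] unfolding convex_def by blast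
  ultimately show "B \<subseteq> Comp a \<and> convex P B" using B unfolding convex_def by blast
next
  assume h: "B \<subseteq> Comp a \<and> convex P B"
  have "\<forall>x\<in>B. \<forall>y\<in>B. interval (W a) x y \<subseteq> B"
  proof (intro ballI)
    fix x y assume "x \<in> B" "y \<in> B"
    moreover have "x \<in> Comp a" "y \<in> Comp a" using h calculation by auto
    ultimately show "interval (W a) x y \<subseteq> B" using h W_interval[OF assms, of x y] unfolding convex_def by auto
  qed
  then show "convex (W a) B" using h unfolding convex_def by simp
qed

lemma W_pcf:
  assumes a: "a \<in> V" and pc: "\<And>i. i \<in> I \<Longrightarrow> pcf (Gs i)"
  shows "pcf (W a)"
proof -
  define F where "F = (\<lambda>i. SOME F :: 'd set set. pcfami (Gs i) F id)"
  have F: "pcfami (Gs i) (F i) id" if "i \<in> I" for i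
    using pc[OF that] unfolding pcf_def F_def by (metis (mono_tags) someI_ex)
  define J where "J = Sigma I F"
  define h where "h = (\<lambda>(i :: 'i, H :: 'd set). {f :: 'i \<Rightarrow> 'd. f i \<in> H})"
  have "pcfami (W a) J h" unfolding pcfami_def
  proof (intro ballI)
    fix b c assume bc: "b \<in> verts (W a)" "c \<in> verts (W a)"
    then have bc': "b \<in> Comp a" "c \<in> Comp a" by auto
    have r: "reach P b c" using Comp_reach[OF bc'] .
    then have bcV: "b \<in> V" "c \<in> V" "finite (diff b c)" unfolding reach_P[of b c] by blast+
    have e: "sepi J h b c = Sigma (diff b c) (\<lambda>i. sepi (F i) id (b i) (c i))"
      unfolding sepi_def J_def h_def diff_def by auto
    have fin: "\<forall>i\<in>diff b c. finite (sepi (F i) id (b i) (c i))"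
    proof
      fix i assume "i \<in> diff b c"
      then have i: "i \<in> I" using diff_sub by blast
      then show "finite (sepi (F i) id (b i) (c i))" using F[OF i] bcV unfolding pcfami_def by auto
    qed
    have "card (sepi J h b c) = (\<Sum>i\<in>diff b c. card (sepi (F i) id (b i) (c i)))"
      unfolding e using card_SigmaI[OF bcV(3) fin] .
    also have "\<dots> = (\<Sum>i\<in>diff b c. d i (b i) (c i))"
    proof (intro sum.cong refl)
      fix i assume "i \<in> diff b c"
      then have i: "i \<in> I" using diff_sub by blast
      have "b i \<in> verts (Gs i)" "c i \<in> verts (Gs i)" using bcV(1,2) i by (auto simp: PiE_iff)
      then show "card (sepi (F i) id (b i) (c i)) = d i (b i) (c i)" using F[OF i] unfolding pcfami_def by auto
    qed
    also have "\<dots> = dist P b c" using dist_P[OF r] unfolding S_def by simp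
    also have "\<dots> = dist (W a) b c" using W_dist[OF a bc'] by simp
    finally show "finite (sepi J h b c) \<and> dist (W a) b c = card (sepi J h b c)"
      using e fin bcV(3) by auto
  qed
  then show ?thesis by (rule pcf_intro[OF W_graph W_conn[OF a]])
qed

end


context prodg
begin

lemma diff_empty_eq: assumes "f \<in> V" "g \<in> V" "diff f g = {}" shows "f = g"
proof
  fix x show "f x = g x"
  proof (cases "x \<in> I")
    case True then show ?thesis using assms(3) unfolding diff_def by blast
  next
    case False
    then show ?thesis using PiE_arb[OF assms(1) False] PiE_arb[OF assms(2) False] by simp
  qed
qed

lemma ends_i:
  assumes "j \<in> I" "u \<in> verts (Gs j)" "v \<in> verts (Gs j)"
  shows "u \<in> interval (Gs j) u v" "v \<in> interval (Gs j) u v"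
  using interval_ends[OF gr[OF assms(1)] connected_reach[OF co[OF assms(1)] assms(2,3)]] by auto

lemma V_mem: "f \<in> V \<Longrightarrow> j \<in> I \<Longrightarrow> f j \<in> verts (Gs j)" by (auto simp: PiE_iff)

end

locale prodc = prodg I Gs for I :: "'i set" and Gs :: "'i \<Rightarrow> 'd graph" +
  assumes fin: "\<And>f g. f \<in> V \<Longrightarrow> g \<in> V \<Longrightarrow> finite (diff f g)"
begin

lemma reach_all: "f \<in> V \<Longrightarrow> g \<in> V \<Longrightarrow> reach P f g"
  unfolding reach_P using fin by blast

lemma icoord:
  assumes "f \<in> V" "g \<in> V" "h \<in> V"
  shows "h \<in> interval P f g \<longleftrightarrow> (\<forall>j\<in>I. h j \<in> interval (Gs j) (f j) (g j))"
  using interval_P[OF reach_all[OF assms(1,2)], of h] assms(3) by blast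

lemma closure:
  assumes C: "convex P C" and f: "f \<in> V" and pr: "\<forall>i\<in>I. \<exists>b\<in>C. b i = f i"
  shows "c0 \<in> C \<Longrightarrow> f \<in> C"
proof (induction "card (diff f c0)" arbitrary: c0)
  case 0
  have CV: "C \<subseteq> V" using C verts_P unfolding convex_def by blast
  have "c0 \<in> V" using 0 CV by blast
  then have "diff f c0 = {}" using 0 fin[OF f] by simp
  then have "f = c0" using diff_empty_eq[OF f \<open>c0 \<in> V\<close>] by simp
  then show ?case using 0 by simp
next
  case (Suc n)
  have CV: "C \<subseteq> V" using C verts_P unfolding convex_def by blast
  have c0V: "c0 \<in> V" using Suc.prems CV by blast
  have finD: "finite (diff f c0)" using fin[OF f c0V] .
  obtain i where i: "i \<in> diff f c0" using Suc.hyps(2) by (metis card.empty ex_in_conv nat.distinct(1))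
  have iI: "i \<in> I" using i diff_sub by blast
  obtain b where b: "b \<in> C" "b i = f i" using pr iI by blast
  have bV: "b \<in> V" using b CV by blast
  define c' where "c' = c0(i := f i)"
  have c'V: "c' \<in> V" unfolding c'_def using upd_V[OF c0V iI V_mem[OF f iI]] .
  have "\<forall>j\<in>I. c' j \<in> interval (Gs j) (c0 j) (b j)"
  proof
    fix j assume j: "j \<in> I"
    show "c' j \<in> interval (Gs j) (c0 j) (b j)"
    proof (cases "j = i")
      case True then show ?thesis using ends_i(2)[OF j V_mem[OF c0V j] V_mem[OF bV j]] b(2) unfolding c'_def by simp
    next
      case False then show ?thesis using ends_i(1)[OF j V_mem[OF c0V j] V_mem[OF bV j]] unfolding c'_def by simp
    qed
  qed
  then have "c' \<in> interval P c0 b" using icoord[OF c0V bV c'V] by blast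
  then have c'C: "c' \<in> C" using C Suc.prems b(1) unfolding convex_def by blast
  have "diff f c' = diff f c0 - {i}" unfolding diff_def c'_def by auto
  then have "card (diff f c') = n" using Suc.hyps(2) finD i by simp
  then show ?case using Suc.hyps(1) c'C by blast
qed

definition pr :: "'i \<Rightarrow> ('i \<Rightarrow> 'd) set \<Rightarrow> 'd set" where "pr i C = (\<lambda>g :: 'i \<Rightarrow> 'd. g i) ` C"

definition cyl :: "'i \<Rightarrow> 'd set \<Rightarrow> ('i \<Rightarrow> 'd) set" where "cyl k T = {g \<in> PiE I (\<lambda>j. verts (Gs j)). g k \<in> T}"

lemma proj_convex:
  assumes C: "convex P C" and i: "i \<in> I"
  shows "convex (Gs i) (pr i C)"
  unfolding convex_def
proof (intro conjI ballI subsetI)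
  have CV: "C \<subseteq> V" using C verts_P unfolding convex_def by blast
  fix x assume "x \<in> pr i C"
  then show "x \<in> verts (Gs i)" using CV V_mem[OF _ i] unfolding pr_def by blast
next
  have CV: "C \<subseteq> V" using C verts_P unfolding convex_def by blast
  fix x y w assume xy: "x \<in> pr i C" "y \<in> pr i C" and w: "w \<in> interval (Gs i) x y"
  obtain b c where bc: "b \<in> C" "c \<in> C" "x = b i" "y = c i" using xy unfolding pr_def by blast
  have bV: "b \<in> V" "c \<in> V" using bc CV by auto
  have wv: "w \<in> verts (Gs i)" using w interval_verts[of "Gs i"] by blast
  define h where "h = b(i := w)"
  have hV: "h \<in> V" unfolding h_def using upd_V[OF bV(1) i wv] .
  have "\<forall>j\<in>I. h j \<in> interval (Gs j) (b j) (c j)"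
  proof
    fix j assume j: "j \<in> I"
    show "h j \<in> interval (Gs j) (b j) (c j)"
    proof (cases "j = i")
      case True then show ?thesis using w bc unfolding h_def by simp
    next
      case False then show ?thesis using ends_i(1)[OF j V_mem[OF bV(1) j] V_mem[OF bV(2) j]] unfolding h_def by simp
    qed
  qed
  then have "h \<in> interval P b c" using icoord[OF bV hV] by blast
  then have "h \<in> C" using C bc unfolding convex_def by blast
  moreover have "w = (\<lambda>g. g i) h" unfolding h_def by simp
  ultimately show "w \<in> pr i C" unfolding pr_def by blast
qed

lemma cyl_convex:
  assumes T: "convex (Gs i) T" and i: "i \<in> I"
  shows "convex P (cyl i T)"
  unfolding convex_def
proof (intro conjI ballI subsetI)
  fix f assume "f \<in> cyl i T" then show "f \<in> verts P" unfolding cyl_def verts_P by blast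
next
  fix f g h assume fg: "f \<in> cyl i T" "g \<in> cyl i T" and h: "h \<in> interval P f g"
  have fgV: "f \<in> V" "g \<in> V" using fg unfolding cyl_def by auto
  have hV: "h \<in> V" using h interval_verts[of P] verts_P by blast
  have "h i \<in> interval (Gs i) (f i) (g i)" using icoord[OF fgV hV] h i by blast
  then have "h i \<in> T" using T fg unfolding convex_def cyl_def by blast
  then show "h \<in> cyl i T" unfolding cyl_def using hV by blast
qed

lemma ph1_P:
  assumes ph: "\<And>i. i \<in> I \<Longrightarrow> ph1 (Gs i)"
  shows "ph1 P"
  unfolding ph1_def
proof (intro ballI allI impI)
  fix x C assume xV': "x \<in> verts P" and cp: "copoint P x C"
  have xV: "x \<in> V" using xV' verts_P by simp
  have Cc: "convex P C" and xC: "x \<notin> C" and mx: "\<And>D. convex P D \<Longrightarrow> C \<subseteq> D \<Longrightarrow> x \<notin> D \<Longrightarrow> D = C"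
    using cp unfolding copoint_def by blast+
  have CV: "C \<subseteq> V" using Cc verts_P unfolding convex_def by blast
  show "convex P (interval_set P (insert x C))"
  proof (cases "C = {}")
    case True
    have "interval_set P {x} = {x}" unfolding interval_set_def using interval_self[OF graph_P xV'] by simp
    then show ?thesis using True convex_single[OF graph_P xV'] by simp
  next
    case False
    then obtain c0 where c0: "c0 \<in> C" by blast
    have "\<exists>i\<in>I. x i \<notin> pr i C"
    proof (rule ccontr)
      assume "\<not> (\<exists>i\<in>I. x i \<notin> pr i C)"
      then have "\<forall>i\<in>I. \<exists>b\<in>C. b i = x i" unfolding pr_def by force
      then have "x \<in> C" using closure[OF Cc xV _ c0] by blast
      then show False using xC by simp
    qed
    then obtain i where i: "i \<in> I" "x i \<notin> pr i C" by blast
    let ?Pi = "pr i C"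
    have Pic: "convex (Gs i) ?Pi" using proj_convex[OF Cc i(1)] .
    have cylC: "cyl i ?Pi = C"
    proof (rule mx)
      show "convex P (cyl i ?Pi)" using cyl_convex[OF Pic i(1)] .
      show "C \<subseteq> cyl i ?Pi" unfolding cyl_def pr_def using CV by auto
      show "x \<notin> cyl i ?Pi" unfolding cyl_def using i(2) by blast
    qed
    have xi: "x i \<in> verts (Gs i)" using V_mem[OF xV i(1)] .
    have cpi: "copoint (Gs i) (x i) ?Pi" unfolding copoint_def
    proof (intro conjI allI impI)
      show "convex (Gs i) ?Pi" using Pic .
      show "x i \<notin> ?Pi" using i(2) .
      fix D assume D: "convex (Gs i) D \<and> ?Pi \<subseteq> D \<and> x i \<notin> D"
      have "cyl i D = C"
      proof (rule mx)
        show "convex P (cyl i D)" using cyl_convex[of i D] D i(1) by blast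
        show "C \<subseteq> cyl i D" using cylC D unfolding cyl_def by auto
        show "x \<notin> cyl i D" unfolding cyl_def using D by blast
      qed
      show "D = ?Pi"
      proof
        show "?Pi \<subseteq> D" using D by blast
        show "D \<subseteq> ?Pi"
        proof
          fix w assume w: "w \<in> D"
          then have wv: "w \<in> verts (Gs i)" using D unfolding convex_def by blast
          have "x(i := w) \<in> cyl i D" unfolding cyl_def using upd_V[OF xV i(1) wv] w by simp
          then have "x(i := w) \<in> cyl i ?Pi" using \<open>cyl i D = C\<close> cylC by simp
          then show "w \<in> ?Pi" unfolding cyl_def by simp
        qed
      qed
    qed
    let ?T = "interval_set (Gs i) (insert (x i) ?Pi)"
    have Tc: "convex (Gs i) ?T" using ph[OF i(1)] xi cpi unfolding ph1_def by blast
    have PiV: "?Pi \<subseteq> verts (Gs i)" using Pic unfolding convex_def by blast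
    have Pne: "?Pi \<noteq> {}" using c0 unfolding pr_def by blast
    have eq: "interval_set P (insert x C) = cyl i ?T"
    proof
      show "interval_set P (insert x C) \<subseteq> cyl i ?T"
      proof
        fix z assume "z \<in> interval_set P (insert x C)"
        then obtain u v where uv: "u \<in> insert x C" "v \<in> insert x C" "z \<in> interval P u v"
          unfolding interval_set_def by blast
        have uvV: "u \<in> V" "v \<in> V" using uv xV CV by auto
        have zV: "z \<in> V" using uv(3) interval_verts[of P] verts_P by blast
        have "z i \<in> interval (Gs i) (u i) (v i)" using icoord[OF uvV zV] uv(3) i(1) by blast
        moreover have "u i \<in> insert (x i) ?Pi" "v i \<in> insert (x i) ?Pi" using uv(1,2) unfolding pr_def by auto
        ultimately have "z i \<in> ?T" unfolding interval_set_def by blast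
        then show "z \<in> cyl i ?T" unfolding cyl_def using zV by blast
      qed
      show "cyl i ?T \<subseteq> interval_set P (insert x C)"
      proof
        fix z assume z: "z \<in> cyl i ?T"
        then have zV: "z \<in> V" and zT: "z i \<in> ?T" unfolding cyl_def by auto
        show "z \<in> interval_set P (insert x C)"
        proof (cases "z i \<in> ?Pi")
          case True
          then have "z \<in> C" using cylC zV unfolding cyl_def by blast
          moreover have "z \<in> interval P z z" using interval_self[OF graph_P] zV verts_P by simp
          ultimately show ?thesis unfolding interval_set_def by blast
        next
          case False
          obtain s t where st: "s \<in> insert (x i) ?Pi" "t \<in> insert (x i) ?Pi" "z i \<in> interval (Gs i) s t"
            using zT unfolding interval_set_def by blast
          have "\<exists>t'\<in>?Pi. z i \<in> interval (Gs i) (x i) t'"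
          proof (cases "s = x i")
            case sx: True
            show ?thesis
            proof (cases "t = x i")
              case True
              then have "z i = x i" using st sx interval_self[OF gr[OF i(1)] xi] by simp
              moreover obtain p where "p \<in> ?Pi" using Pne by blast
              moreover have "p \<in> verts (Gs i)" using \<open>p \<in> ?Pi\<close> PiV by blast
              ultimately have "z i \<in> interval (Gs i) (x i) p" using ends_i(1)[OF i(1) xi, of p] by simp
              then show ?thesis using \<open>p \<in> ?Pi\<close> by blast
            next
              case False
              then show ?thesis using st sx by blast
            qed
          next
            case sx: False
            then have sP: "s \<in> ?Pi" using st by blast
            show ?thesis
            proof (cases "t = x i")
              case True
              have "reach (Gs i) s t" using connected_reach[OF co[OF i(1)]] sP PiV True xi by blast
              then have "z i \<in> interval (Gs i) t s" using interval_sym[OF gr[OF i(1)]] st by blast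
              then show ?thesis using True sP by blast
            next
              case False
              then have "t \<in> ?Pi" using st by blast
              then have "z i \<in> ?Pi" using Pic sP st unfolding convex_def by blast
              then show ?thesis using \<open>z i \<notin> ?Pi\<close> by blast
            qed
          qed
          then obtain t' where t': "t' \<in> ?Pi" "z i \<in> interval (Gs i) (x i) t'" by blast
          define f where "f = z(i := t')"
          have fV: "f \<in> V" unfolding f_def using upd_V[OF zV i(1)] t' PiV by blast
          have fC: "f \<in> C" using cylC fV t' unfolding cyl_def f_def by auto
          have "\<forall>j\<in>I. z j \<in> interval (Gs j) (x j) (f j)"
          proof
            fix j assume j: "j \<in> I"
            show "z j \<in> interval (Gs j) (x j) (f j)"
            proof (cases "j = i")
              case True then show ?thesis using t' unfolding f_def by simp
            next
              case False then show ?thesis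
                using ends_i(2)[OF j V_mem[OF xV j] V_mem[OF zV j]] unfolding f_def by simp
            qed
          qed
          then have "z \<in> interval P x f" using icoord[OF xV fV zV] by blast
          then show ?thesis unfolding interval_set_def using fC by blast
        qed
      qed
    qed
    show ?thesis using eq cyl_convex[OF Tc i(1)] by simp
  qed
qed

end


lemma edges_cart: "(f, g) \<in> edges (cart_prod I Gs) \<longleftrightarrow> f \<in> PiE I (\<lambda>i. verts (Gs i)) \<and> g \<in> PiE I (\<lambda>i. verts (Gs i)) \<and>
   (\<exists>i\<in>I. (f i, g i) \<in> edges (Gs i) \<and> (\<forall>j\<in>I. j \<noteq> i \<longrightarrow> f j = g j))"
  by (simp add: cart_prod_def edges_def)

lemma verts_cart: "verts (cart_prod I Gs) = PiE I (\<lambda>i. verts (Gs i))"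
  by (simp add: cart_prod_def verts_def)

context prodg
begin

definition prj :: "'i \<Rightarrow> ('i \<Rightarrow> 'd) set \<Rightarrow> 'd set" where "prj k C = (\<lambda>g :: 'i \<Rightarrow> 'd. g k) ` C"

lemma closure_r:
  assumes C: "convex P C" and R: "\<forall>b\<in>C. \<forall>c\<in>C. reach P b c" and f: "f \<in> V"
    and pr: "\<forall>i\<in>I. \<exists>b\<in>C. b i = f i"
  shows "c0 \<in> C \<Longrightarrow> finite (diff f c0) \<Longrightarrow> f \<in> C"
proof (induction "card (diff f c0)" arbitrary: c0)
  case 0
  have CV: "C \<subseteq> V" using C verts_P unfolding convex_def by blast
  have "c0 \<in> V" using 0 CV by blast
  then have "diff f c0 = {}" using 0 by simp
  then have "f = c0" using diff_empty_eq[OF f \<open>c0 \<in> V\<close>] by simp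
  then show ?case using 0 by simp
next
  case (Suc n)
  have CV: "C \<subseteq> V" using C verts_P unfolding convex_def by blast
  have c0V: "c0 \<in> V" using Suc.prems CV by blast
  have finD: "finite (diff f c0)" using Suc.prems by simp
  obtain i where i: "i \<in> diff f c0" using Suc.hyps(2) by (metis card.empty ex_in_conv nat.distinct(1))
  have iI: "i \<in> I" using i diff_sub by blast
  obtain b where b: "b \<in> C" "b i = f i" using pr iI by blast
  have bV: "b \<in> V" using b CV by blast
  define c' where "c' = c0(i := f i)"
  have c'V: "c' \<in> V" unfolding c'_def using upd_V[OF c0V iI V_mem[OF f iI]] .
  have "\<forall>j\<in>I. c' j \<in> interval (Gs j) (c0 j) (b j)"
  proof
    fix j assume j: "j \<in> I"
    show "c' j \<in> interval (Gs j) (c0 j) (b j)"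
    proof (cases "j = i")
      case True then show ?thesis using ends_i(2)[OF j V_mem[OF c0V j] V_mem[OF bV j]] b(2) unfolding c'_def by simp
    next
      case False then show ?thesis using ends_i(1)[OF j V_mem[OF c0V j] V_mem[OF bV j]] unfolding c'_def by simp
    qed
  qed
  moreover have "reach P c0 b" using R Suc.prems(1) b(1) by blast
  ultimately have "c' \<in> interval P c0 b" using interval_P[of c0 b c'] c'V by blast
  then have c'C: "c' \<in> C" using C Suc.prems b(1) unfolding convex_def by blast
  have dd: "diff f c' = diff f c0 - {i}" unfolding diff_def c'_def by auto
  then have "card (diff f c') = n" using Suc.hyps(2) finD i by simp
  moreover have "finite (diff f c')" using dd finD by simp
  ultimately show ?case using Suc.hyps(1) c'C by blast
qed

lemma proj_convex_r:
  assumes C: "convex P C" and R: "\<forall>b\<in>C. \<forall>c\<in>C. reach P b c" and i: "i \<in> I"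
  shows "convex (Gs i) (prj i C)"
  unfolding convex_def
proof (intro conjI ballI subsetI)
  have CV: "C \<subseteq> V" using C verts_P unfolding convex_def by blast
  fix x assume "x \<in> prj i C"
  then show "x \<in> verts (Gs i)" using CV V_mem[OF _ i] unfolding prj_def by blast
next
  have CV: "C \<subseteq> V" using C verts_P unfolding convex_def by blast
  fix x y w assume xy: "x \<in> prj i C" "y \<in> prj i C" and w: "w \<in> interval (Gs i) x y"
  obtain b c where bc: "b \<in> C" "c \<in> C" "x = b i" "y = c i" using xy unfolding prj_def by blast
  have bV: "b \<in> V" "c \<in> V" using bc CV by auto
  have wv: "w \<in> verts (Gs i)" using w interval_verts[of "Gs i"] by blast
  define h where "h = b(i := w)"
  have hV: "h \<in> V" unfolding h_def using upd_V[OF bV(1) i wv] .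
  have "\<forall>j\<in>I. h j \<in> interval (Gs j) (b j) (c j)"
  proof
    fix j assume j: "j \<in> I"
    show "h j \<in> interval (Gs j) (b j) (c j)"
    proof (cases "j = i")
      case True then show ?thesis using w bc unfolding h_def by simp
    next
      case False then show ?thesis using ends_i(1)[OF j V_mem[OF bV(1) j] V_mem[OF bV(2) j]] unfolding h_def by simp
    qed
  qed
  moreover have "reach P b c" using R bc by blast
  ultimately have "h \<in> interval P b c" using interval_P[of b c h] hV by blast
  then have "h \<in> C" using C bc unfolding convex_def by blast
  moreover have "w = (\<lambda>g. g i) h" unfolding h_def by simp
  ultimately show "w \<in> prj i C" unfolding prj_def by blast
qed

lemma induced_self: assumes "graph G" shows "induced G (verts G) = G"
proof -
  have "edges G \<inter> (verts G \<times> verts G) = edges G" using assms unfolding graph_def by blast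
  then have "induced G (verts G) = (verts G, edges G)" unfolding induced_def by simp
  then show ?thesis by (simp add: verts_def edges_def)
qed

lemma ph_W:
  assumes a: "a \<in> V" and ph: "\<And>i. i \<in> I \<Longrightarrow> ph_homogeneous (Gs i)"
  shows "ph_homogeneous (W a)"
  unfolding ph_homogeneous_iff[OF W_graph]
proof (intro allI impI)
  fix A assume A: "finite A \<and> convex (W a) A"
  then have AC: "A \<subseteq> Comp a" and Ac: "convex P A" using W_convex_iff[OF a] by auto
  have ind: "induced (W a) A = induced P A" using induced_induced[OF AC] .
  have R: "\<forall>b\<in>A. \<forall>c\<in>A. reach P b c" using AC Comp_reach by blast
  have AV: "A \<subseteq> V" using Ac verts_P unfolding convex_def by blast
  show "ph1 (induced (W a) A)"
  proof (cases "A = {}")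
    case True then show ?thesis unfolding ph1_def ind by simp
  next
    case False
    then obtain a0 where a0: "a0 \<in> A" by blast
    define Ai where "Ai = (\<lambda>i. prj i A)"
    define D where "D = (\<Union>b\<in>A. diff a0 b)"
    have Dfin: "finite D" unfolding D_def using A R a0 reach_P by blast
    have Aic: "convex (Gs i) (Ai i)" if "i \<in> I" for i using proj_convex_r[OF Ac R that] Ai_def by simp
    have Aifin: "finite (Ai i)" for i unfolding Ai_def prj_def using A by simp
    have Aine: "Ai i \<noteq> {}" for i unfolding Ai_def prj_def using a0 by blast
    have Aiv: "Ai i \<subseteq> verts (Gs i)" if "i \<in> I" for i using Aic[OF that] unfolding convex_def by blast
    have Aout: "Ai i = {a0 i}" if i: "i \<in> I" "i \<notin> D" for i
    proof
      show "{a0 i} \<subseteq> Ai i" using a0 unfolding Ai_def prj_def by blast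
      show "Ai i \<subseteq> {a0 i}"
      proof
        fix x assume "x \<in> Ai i"
        then obtain b where b: "b \<in> A" "x = b i" unfolding Ai_def prj_def by blast
        then have "i \<notin> diff a0 b" using i unfolding D_def by blast
        then show "x \<in> {a0 i}" using b i unfolding diff_def by auto
      qed
    qed
    have APi: "A = PiE I Ai"
    proof
      show "A \<subseteq> PiE I Ai" using AV unfolding Ai_def prj_def by (auto simp: PiE_iff)
      show "PiE I Ai \<subseteq> A"
      proof
        fix f assume f: "f \<in> PiE I Ai"
        have fV: "f \<in> V" using f Aiv by (auto simp: PiE_iff)
        have "\<forall>i\<in>I. f i \<in> prj i A" using f unfolding Ai_def by (simp add: PiE_iff)
        then have "\<forall>i\<in>I. \<exists>b\<in>A. f i = b i" unfolding prj_def image_iff .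
        then have "\<forall>i\<in>I. \<exists>b\<in>A. b i = f i" by metis
        moreover have "diff f a0 \<subseteq> D" using f Aout unfolding diff_def by (auto simp: PiE_iff)
        then have "finite (diff f a0)" using Dfin finite_subset by blast
        ultimately show "f \<in> A" using closure_r[OF Ac R fV _ a0] by blast
      qed
    qed
    define Ks where "Ks = (\<lambda>i. induced (Gs i) (Ai i))"
    have Q: "induced P A = cart_prod I Ks"
    proof -
      have vc: "verts (cart_prod I Ks) = PiE I (\<lambda>i. verts (Ks i))" by (simp add: cart_prod_def verts_def)
      have "(\<lambda>i. verts (Ks i)) = Ai" unfolding Ks_def by simp
      then have "verts (induced P A) = verts (cart_prod I Ks)" using APi vc by simp
      moreover have "edges (induced P A) = edges (cart_prod I Ks)"
      proof -
        have "edges (induced P A) = edges P \<inter> (A \<times> A)" by simp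
        also have "\<dots> = edges (cart_prod I Ks)"
        proof (intro set_eqI iffI)
          fix e assume e: "e \<in> edges P \<inter> (A \<times> A)"
          obtain f g where fg: "e = (f, g)" by fastforce
          have h: "f \<in> A" "g \<in> A" "(f, g) \<in> edges P" using e fg by auto
          then obtain i where i: "i \<in> I" "(f i, g i) \<in> edges (Gs i)" "\<forall>j\<in>I. j \<noteq> i \<longrightarrow> f j = g j"
            unfolding edges_P by blast
          have "f i \<in> Ai i" "g i \<in> Ai i" using h unfolding Ai_def prj_def by auto
          then have ek: "(f i, g i) \<in> edges (Ks i)" using i(2) unfolding Ks_def by simp
          have vk: "(\<lambda>i. verts (Ks i)) = Ai" unfolding Ks_def by simp
          have fK: "f \<in> PiE I (\<lambda>i. verts (Ks i))" "g \<in> PiE I (\<lambda>i. verts (Ks i))"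
            using h(1,2) APi vk by auto
          show "e \<in> edges (cart_prod I Ks)" unfolding fg edges_cart using fK ek i by blast
        next
          fix e assume e: "e \<in> edges (cart_prod I Ks)"
          obtain f g where fg: "e = (f, g)" by fastforce
          have h: "f \<in> PiE I (\<lambda>i. verts (Ks i))" "g \<in> PiE I (\<lambda>i. verts (Ks i))"
            "\<exists>i\<in>I. (f i, g i) \<in> edges (Ks i) \<and> (\<forall>j\<in>I. j \<noteq> i \<longrightarrow> f j = g j)"
            using e unfolding fg edges_cart by blast+
          have fA: "f \<in> A" "g \<in> A" using h(1,2) APi unfolding Ks_def by auto
          then have fV: "f \<in> V" "g \<in> V" using AV by auto
          obtain i where i: "i \<in> I" "(f i, g i) \<in> edges (Ks i)" "\<forall>j\<in>I. j \<noteq> i \<longrightarrow> f j = g j"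
            using h(3) by blast
          have "(f i, g i) \<in> edges (Gs i)" using i(2) unfolding Ks_def by simp
          then have "(f, g) \<in> edges P" unfolding edges_P using fV i by blast
          then show "e \<in> edges P \<inter> (A \<times> A)" using fg fA by simp
        qed
        finally show ?thesis .
      qed
      ultimately show ?thesis by (metis prod.collapse verts_def edges_def)
    qed
    have Ksg: "graph (Ks i)" if "i \<in> I" for i unfolding Ks_def using graph_induced[OF gr[OF that]] .
    have Ksc: "connected_graph (Ks i)" if "i \<in> I" for i
      unfolding Ks_def using convex_connected_induced[OF gr[OF that] co[OF that] Aic[OF that] Aine] .
    interpret Q: prodg I Ks using Ksg Ksc by unfold_locales
    interpret Q: prodc I Ks
    proof
      fix f g assume fg: "f \<in> PiE I (\<lambda>i. verts (Ks i))" "g \<in> PiE I (\<lambda>i. verts (Ks i))"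
      have "Q.diff f g \<subseteq> D"
      proof
        fix i assume i: "i \<in> Q.diff f g"
        then have iI: "i \<in> I" "f i \<noteq> g i" unfolding Q.diff_def by auto
        show "i \<in> D"
        proof (rule ccontr)
          assume "i \<notin> D"
          then have "Ai i = {a0 i}" using Aout iI by blast
          moreover have "f i \<in> Ai i" "g i \<in> Ai i" using fg iI(1) unfolding Ks_def by (auto simp: PiE_iff)
          ultimately show False using iI(2) by simp
        qed
      qed
      then show "finite (Q.diff f g)" using Dfin finite_subset by blast
    qed
    have "ph1 (Ks i)" if i: "i \<in> I" for i
    proof -
      have "ph_at_most (induced (Gs i) (Ai i)) 1" using ph[OF i] Aifin Aic[OF i] unfolding ph_homogeneous_def by blast
      then show ?thesis unfolding Ks_def using ph_at_most_1_iff[OF graph_induced[OF gr[OF i]]] by blast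
    qed
    then have "ph1 (cart_prod I Ks)" using Q.ph1_P by blast
    then show ?thesis using ind Q by simp
  qed
qed

end


theorem part4:
  fixes I :: "'i set" and Gs :: "'i \<Rightarrow> 'd graph"
  assumes "\<forall>i\<in>I. partial_cube (Gs i) \<and> ph_homogeneous (Gs i)" "a \<in> PiE I (\<lambda>i. verts (Gs i))"
  shows "partial_cube (weak_cart_prod I Gs a) \<and> ph_homogeneous (weak_cart_prod I Gs a)"
proof -
  have p: "pcf (Gs i)" if "i \<in> I" for i using assms(1) that partial_cube_iff by blast
  interpret prodg I Gs using pcf_graph[OF p] pcf_conn[OF p] by unfold_locales
  have "pcf (W a)" using W_pcf[OF assms(2) p] by blast
  moreover have "ph_homogeneous (W a)" using ph_W[OF assms(2)] assms(1) by blast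
  ultimately have "partial_cube (W a) \<and> ph_homogeneous (W a)" using partial_cube_iff[of "W a"] by simp
  then show ?thesis using weak_eq[of a] by simp
qed

theorem part3:
  fixes I :: "'i set" and Gs :: "'i \<Rightarrow> 'd graph"
  assumes "finite I" "\<forall>i\<in>I. partial_cube (Gs i) \<and> ph_homogeneous (Gs i)"
  shows "partial_cube (cart_prod I Gs) \<and> ph_homogeneous (cart_prod I Gs)"
proof -
  have p: "pcf (Gs i)" if "i \<in> I" for i using assms(2) that partial_cube_iff by blast
  interpret prodg I Gs using pcf_graph[OF p] pcf_conn[OF p] by unfold_locales
  have "\<forall>i\<in>I. verts (Gs i) \<noteq> {}" using pcf_conn[OF p] unfolding connected_graph_def by blast
  then have "V \<noteq> {}" by (simp add: PiE_eq_empty_iff)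
  then obtain a where a: "a \<in> V" by blast
  have "\<forall>b. finite (diff a b)" using diff_sub assms(1) finite_subset by blast
  then have "Comp a = V" using Comp_eq[OF a] by simp
  then have "W a = P" using induced_self[OF graph_P] verts_P by simp
  moreover have "partial_cube (weak_cart_prod I Gs a) \<and> ph_homogeneous (weak_cart_prod I Gs a)"
    using part4[OF assms(2) a] .
  ultimately show ?thesis using weak_eq by simp
qed


locale pcg =
  fixes G :: "'a graph" and F :: "'a set set"
  assumes g: "graph G" and c: "connected_graph G" and F: "pcfami G F id"
begin

abbreviation "sp x y \<equiv> sepi F id x y"

lemma reachG: "x \<in> verts G \<Longrightarrow> y \<in> verts G \<Longrightarrow> reach G x y" using connected_reach[OF c] .

lemma sp_fin: "x \<in> verts G \<Longrightarrow> y \<in> verts G \<Longrightarrow> finite (sp x y)" using F unfolding pcfami_def by blast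

lemma sp_dist: "x \<in> verts G \<Longrightarrow> y \<in> verts G \<Longrightarrow> dist G x y = card (sp x y)" using F unfolding pcfami_def by blast

lemma sp_tri: "sp x z = (sp x y \<union> sp y z) - (sp x y \<inter> sp y z)"
  unfolding sepi_def by auto

lemma sp_disj:
  assumes v: "x \<in> verts G" "y \<in> verts G" "z \<in> verts G"
  shows "y \<in> interval G x z \<longleftrightarrow> sp x y \<inter> sp y z = {}"
proof -
  let ?X = "sp x y" and ?Y = "sp y z"
  have fX: "finite ?X" "finite ?Y" using sp_fin v by auto
  have st: "sp x z = (?X \<union> ?Y) - (?X \<inter> ?Y)" by (rule sp_tri)
  have "card (sp x z) = card (?X \<union> ?Y) - card (?X \<inter> ?Y)"
    unfolding st using fX by (intro card_Diff_subset) auto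
  also have "\<dots> = card ?X + card ?Y - 2 * card (?X \<inter> ?Y)"
    using card_Un_Int[OF fX] by simp
  finally have e: "card (sp x z) = card ?X + card ?Y - 2 * card (?X \<inter> ?Y)" .
  have le: "card (?X \<inter> ?Y) \<le> card ?X" using fX by (simp add: card_mono)
  have "y \<in> interval G x z \<longleftrightarrow> dist G x y + dist G y z = dist G x z"
    using interval_conn[OF g c v(1) v(3)] v(2) by blast
  also have "\<dots> \<longleftrightarrow> card ?X + card ?Y = card (sp x z)" using sp_dist v by simp
  also have "\<dots> \<longleftrightarrow> card (?X \<inter> ?Y) = 0" using e le by auto
  also have "\<dots> \<longleftrightarrow> ?X \<inter> ?Y = {}" using fX by simp
  finally show ?thesis .
qed

end

section \<open>Gated sets\<close>

locale gset =
  fixes G :: "'a graph" and A :: "'a set"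
  assumes g: "graph G" and c: "connected_graph G" and gt: "gated G A"
begin

lemma AV: "A \<subseteq> verts G" using gt unfolding gated_def by blast

lemma reachG: "x \<in> verts G \<Longrightarrow> y \<in> verts G \<Longrightarrow> reach G x y" using connected_reach[OF c] .

definition gate :: "'a \<Rightarrow> 'a" where
  "gate x = (SOME y. y \<in> A \<and> (\<forall>z\<in>A. y \<in> interval G x z))"

lemma gate_prop: assumes "x \<in> verts G" shows "gate x \<in> A \<and> (\<forall>z\<in>A. gate x \<in> interval G x z)"
proof -
  have "\<exists>y. y \<in> A \<and> (\<forall>z\<in>A. y \<in> interval G x z)" using gt assms unfolding gated_def by blast
  then show ?thesis unfolding gate_def by (rule someI_ex)
qed

lemma gate_in: "x \<in> verts G \<Longrightarrow> gate x \<in> A" using gate_prop by blast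

lemma gate_V: "x \<in> verts G \<Longrightarrow> gate x \<in> verts G" using gate_in AV by blast

lemma gate_int: "x \<in> verts G \<Longrightarrow> z \<in> A \<Longrightarrow> gate x \<in> interval G x z" using gate_prop by blast

lemma gate_dist: assumes "x \<in> verts G" "z \<in> A"
  shows "dist G x z = dist G x (gate x) + dist G (gate x) z"
proof -
  have zv: "z \<in> verts G" using assms(2) AV by blast
  have "gate x \<in> interval G x z" using gate_int[OF assms] .
  then show ?thesis using interval_conn[OF g c assms(1) zv, of "gate x"] by simp
qed

lemma gate_id: assumes "x \<in> A" shows "gate x = x"
proof -
  have "x \<in> verts G" using assms AV by blast
  then have "gate x \<in> interval G x x" using gate_int assms by blast
  then show ?thesis using interval_self[OF g \<open>x \<in> verts G\<close>] by simp
qed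

lemma A_convex: "convex G A"
  unfolding convex_def
proof (intro conjI ballI subsetI)
  fix x assume "x \<in> A" then show "x \<in> verts G" using AV by blast
next
  fix x y w assume xy: "x \<in> A" "y \<in> A" and w: "w \<in> interval G x y"
  have v: "x \<in> verts G" "y \<in> verts G" using xy AV by auto
  have wv: "w \<in> verts G" and e: "dist G x w + dist G w y = dist G x y"
    using w interval_conn[OF g c v] by auto
  let ?p = "gate w"
  have pv: "?p \<in> verts G" using gate_V[OF wv] .
  have "dist G w x = dist G w ?p + dist G ?p x" using gate_dist[OF wv xy(1)] .
  moreover have "dist G w y = dist G w ?p + dist G ?p y" using gate_dist[OF wv xy(2)] .
  moreover have "dist G x y \<le> dist G x ?p + dist G ?p y" by (rule dist_triangle[OF reachG[OF v(1) pv] reachG[OF pv v(2)]])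
  moreover have "dist G x w = dist G w x" "dist G x ?p = dist G ?p x"
    using dist_sym[OF g reachG[OF v(1) wv]] dist_sym[OF g reachG[OF v(1) pv]] by auto
  ultimately have "dist G w ?p = 0" using e by linarith
  then have "w = ?p" using dist_0_eq[OF reachG[OF wv pv]] by simp
  then show "w \<in> A" using gate_in[OF wv] by simp
qed

lemma gate_L:
  assumes uv: "u \<in> verts G" "v \<in> verts G" and z: "z \<in> A" "z \<in> interval G u v"
  shows "z \<in> interval G (gate u) (gate v)"
proof -
  have zv: "z \<in> verts G" using z AV by blast
  let ?a = "gate u" and ?b = "gate v"
  have av: "?a \<in> verts G" "?b \<in> verts G" using gate_V uv by auto
  have e: "dist G u z + dist G z v = dist G u v" using z(2) interval_conn[OF g c uv] by blast
  have d1: "dist G u z = dist G u ?a + dist G ?a z" using gate_dist[OF uv(1) z(1)] .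
  have d2: "dist G v z = dist G v ?b + dist G ?b z" using gate_dist[OF uv(2) z(1)] .
  have s: "dist G z v = dist G v z" "dist G z ?b = dist G ?b z" "dist G ?b v = dist G v ?b"
    using dist_sym[OF g reachG[OF zv uv(2)]] dist_sym[OF g reachG[OF zv av(2)]] dist_sym[OF g reachG[OF av(2) uv(2)]]
    by auto
  have t1: "dist G ?a ?b \<le> dist G ?a z + dist G z ?b" by (rule dist_triangle[OF reachG[OF av(1) zv] reachG[OF zv av(2)]])
  have t3: "dist G ?a v \<le> dist G ?a ?b + dist G ?b v" by (rule dist_triangle[OF reachG[OF av(1) av(2)] reachG[OF av(2) uv(2)]])
  have t4: "dist G u v \<le> dist G u ?a + dist G ?a v" by (rule dist_triangle[OF reachG[OF uv(1) av(1)] reachG[OF av(1) uv(2)]])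
  have "dist G ?a z + dist G z ?b = dist G ?a ?b" using e d1 d2 s t1 t3 t4 by linarith
  then show ?thesis using interval_conn[OF g c av] zv by blast
qed

end

locale gpc = gset G A + pcg G F for G :: "'a graph" and A F
begin

lemma split_nosep:
  assumes H: "H \<in> F" and ab: "a \<in> A" "b \<in> A" "(a \<in> H) \<noteq> (b \<in> H)" and x: "x \<in> verts G"
  shows "(x \<in> H) = (gate x \<in> H)"
proof (rule ccontr)
  assume ne: "(x \<in> H) \<noteq> (gate x \<in> H)"
  let ?p = "gate x"
  obtain z where z: "z \<in> A" "(?p \<in> H) \<noteq> (z \<in> H)" using ab by blast
  have zv: "z \<in> verts G" "?p \<in> verts G" using z AV gate_V x by auto
  have "?p \<in> interval G x z" using gate_int[OF x z(1)] .
  then have "sp x ?p \<inter> sp ?p z = {}" using sp_disj[OF x zv(2) zv(1)] by blast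
  moreover have "H \<in> sp x ?p" "H \<in> sp ?p z" using H ne z unfolding sepi_def by auto
  ultimately show False by blast
qed

lemma gate_mono:
  assumes v: "v \<in> verts G" "v' \<in> verts G" and w: "w \<in> interval G v v'"
  shows "gate w \<in> interval G (gate v) (gate v')"
proof -
  have wv: "w \<in> verts G" using w interval_verts[of G] by blast
  have gv: "gate v \<in> verts G" "gate v' \<in> verts G" "gate w \<in> verts G" using gate_V v wv by auto
  have d: "sp v w \<inter> sp w v' = {}" using sp_disj[OF v(1) wv v(2)] w by blast
  have "sp (gate v) (gate w) \<inter> sp (gate w) (gate v') = {}"
  proof (rule ccontr)
    assume "sp (gate v) (gate w) \<inter> sp (gate w) (gate v') \<noteq> {}"
    then obtain H where H: "H \<in> F" "(gate v \<in> H) \<noteq> (gate w \<in> H)" "(gate w \<in> H) \<noteq> (gate v' \<in> H)"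
      unfolding sepi_def by auto
    have s1: "(v \<in> H) = (gate v \<in> H)" using split_nosep[OF H(1) gate_in[OF v(1)] gate_in[OF wv] H(2) v(1)] .
    have s2: "(w \<in> H) = (gate w \<in> H)" using split_nosep[OF H(1) gate_in[OF v(1)] gate_in[OF wv] H(2) wv] .
    have s3: "(v' \<in> H) = (gate v' \<in> H)" using split_nosep[OF H(1) gate_in[OF v(1)] gate_in[OF wv] H(2) v(2)] .
    have "H \<in> sp v w \<inter> sp w v'" using H s1 s2 s3 unfolding sepi_def by auto
    then show False using d by blast
  qed
  then show ?thesis using sp_disj[OF gv(1) gv(3) gv(2)] by blast
qed

lemma pre_convex:
  assumes S: "convex G S" "S \<subseteq> A"
  shows "convex G {v \<in> verts G. gate v \<in> S}"
  unfolding convex_def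
proof (intro conjI ballI subsetI)
  fix v assume "v \<in> {v \<in> verts G. gate v \<in> S}" then show "v \<in> verts G" by simp
next
  fix v v' w assume vv: "v \<in> {v \<in> verts G. gate v \<in> S}" "v' \<in> {v \<in> verts G. gate v \<in> S}"
    and w: "w \<in> interval G v v'"
  have v: "v \<in> verts G" "v' \<in> verts G" "gate v \<in> S" "gate v' \<in> S" using vv by auto
  have wv: "w \<in> verts G" using w interval_verts[of G] by blast
  have "gate w \<in> interval G (gate v) (gate v')" using gate_mono[OF v(1,2) w] .
  then have "gate w \<in> S" using S v unfolding convex_def by blast
  then show "w \<in> {v \<in> verts G. gate v \<in> S}" using wv by simp
qed

end


locale amal =
  fixes G :: "'a graph" and A0 A1 :: "'a set"
  assumes g: "graph G" and c: "connected_graph G" and gt0: "gated G A0" and gt1: "gated G A1"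
    and ne: "A0 \<inter> A1 \<noteq> {}" and cov: "A0 \<union> A1 = verts G"
begin

sublocale G0: gset G A0 using g c gt0 by unfold_locales
sublocale G1: gset G A1 using g c gt1 by unfold_locales

abbreviation "\<pi>0 \<equiv> G0.gate"
abbreviation "\<pi>1 \<equiv> G1.gate"

lemma swap: "amal G A1 A0" using g c gt0 gt1 ne cov by unfold_locales auto

lemma reachG: "x \<in> verts G \<Longrightarrow> y \<in> verts G \<Longrightarrow> reach G x y" using connected_reach[OF c] .

lemma gate01: assumes "x \<in> A1" shows "\<pi>0 x \<in> A0 \<inter> A1"
proof -
  obtain z where z: "z \<in> A0" "z \<in> A1" using ne by blast
  have xv: "x \<in> verts G" using assms G1.AV by blast
  have "\<pi>0 x \<in> interval G x z" using G0.gate_int[OF xv z(1)] .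
  then have "\<pi>0 x \<in> A1" using G1.A_convex assms z(2) unfolding convex_def by blast
  then show ?thesis using G0.gate_in[OF xv] by blast
qed

lemma gate10: assumes "x \<in> A0" shows "\<pi>1 x \<in> A0 \<inter> A1"
proof -
  obtain z where z: "z \<in> A0" "z \<in> A1" using ne by blast
  have xv: "x \<in> verts G" using assms G0.AV by blast
  have "\<pi>1 x \<in> interval G x z" using G1.gate_int[OF xv z(2)] .
  then have "\<pi>1 x \<in> A0" using G0.A_convex assms z(1) unfolding convex_def by blast
  then show ?thesis using G1.gate_in[OF xv] by blast
qed

sublocale C0: convsub G A0 using g c G0.A_convex by unfold_locales
sublocale C1: convsub G A1 using g c G1.A_convex by unfold_locales

definition split :: "'a set \<Rightarrow> bool" where
  "split H \<longleftrightarrow> (\<exists>p\<in>A0 \<inter> A1. \<exists>q\<in>A0 \<inter> A1. p \<in> H \<and> q \<notin> H)"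

lemma nosplit_eq: "\<not> split H \<Longrightarrow> p \<in> A0 \<inter> A1 \<Longrightarrow> q \<in> A0 \<inter> A1 \<Longrightarrow> (p \<in> H) = (q \<in> H)"
  unfolding split_def by blast

lemma split_of_sep: "p \<in> A0 \<inter> A1 \<Longrightarrow> q \<in> A0 \<inter> A1 \<Longrightarrow> (p \<in> H) \<noteq> (q \<in> H) \<Longrightarrow> split H"
  unfolding split_def by blast

end

locale amalpc = amal G A0 A1 for G :: "'a graph" and A0 A1 +
  fixes F0 F1 :: "'a set set"
  assumes F0: "pcfami (induced G A0) F0 id" and F1: "pcfami (induced G A1) F1 id"
begin

lemma d0: "u \<in> A0 \<Longrightarrow> v \<in> A0 \<Longrightarrow> finite (sepi F0 id u v) \<and> dist G u v = card (sepi F0 id u v)"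
  using F0 C0.dist_eq unfolding pcfami_def by fastforce

lemma d1: "u \<in> A1 \<Longrightarrow> v \<in> A1 \<Longrightarrow> finite (sepi F1 id u v) \<and> dist G u v = card (sepi F1 id u v)"
  using F1 C1.dist_eq unfolding pcfami_def by fastforce

lemma pcg1: "pcg (induced G A1) F1"
  using C1.graph_ind convex_connected_induced[OF g c G1.A_convex] G1.gate_in ne F1
  by unfold_locales auto

lemma nosplit1:
  assumes v: "v \<in> A1" and H: "H \<in> F1" and s: "(v \<in> H) \<noteq> (\<pi>0 v \<in> H)"
  shows "\<not> split H"
proof
  assume "split H"
  then obtain p q where pq: "p \<in> A0 \<inter> A1" "q \<in> A0 \<inter> A1" "p \<in> H" "q \<notin> H" unfolding split_def by blast
  let ?b = "\<pi>0 v"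
  have b: "?b \<in> A0 \<inter> A1" using gate01[OF v] .
  obtain z where z: "z \<in> A0 \<inter> A1" "(?b \<in> H) \<noteq> (z \<in> H)" using pq by blast
  have vv: "v \<in> verts G" using v G1.AV by blast
  have "?b \<in> interval G v z" using G0.gate_int[OF vv] z by blast
  then have "?b \<in> interval (induced G A1) v z" using C1.interval_eq v z by blast
  then have "sepi F1 id v ?b \<inter> sepi F1 id ?b z = {}"
    using pcg.sp_disj[OF pcg1, of v ?b z] v b z by simp
  moreover have "H \<in> sepi F1 id v ?b" "H \<in> sepi F1 id ?b z" using H s z unfolding sepi_def by auto
  ultimately show False by blast
qed

definition J :: "('a set + 'a set) set" where
  "J = Inl ` F0 \<union> Inr ` {H \<in> F1. \<not> split H}"

definition hf :: "'a set + 'a set \<Rightarrow> 'a set" where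
  "hf = case_sum (\<lambda>H. {v \<in> verts G. \<pi>0 v \<in> H}) (\<lambda>H. {v \<in> verts G. \<pi>1 v \<in> H})"

definition X :: "'a \<Rightarrow> 'a \<Rightarrow> 'a set set" where "X u v = sepi F0 id (\<pi>0 u) (\<pi>0 v)"
definition Y :: "'a \<Rightarrow> 'a \<Rightarrow> 'a set set" where
  "Y u v = {H \<in> F1. \<not> split H \<and> (\<pi>1 u \<in> H) \<noteq> (\<pi>1 v \<in> H)}"

lemma sepJ: assumes "u \<in> verts G" "v \<in> verts G"
  shows "sepi J hf u v = Inl ` X u v \<union> Inr ` Y u v"
  using assms unfolding sepi_def J_def hf_def X_def Y_def by auto

lemma finXY: assumes "u \<in> verts G" "v \<in> verts G" shows "finite (X u v)" "finite (Y u v)"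
proof -
  show "finite (X u v)" unfolding X_def using d0 G0.gate_in assms by blast
  have "Y u v \<subseteq> sepi F1 id (\<pi>1 u) (\<pi>1 v)" unfolding Y_def sepi_def by auto
  moreover have "finite (sepi F1 id (\<pi>1 u) (\<pi>1 v))" using d1 G1.gate_in assms by blast
  ultimately show "finite (Y u v)" using finite_subset by blast
qed

lemma cardJ: assumes "u \<in> verts G" "v \<in> verts G"
  shows "finite (sepi J hf u v) \<and> card (sepi J hf u v) = card (X u v) + card (Y u v)"
proof -
  have f: "finite (X u v)" "finite (Y u v)" using finXY[OF assms] by auto
  have "card (Inl ` X u v \<union> Inr ` Y u v) = card (Inl ` X u v :: ('a set + 'a set) set) + card (Inr ` Y u v :: ('a set + 'a set) set)"
  proof (rule card_Un_disjoint)
    show "finite (Inl ` X u v :: ('a set + 'a set) set)" "finite (Inr ` Y u v :: ('a set + 'a set) set)" using f by auto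
    show "(Inl ` X u v :: ('a set + 'a set) set) \<inter> Inr ` Y u v = {}" by auto
  qed
  also have "\<dots> = card (X u v) + card (Y u v)" by (simp add: card_image)
  finally show ?thesis using sepJ[OF assms] f by simp
qed

lemma case_A0:
  assumes u: "u \<in> A0" and v: "v \<in> verts G"
  shows "dist G u v = card (X u v) + card (Y u v)"
proof (cases "v \<in> A0")
  case True
  have "X u v = sepi F0 id u v" unfolding X_def using G0.gate_id u True by simp
  moreover have "Y u v = {}"
    using nosplit_eq gate10[OF u] gate10[OF True] unfolding Y_def by blast
  ultimately show ?thesis using d0[OF u True] by simp
next
  case False
  then have v1: "v \<in> A1" using v cov by blast
  have uv: "u \<in> verts G" using u G0.AV by blast
  let ?b = "\<pi>0 v"
  have b: "?b \<in> A0 \<inter> A1" using gate01[OF v1] .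
  have "X u v = sepi F0 id u ?b" unfolding X_def using G0.gate_id u by simp
  then have cx: "card (X u v) = dist G u ?b" using d0[OF u] b by simp
  have "Y u v = sepi F1 id ?b v"
  proof
    show "Y u v \<subseteq> sepi F1 id ?b v"
      using nosplit_eq[OF _ gate10[OF u] b] G1.gate_id[OF v1] unfolding Y_def sepi_def by auto
    show "sepi F1 id ?b v \<subseteq> Y u v"
    proof
      fix H assume H: "H \<in> sepi F1 id ?b v"
      then have H1: "H \<in> F1" "(?b \<in> H) \<noteq> (v \<in> H)" unfolding sepi_def by auto
      then have ns: "\<not> split H" using nosplit1[OF v1 H1(1)] by blast
      then have "(\<pi>1 u \<in> H) = (?b \<in> H)" using nosplit_eq[OF _ gate10[OF u] b] by blast
      then show "H \<in> Y u v" unfolding Y_def using H1 ns G1.gate_id[OF v1] by auto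
    qed
  qed
  then have cy: "card (Y u v) = dist G ?b v" using d1[OF _ v1] b by simp
  have "dist G v u = dist G v ?b + dist G ?b u" using G0.gate_dist[OF v u] .
  moreover have "dist G u v = dist G v u" "dist G ?b u = dist G u ?b" "dist G v ?b = dist G ?b v"
    using dist_sym[OF g reachG] uv v b G0.AV by (metis IntD1 subsetD)+
  ultimately show ?thesis using cx cy by simp
qed

lemma case_A1:
  assumes u: "u \<in> A1" and v: "v \<in> A1"
  shows "dist G u v = card (X u v) + card (Y u v)"
proof -
  let ?a = "\<pi>0 u" and ?b = "\<pi>0 v"
  have ab: "?a \<in> A0 \<inter> A1" "?b \<in> A0 \<inter> A1" using gate01 u v by auto
  have cx: "card (X u v) = card (sepi F1 id ?a ?b)"
    using d0[of ?a ?b] d1[of ?a ?b] ab unfolding X_def by auto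
  define Z where "Z = {H \<in> F1. split H \<and> (u \<in> H) \<noteq> (v \<in> H)}"
  have Yeq: "Y u v = {H \<in> F1. \<not> split H \<and> (u \<in> H) \<noteq> (v \<in> H)}"
    unfolding Y_def using G1.gate_id u v by simp
  have s: "sepi F1 id u v = Y u v \<union> Z" unfolding Yeq Z_def sepi_def by auto
  have dj: "Y u v \<inter> Z = {}" unfolding Yeq Z_def by auto
  have Zeq: "Z = sepi F1 id ?a ?b"
  proof
    show "Z \<subseteq> sepi F1 id ?a ?b"
    proof
      fix H assume "H \<in> Z"
      then have H: "H \<in> F1" "split H" "(u \<in> H) \<noteq> (v \<in> H)" unfolding Z_def by auto
      have "(u \<in> H) = (?a \<in> H)" using nosplit1[OF u H(1)] H(2) by blast
      moreover have "(v \<in> H) = (?b \<in> H)" using nosplit1[OF v H(1)] H(2) by blast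
      ultimately show "H \<in> sepi F1 id ?a ?b" using H unfolding sepi_def by auto
    qed
    show "sepi F1 id ?a ?b \<subseteq> Z"
    proof
      fix H assume "H \<in> sepi F1 id ?a ?b"
      then have H: "H \<in> F1" "(?a \<in> H) \<noteq> (?b \<in> H)" unfolding sepi_def by auto
      then have sp: "split H" using split_of_sep[OF ab] by blast
      have "(u \<in> H) = (?a \<in> H)" using nosplit1[OF u H(1)] sp by blast
      moreover have "(v \<in> H) = (?b \<in> H)" using nosplit1[OF v H(1)] sp by blast
      ultimately show "H \<in> Z" unfolding Z_def using H sp by auto
    qed
  qed
  have uvv: "u \<in> verts G" "v \<in> verts G" using u v G1.AV by auto
  have fY: "finite (Y u v)" "finite Z" using finXY[OF uvv] Zeq d1 ab by auto
  have "dist G u v = card (sepi F1 id u v)" using d1[OF u v] by simp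
  also have "\<dots> = card (Y u v) + card Z" unfolding s using card_Un_disjoint[OF fY dj] .
  finally show ?thesis using cx Zeq by simp
qed

lemma pcf_G: "pcf G"
proof -
  have "pcfami G J hf" unfolding pcfami_def
  proof (intro ballI)
    fix u v assume uv: "u \<in> verts G" "v \<in> verts G"
    have "dist G u v = card (X u v) + card (Y u v)"
    proof (cases "u \<in> A0")
      case True then show ?thesis using case_A0 uv by blast
    next
      case False
      then have u1: "u \<in> A1" using uv cov by blast
      show ?thesis
      proof (cases "v \<in> A1")
        case True then show ?thesis using case_A1 u1 by blast
      next
        case False
        then have v0: "v \<in> A0" using uv cov by blast
        have "dist G v u = card (X v u) + card (Y v u)" using case_A0[OF v0 uv(1)] .
        moreover have "card (sepi J hf u v) = card (sepi J hf v u)" using sepi_sym by metis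
        ultimately show ?thesis using cardJ uv dist_sym[OF g reachG[OF uv]] by metis
      qed
    qed
    then show "finite (sepi J hf u v) \<and> dist G u v = card (sepi J hf u v)" using cardJ[OF uv] by simp
  qed
  then show ?thesis by (rule pcf_intro[OF g c])
qed

end


lemma sub_interval:
  assumes g: "graph G" and c: "connected_graph G" and xz: "x \<in> verts G" "z \<in> verts G"
    and y: "y \<in> interval G x z"
  shows "interval G y z \<subseteq> interval G x z"
proof
  fix w assume w: "w \<in> interval G y z"
  have yv: "y \<in> verts G" using y interval_verts[of G] by blast
  have e1: "dist G x y + dist G y z = dist G x z" using y interval_conn[OF g c xz] by blast
  have wv: "w \<in> verts G" and e2: "dist G y w + dist G w z = dist G y z"
    using w interval_conn[OF g c yv xz(2)] by auto
  have t: "dist G x w \<le> dist G x y + dist G y w"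
    by (rule dist_triangle[OF connected_reach[OF c xz(1) yv] connected_reach[OF c yv wv]])
  have t2: "dist G x z \<le> dist G x w + dist G w z"
    by (rule dist_triangle[OF connected_reach[OF c xz(1) wv] connected_reach[OF c wv xz(2)]])
  have "dist G x w + dist G w z = dist G x z" using e1 e2 t t2 by linarith
  then show "w \<in> interval G x z" using interval_conn[OF g c xz] wv by blast
qed

lemma interval_set_mono: "S \<subseteq> T \<Longrightarrow> interval_set G S \<subseteq> interval_set G T"
  unfolding interval_set_def by blast

lemma interval_set_convex: "graph G \<Longrightarrow> convex G C \<Longrightarrow> interval_set G C = C"
  using interval_set_convex_sub[of G C C] interval_set_sub[of G C] unfolding convex_def by blast

locale amalph = amal G A0 A1 for G :: "'a graph" and A0 A1 +
  fixes F :: "'a set set"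
  assumes F: "pcfami G F id" and ph0: "ph1 (induced G A0)" and ph1': "ph1 (induced G A1)"
begin

sublocale P0: gpc G A0 F using g c gt0 F by unfold_locales
sublocale P1: gpc G A1 F using g c gt1 F by unfold_locales

lemma swapph: "amalph G A1 A0 F"
  using g c gt0 gt1 ne cov F ph0 ph1' by unfold_locales auto

lemma impossible:
  assumes x0: "x \<in> A0" and x1: "x \<notin> A1" and cp: "copoint G x C" and Cne: "C \<noteq> {}"
    and C0: "C \<inter> A0 = {}"
  shows False
proof -
  have Cc: "convex G C" and xC: "x \<notin> C" and mx: "\<And>D. convex G D \<Longrightarrow> C \<subseteq> D \<Longrightarrow> x \<notin> D \<Longrightarrow> D = C"
    using cp unfolding copoint_def by blast+
  have CV: "C \<subseteq> verts G" using Cc unfolding convex_def by blast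
  have C1: "C \<subseteq> A1" using CV C0 cov by blast
  obtain c where cC: "c \<in> C" using Cne by blast
  let ?b = "\<pi>0 c"
  have b: "?b \<in> A0 \<inter> A1" using gate01 C1 cC by blast
  let ?D = "convex_hull G (insert ?b C)"
  have S: "insert ?b C \<subseteq> verts G" using CV b G0.AV by blast
  have Dc: "convex G ?D" using hull_convex[OF S] .
  have "?D \<subseteq> A1" using hull_min[OF G1.A_convex] b C1 by blast
  then have "x \<notin> ?D" using x1 by blast
  moreover have "C \<subseteq> ?D" using hull_sub[of "insert ?b C" G] by blast
  ultimately have "?D = C" using mx[OF Dc] by blast
  then have "?b \<in> C" using hull_sub[of "insert ?b C" G] by blast
  then show False using b C0 by blast
qed

lemma half:
  assumes x0: "x \<in> A0" and cp: "copoint G x C" and ne0: "C \<inter> A0 \<noteq> {}"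
  shows "convex G (interval_set G (insert x C))"
proof -
  have Cc: "convex G C" and xC: "x \<notin> C" and mx: "\<And>D. convex G D \<Longrightarrow> C \<subseteq> D \<Longrightarrow> x \<notin> D \<Longrightarrow> D = C"
    using cp unfolding copoint_def by blast+
  have CV: "C \<subseteq> verts G" using Cc unfolding convex_def by blast
  have xV: "x \<in> verts G" using x0 G0.AV by blast
  define K0 where "K0 = C \<inter> A0"
  define K1 where "K1 = C \<inter> A1"
  define E0 where "E0 = (\<lambda>S. {v \<in> verts G. \<pi>0 v \<in> S})"
  define E1 where "E1 = (\<lambda>S. {v \<in> verts G. \<pi>1 v \<in> S})"
  have K0c: "convex G K0" unfolding K0_def using convex_Int[OF Cc G0.A_convex] .
  have K1c: "convex G K1" unfolding K1_def using convex_Int[OF Cc G1.A_convex] .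
  have E0c: "convex G (E0 S)" if "convex G S" "S \<subseteq> A0" for S using P0.pre_convex[OF that] E0_def by simp
  have E1c: "convex G (E1 S)" if "convex G S" "S \<subseteq> A1" for S using P1.pre_convex[OF that] E1_def by simp
  have E0A: "E0 S \<inter> A0 = S" if "S \<subseteq> A0" for S
    using that G0.gate_id G0.AV unfolding E0_def by auto
  have E1A: "E1 S \<inter> A1 = S" if "S \<subseteq> A1" for S
    using that G1.gate_id G1.AV unfolding E1_def by auto
  have x0K: "x \<notin> K0" using xC K0_def by blast
  have px: "\<pi>0 x = x" using G0.gate_id[OF x0] .
  have CE: "C = E0 K0"
  proof (rule mx[symmetric])
    show "convex G (E0 K0)" using E0c K0c K0_def by blast
    show "C \<subseteq> E0 K0"
    proof
      fix v assume v: "v \<in> C"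
      obtain c0 where c0: "c0 \<in> K0" using ne0 K0_def by blast
      have vv: "v \<in> verts G" using v CV by blast
      have "\<pi>0 v \<in> interval G v c0" using G0.gate_int[OF vv] c0 K0_def by blast
      then have "\<pi>0 v \<in> C" using Cc v c0 K0_def unfolding convex_def by blast
      then show "v \<in> E0 K0" using G0.gate_in[OF vv] vv unfolding E0_def K0_def by blast
    qed
    show "x \<notin> E0 K0" using px x0K unfolding E0_def by simp
  qed
  have cp0: "copoint (induced G A0) x K0" unfolding C0.copoint_iff
  proof (intro conjI allI impI)
    show "K0 \<subseteq> A0" "convex G K0" "x \<notin> K0" using K0_def K0c x0K by auto
    fix D assume D: "D \<subseteq> A0 \<and> convex G D \<and> K0 \<subseteq> D \<and> x \<notin> D"
    have "E0 D = C"
    proof (rule mx)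
      show "convex G (E0 D)" using E0c D by blast
      show "C \<subseteq> E0 D" using CE D unfolding E0_def by blast
      show "x \<notin> E0 D" using px D unfolding E0_def by simp
    qed
    then show "D = K0" using E0A D K0_def by blast
  qed
  let ?T0 = "interval_set G (insert x K0)"
  have T0c: "convex G ?T0" using ph0 C0.ph1_iff x0 cp0 by blast
  have "insert x K0 \<subseteq> A0" using x0 K0_def by blast
  then have T0A: "?T0 \<subseteq> A0" by (rule interval_set_convex_sub[OF G0.A_convex])
  show ?thesis
  proof (cases "K1 = {}")
    case True
    then have "C = K0" using CV cov K0_def K1_def by blast
    then show ?thesis using T0c by simp
  next
    case False
    then obtain b1 where b1: "b1 \<in> K1" by blast
    let ?h = "\<pi>1 x"
    have h: "?h \<in> A0 \<inter> A1" using gate10[OF x0] .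
    have hV: "?h \<in> verts G" using h G0.AV by blast
    have g4b: "\<pi>1 c \<in> K1" if "c \<in> C" for c
    proof -
      have cv: "c \<in> verts G" using that CV by blast
      have "\<pi>1 c \<in> interval G c b1" using G1.gate_int[OF cv] b1 K1_def by blast
      then have "\<pi>1 c \<in> C" using Cc that b1 K1_def unfolding convex_def by blast
      then show ?thesis using G1.gate_in[OF cv] K1_def by blast
    qed
    have g0C: "\<pi>0 c \<in> K0" if "c \<in> C" for c using that CE unfolding E0_def by blast
    have g4a: "?h \<in> ?T0"
    proof -
      have bC: "b1 \<in> C" "b1 \<in> A1" using b1 K1_def by auto
      let ?q = "\<pi>0 b1"
      have q: "?q \<in> K0" "?q \<in> A1" using g0C[OF bC(1)] gate01[OF bC(2)] by auto
      have "?h \<in> interval G x ?q" using G1.gate_int[OF xV q(2)] .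
      then show ?thesis unfolding interval_set_def using q(1) by blast
    qed
    let ?T1 = "interval_set G (insert ?h K1)"
    have T1c: "convex G ?T1"
    proof (cases "?h \<in> K1")
      case True
      then have "insert ?h K1 = K1" by blast
      then show ?thesis using interval_set_convex[OF g K1c] K1c by simp
    next
      case hK: False
      have cp1: "copoint (induced G A1) ?h K1" unfolding C1.copoint_iff
      proof (intro conjI allI impI)
        show "K1 \<subseteq> A1" "convex G K1" "?h \<notin> K1" using K1_def K1c hK by auto
        fix D assume D: "D \<subseteq> A1 \<and> convex G D \<and> K1 \<subseteq> D \<and> ?h \<notin> D"
        have "E1 D = C"
        proof (rule mx)
          show "convex G (E1 D)" using E1c D by blast
          show "C \<subseteq> E1 D" using g4b D CV unfolding E1_def by blast
          show "x \<notin> E1 D" using D unfolding E1_def by simp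
        qed
        then show "D = K1" using E1A D K1_def by blast
      qed
      then show ?thesis using ph1' C1.ph1_iff h by blast
    qed
    have "insert ?h K1 \<subseteq> A1" using h K1_def by blast
    then have T1A: "?T1 \<subseteq> A1" by (rule interval_set_convex_sub[OF G1.A_convex])
    have "insert ?h K1 \<subseteq> verts G" using hV K1_def CV by blast
    then have "insert ?h K1 \<subseteq> ?T1" by (rule interval_set_sub[OF g])
    then have hT1: "?h \<in> ?T1" by blast
    have R2: "?T0 \<inter> A1 \<subseteq> ?T1"
    proof
      fix z assume z: "z \<in> ?T0 \<inter> A1"
      then obtain a b where ab: "a \<in> insert x K0" "b \<in> insert x K0" "z \<in> interval G a b"
        unfolding interval_set_def by blast
      have abv: "a \<in> verts G" "b \<in> verts G" using ab xV CV K0_def by auto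
      have "z \<in> interval G (\<pi>1 a) (\<pi>1 b)" using G1.gate_L[OF abv _ ab(3)] z by blast
      moreover have "\<pi>1 a \<in> insert ?h K1" "\<pi>1 b \<in> insert ?h K1" using ab g4b K0_def by auto
      ultimately show "z \<in> ?T1" unfolding interval_set_def by blast
    qed
    have R1: "?T1 \<inter> A0 \<subseteq> ?T0"
    proof
      fix z assume z: "z \<in> ?T1 \<inter> A0"
      then obtain a b where ab: "a \<in> insert ?h K1" "b \<in> insert ?h K1" "z \<in> interval G a b"
        unfolding interval_set_def by blast
      have abv: "a \<in> verts G" "b \<in> verts G" using ab hV CV K1_def by auto
      have zi: "z \<in> interval G (\<pi>0 a) (\<pi>0 b)" using G0.gate_L[OF abv _ ab(3)] z by blast
      have Q: "\<pi>0 p \<in> insert ?h (K0 \<inter> A1)" if "p \<in> insert ?h K1" for p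
      proof (cases "p = ?h")
        case True then show ?thesis using G0.gate_id h by simp
      next
        case False
        then have "p \<in> C" "p \<in> A1" using that K1_def by auto
        then show ?thesis using g0C gate01 by blast
      qed
      have QT: "interval G p q \<subseteq> ?T0" if "p \<in> insert ?h (K0 \<inter> A1)" "q \<in> insert ?h (K0 \<inter> A1)" for p q
      proof -
        have hx: "interval G ?h q' \<subseteq> ?T0" if "q' \<in> K0 \<inter> A1" for q'
        proof -
          have q'v: "q' \<in> verts G" using that K0_def CV by blast
          have "?h \<in> interval G x q'" using G1.gate_int[OF xV] that by blast
          then have "interval G ?h q' \<subseteq> interval G x q'" using sub_interval[OF g c xV q'v] by blast
          moreover have "interval G x q' \<subseteq> ?T0" unfolding interval_set_def using that by blast
          ultimately show ?thesis by blast
        qed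
        show ?thesis
        proof (cases "p = ?h")
          case ph: True
          show ?thesis
          proof (cases "q = ?h")
            case True then show ?thesis using ph interval_self[OF g hV] g4a by simp
          next
            case False then show ?thesis using ph hx that by blast
          qed
        next
          case pnh: False
          show ?thesis
          proof (cases "q = ?h")
            case qh: True
            have pv: "p \<in> verts G" using that pnh K0_def CV by blast
            have "interval G p q = interval G q p" using interval_sym[OF g reachG[OF pv]] qh hV by simp
            then show ?thesis using hx[of p] that pnh qh by simp
          next
            case False
            then have "p \<in> K0" "q \<in> K0" using pnh that by auto
            then have "interval G p q \<subseteq> K0" using K0c unfolding convex_def by blast
            moreover have "insert x K0 \<subseteq> verts G" using xV CV K0_def by blast
            then have "insert x K0 \<subseteq> ?T0" by (rule interval_set_sub[OF g])
            then have "K0 \<subseteq> ?T0" by blast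
            ultimately show ?thesis by blast
          qed
        qed
      qed
      show "z \<in> ?T0" using QT[OF Q[OF ab(1)] Q[OF ab(2)]] zi by blast
    qed
    have Teq: "interval_set G (insert x C) = ?T0 \<union> ?T1"
    proof
      show "interval_set G (insert x C) \<subseteq> ?T0 \<union> ?T1"
      proof
        fix z assume "z \<in> interval_set G (insert x C)"
        then obtain a b where ab: "a \<in> insert x C" "b \<in> insert x C" "z \<in> interval G a b"
          unfolding interval_set_def by blast
        have abv: "a \<in> verts G" "b \<in> verts G" using ab xV CV by auto
        have zv: "z \<in> verts G" using ab(3) interval_verts[of G] by blast
        show "z \<in> ?T0 \<union> ?T1"
        proof (cases "z \<in> A0")
          case True
          then have "z \<in> interval G (\<pi>0 a) (\<pi>0 b)" using G0.gate_L[OF abv _ ab(3)] by blast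
          moreover have "\<pi>0 a \<in> insert x K0" "\<pi>0 b \<in> insert x K0" using ab px g0C by auto
          ultimately show ?thesis unfolding interval_set_def by blast
        next
          case False
          then have z1: "z \<in> A1" using zv cov by blast
          then have "z \<in> interval G (\<pi>1 a) (\<pi>1 b)" using G1.gate_L[OF abv _ ab(3)] by blast
          moreover have "\<pi>1 a \<in> insert ?h K1" "\<pi>1 b \<in> insert ?h K1" using ab g4b by auto
          ultimately show ?thesis unfolding interval_set_def by blast
        qed
      qed
      show "?T0 \<union> ?T1 \<subseteq> interval_set G (insert x C)"
      proof
        fix z assume z: "z \<in> ?T0 \<union> ?T1"
        show "z \<in> interval_set G (insert x C)"
        proof (cases "z \<in> ?T0")
          case True
          moreover have "insert x K0 \<subseteq> insert x C" using K0_def by blast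
          ultimately show ?thesis using interval_set_mono[of "insert x K0" "insert x C" G] by blast
        next
          case False
          then have "z \<in> ?T1" using z by blast
          then obtain p q where pq: "p \<in> insert ?h K1" "q \<in> insert ?h K1" "z \<in> interval G p q"
            unfolding interval_set_def by blast
          have hK: "interval G ?h q' \<subseteq> interval G x q'" if "q' \<in> K1" for q'
          proof -
            have q'v: "q' \<in> verts G" "q' \<in> A1" using that K1_def CV by auto
            have "?h \<in> interval G x q'" using G1.gate_int[OF xV q'v(2)] .
            then show ?thesis using sub_interval[OF g c xV q'v(1)] by blast
          qed
          have K1C: "K1 \<subseteq> C" using K1_def by blast
          show ?thesis
          proof (cases "p = ?h")
            case ph: True
            show ?thesis
            proof (cases "q = ?h")
              case True
              then have "z = ?h" using pq ph interval_self[OF g hV] by simp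
              moreover have "?h \<in> interval G x b1" using G1.gate_int[OF xV] b1 K1_def by blast
              ultimately show ?thesis unfolding interval_set_def using b1 K1C by blast
            next
              case False
              then have "q \<in> K1" using pq by blast
              then have "z \<in> interval G x q" using hK pq ph by blast
              then show ?thesis unfolding interval_set_def using \<open>q \<in> K1\<close> K1C by blast
            qed
          next
            case pnh: False
            then have pK: "p \<in> K1" using pq by blast
            show ?thesis
            proof (cases "q = ?h")
              case qh: True
              have pv: "p \<in> verts G" using pK K1_def CV by blast
              have "z \<in> interval G q p" using interval_sym[OF g reachG[OF pv hV]] pq qh by simp
              then have "z \<in> interval G x p" using hK[OF pK] qh by blast
              then show ?thesis unfolding interval_set_def using pK K1C by blast
            next
              case False
              then have "q \<in> K1" using pq by blast
              then show ?thesis unfolding interval_set_def using pK K1C pq by blast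
            qed
          qed
        qed
      qed
    qed
    have T0V: "?T0 \<subseteq> verts G" "?T1 \<subseteq> verts G" using T0A T1A G0.AV G1.AV by auto
    have p0: "\<pi>0 u \<in> ?T0" if "u \<in> ?T0 \<union> ?T1" for u
    proof (cases "u \<in> ?T0")
      case True then show ?thesis using G0.gate_id T0A by auto
    next
      case False
      then have u1: "u \<in> ?T1" using that by blast
      have uv: "u \<in> verts G" using u1 T0V by blast
      have "\<pi>0 u \<in> interval G u ?h" using G0.gate_int[OF uv] h by blast
      then have "\<pi>0 u \<in> ?T1" using T1c u1 hT1 unfolding convex_def by blast
      then show ?thesis using R1 G0.gate_in[OF uv] by blast
    qed
    have p1: "\<pi>1 u \<in> ?T1" if "u \<in> ?T0 \<union> ?T1" for u
    proof (cases "u \<in> ?T1")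
      case True then show ?thesis using G1.gate_id T1A by auto
    next
      case False
      then have u0: "u \<in> ?T0" using that by blast
      have uv: "u \<in> verts G" using u0 T0V by blast
      have "\<pi>1 u \<in> interval G u ?h" using G1.gate_int[OF uv] h by blast
      then have "\<pi>1 u \<in> ?T0" using T0c u0 g4a unfolding convex_def by blast
      then show ?thesis using R2 G1.gate_in[OF uv] by blast
    qed
    have "convex G (?T0 \<union> ?T1)"
      unfolding convex_def
    proof (intro conjI ballI subsetI)
      fix u assume "u \<in> ?T0 \<union> ?T1" then show "u \<in> verts G" using T0V by blast
    next
      fix u v z assume uv: "u \<in> ?T0 \<union> ?T1" "v \<in> ?T0 \<union> ?T1" and z: "z \<in> interval G u v"
      have uvv: "u \<in> verts G" "v \<in> verts G" using uv T0V by auto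
      have zv: "z \<in> verts G" using z interval_verts[of G] by blast
      show "z \<in> ?T0 \<union> ?T1"
      proof (cases "z \<in> A0")
        case True
        then have "z \<in> interval G (\<pi>0 u) (\<pi>0 v)" using G0.gate_L[OF uvv _ z] by blast
        then have "z \<in> ?T0" using T0c p0 uv unfolding convex_def by blast
        then show ?thesis by blast
      next
        case False
        then have "z \<in> A1" using zv cov by blast
        then have "z \<in> interval G (\<pi>1 u) (\<pi>1 v)" using G1.gate_L[OF uvv _ z] by blast
        then have "z \<in> ?T1" using T1c p1 uv unfolding convex_def by blast
        then show ?thesis by blast
      qed
    qed
    then show ?thesis using Teq by simp
  qed
qed

lemma ph1_G: "ph1 G"
  unfolding ph1_def
proof (intro ballI allI impI)
  fix x C assume xV: "x \<in> verts G" and cp: "copoint G x C"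
  interpret S: amalph G A1 A0 F using swapph .
  show "convex G (interval_set G (insert x C))"
  proof (cases "C = {}")
    case True
    have "interval_set G {x} = {x}" unfolding interval_set_def using interval_self[OF g xV] by simp
    then show ?thesis using True convex_single[OF g xV] by simp
  next
    case Cne: False
    show ?thesis
    proof (cases "x \<in> A0 \<and> C \<inter> A0 \<noteq> {}")
      case True then show ?thesis using half cp by blast
    next
      case n0: False
      show ?thesis
      proof (cases "x \<in> A1 \<and> C \<inter> A1 \<noteq> {}")
        case True then show ?thesis using S.half cp by blast
      next
        case n1: False
        have CV: "C \<subseteq> verts G" using copoint_verts[OF cp] .
        show ?thesis
        proof (cases "x \<in> A0")
          case x0: True
          then have C0: "C \<inter> A0 = {}" using n0 by blast
          show ?thesis
          proof (cases "x \<in> A1")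
            case True
            then have "C \<inter> A1 = {}" using n1 by blast
            then have "C = {}" using C0 CV cov by blast
            then show ?thesis using Cne by simp
          next
            case False
            then show ?thesis using impossible[OF x0 False cp Cne C0] by simp
          qed
        next
          case x0: False
          then have x1: "x \<in> A1" using xV cov by blast
          then have "C \<inter> A1 = {}" using n1 by blast
          then show ?thesis using S.impossible[OF x1 x0 cp Cne] by simp
        qed
      qed
    qed
  qed
qed

end


lemma pcf_iso:
  assumes iso: "isof K K' f" and gK: "graph K" and p: "pcf K'"
  shows "pcf K"
proof -
  have gK': "graph K'" and cK': "connected_graph K'" using p unfolding pcf_def by auto
  obtain F :: "'b set set" where F: "pcfami K' F id" using p unfolding pcf_def by blast
  have cK: "connected_graph K" using isof_connected[OF isof_inv[OF iso] cK'] .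
  interpret isoc K K' f using iso gK gK' cK by unfold_locales
  have "pcfami K F (\<lambda>H. {v \<in> verts K. f v \<in> H})" unfolding pcfami_def
  proof (intro ballI)
    fix u v assume uv: "u \<in> verts K" "v \<in> verts K"
    have "sepi F (\<lambda>H. {v \<in> verts K. f v \<in> H}) u v = sepi F id (f u) (f v)"
      using uv unfolding sepi_def by auto
    moreover have "dist K u v = dist K' (f u) (f v)" using distf uv by simp
    ultimately show "finite (sepi F (\<lambda>H. {v \<in> verts K. f v \<in> H}) u v) \<and>
        dist K u v = card (sepi F (\<lambda>H. {v \<in> verts K. f v \<in> H}) u v)"
      using F fV uv unfolding pcfami_def by simp
  qed
  then show ?thesis by (rule pcf_intro[OF gK cK])
qed

lemma ph_iso:
  assumes iso: "isof K K' f" and gK: "graph K" and gK': "graph K'" and cK: "connected_graph K"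
    and ph: "ph_homogeneous K'" and B: "finite B" "convex K B"
  shows "ph1 (induced K B)"
proof (cases "B = {}")
  case True then show ?thesis unfolding ph1_def by simp
next
  case False
  interpret isoc K K' f using iso gK gK' cK by unfold_locales
  have BV: "B \<subseteq> verts K" using B unfolding convex_def by blast
  have "convex K' (f ` B)" using convex_img[OF BV] B by simp
  then have "ph_at_most (induced K' (f ` B)) 1" using ph B unfolding ph_homogeneous_def by blast
  then have p': "ph1 (induced K' (f ` B))" using ph_at_most_1_iff[OF graph_induced[OF gK']] by blast
  have iso2: "isof (induced K B) (induced K' (f ` B)) f" using isof_induced[OF iso BV] .
  interpret I2: isoc "induced K B" "induced K' (f ` B)" f
    using iso2 graph_induced[OF gK] graph_induced[OF gK'] convex_connected_induced[OF gK cK B(2) False]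
    by unfold_locales
  show ?thesis using I2.ph1_iso p' by simp
qed

theorem part2:
  fixes G :: "'a graph" and G0 :: "'b graph" and G1 :: "'c graph"
  assumes p0: "partial_cube G0" "ph_homogeneous G0" and p1: "partial_cube G1" "ph_homogeneous G1"
    and am: "gated_amalgam G G0 G1"
  shows "partial_cube G \<and> ph_homogeneous G"
proof -
  have g: "graph G" and c: "connected_graph G" using am unfolding gated_amalgam_def by auto
  have "\<exists>A0 A1. gated G A0 \<and> gated G A1 \<and> A0 \<inter> A1 \<noteq> {} \<and> A0 \<union> A1 = verts G \<and>
        edges G = edges (induced G A0) \<union> edges (induced G A1) \<and>
        graph_iso (induced G A0) G0 \<and> graph_iso (induced G A1) G1"
    using am unfolding gated_amalgam_def by (elim conjE)
  then obtain A0 A1 where gt0: "gated G A0" and gt1: "gated G A1" and ne: "A0 \<inter> A1 \<noteq> {}"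
    and cov: "A0 \<union> A1 = verts G" and i0: "graph_iso (induced G A0) G0" and i1: "graph_iso (induced G A1) G1"
    by blast
  interpret amal G A0 A1 using g c gt0 gt1 ne cov by unfold_locales
  obtain f0 where f0: "isof (induced G A0) G0 f0" using i0 graph_iso_isof by blast
  obtain f1 where f1: "isof (induced G A1) G1 f1" using i1 graph_iso_isof by blast
  have q0: "pcf G0" "pcf G1" using p0 p1 partial_cube_iff by blast+
  have gG0: "graph G0" "graph G1" using q0 unfolding pcf_def by auto
  have k0: "pcf (induced G A0)" using pcf_iso[OF f0 C0.graph_ind q0(1)] .
  have k1: "pcf (induced G A1)" using pcf_iso[OF f1 C1.graph_ind q0(2)] .
  obtain F0 :: "'a set set" where F0: "pcfami (induced G A0) F0 id" using k0 unfolding pcf_def by blast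
  obtain F1 :: "'a set set" where F1: "pcfami (induced G A1) F1 id" using k1 unfolding pcf_def by blast
  interpret amalpc G A0 A1 F0 F1 using F0 F1 by unfold_locales
  have pG: "pcf G" using pcf_G .
  have cA0: "connected_graph (induced G A0)" using convex_connected_induced[OF g c G0.A_convex] ne by blast
  have cA1: "connected_graph (induced G A1)" using convex_connected_induced[OF g c G1.A_convex] ne by blast
  have H0: "ph1 (induced G B)" if B: "finite B" "convex G B" "B \<subseteq> A0" for B
  proof -
    have "convex (induced G A0) B" using C0.convex_iff B by blast
    then have "ph1 (induced (induced G A0) B)" using ph_iso[OF f0 C0.graph_ind gG0(1) cA0 p0(2) B(1)] by blast
    then show ?thesis using induced_induced[OF B(3)] by simp
  qed
  have H1: "ph1 (induced G B)" if B: "finite B" "convex G B" "B \<subseteq> A1" for B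
  proof -
    have "convex (induced G A1) B" using C1.convex_iff B by blast
    then have "ph1 (induced (induced G A1) B)" using ph_iso[OF f1 C1.graph_ind gG0(2) cA1 p1(2) B(1)] by blast
    then show ?thesis using induced_induced[OF B(3)] by simp
  qed
  have "ph_homogeneous G" unfolding ph_homogeneous_iff[OF g]
  proof (intro allI impI)
    fix A assume A: "finite A \<and> convex G A"
    have AV: "A \<subseteq> verts G" using A unfolding convex_def by blast
    show "ph1 (induced G A)"
    proof (cases "A \<inter> A1 = {}")
      case True then show ?thesis using H0 A AV cov by blast
    next
      case n1: False
      show ?thesis
      proof (cases "A \<inter> A0 = {}")
        case True then show ?thesis using H1 A AV cov by blast
      next
        case n0: False
        let ?K = "induced G A"
        interpret CA: convsub G A using g c A by unfold_locales auto
        have gK: "graph ?K" using CA.graph_ind .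
        have cK: "connected_graph ?K" using convex_connected_induced[OF g c] A n0 by blast
        have gtK: "gated ?K (A \<inter> Ak)" if k: "gated G Ak" "A \<inter> Ak \<noteq> {}" for Ak
          unfolding gated_def
        proof (intro conjI ballI)
          interpret Gk: gset G Ak using g c k(1) by unfold_locales
          show "A \<inter> Ak \<subseteq> verts ?K" by simp
          fix x assume x: "x \<in> verts ?K"
          then have xA: "x \<in> A" "x \<in> verts G" using AV by auto
          obtain z where z: "z \<in> A \<inter> Ak" using k(2) by blast
          have "Gk.gate x \<in> interval G x z" using Gk.gate_int[OF xA(2)] z by blast
          then have yA: "Gk.gate x \<in> A" using A xA z unfolding convex_def by blast
          have "\<forall>z\<in>A \<inter> Ak. Gk.gate x \<in> interval ?K x z"
            using Gk.gate_int[OF xA(2)] CA.interval_eq xA by auto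
          then show "\<exists>y\<in>A \<inter> Ak. \<forall>z\<in>A \<inter> Ak. y \<in> interval ?K x z"
            using yA Gk.gate_in[OF xA(2)] by blast
        qed
        have neK: "(A \<inter> A0) \<inter> (A \<inter> A1) \<noteq> {}"
        proof -
          obtain u v where uv: "u \<in> A \<inter> A0" "v \<in> A \<inter> A1" using n0 n1 by blast
          have vv: "v \<in> verts G" using uv AV by blast
          have "\<pi>0 v \<in> interval G v u" using G0.gate_int[OF vv] uv by blast
          then have "\<pi>0 v \<in> A" using A uv unfolding convex_def by blast
          then show ?thesis using gate01 uv by blast
        qed
        interpret KA: amal ?K "A \<inter> A0" "A \<inter> A1"
          using gK cK gtK[OF gt0 n0] gtK[OF gt1 n1] neK AV cov by unfold_locales auto
        have pK: "pcf ?K" using pcf_convex[OF pG] A n0 by blast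
        obtain FK :: "'a set set" where FK: "pcfami ?K FK id" using pK unfolding pcf_def by blast
        have ph0: "ph1 (induced ?K (A \<inter> A0))"
          using H0[of "A \<inter> A0"] A convex_Int[OF _ G0.A_convex] induced_induced[of "A \<inter> A0" A G] by auto
        have ph1: "ph1 (induced ?K (A \<inter> A1))"
          using H1[of "A \<inter> A1"] A convex_Int[OF _ G1.A_convex] induced_induced[of "A \<inter> A1" A G] by auto
        interpret KP: amalph ?K "A \<inter> A0" "A \<inter> A1" FK using FK ph0 ph1 by unfold_locales
        show ?thesis using KP.ph1_G .
      qed
    qed
  qed
  then show ?thesis using pG partial_cube_iff by blast
qed


theorem theorem3p21:
  shows
   "(\<forall>(G :: 'a graph) A. partial_cube G \<and> ph_homogeneous G \<and> convex G A \<and> A \<noteq> {} \<longrightarrow>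
        partial_cube (induced G A) \<and> ph_homogeneous (induced G A))
    \<and> (\<forall>(G :: 'a graph) (G0 :: 'b graph) (G1 :: 'c graph).
        partial_cube G0 \<and> ph_homogeneous G0 \<and> partial_cube G1 \<and> ph_homogeneous G1 \<and>
        gated_amalgam G G0 G1 \<longrightarrow> partial_cube G \<and> ph_homogeneous G)
    \<and> (\<forall>(I :: 'i set) (Gs :: 'i \<Rightarrow> 'd graph).
        finite I \<and> (\<forall>i\<in>I. partial_cube (Gs i) \<and> ph_homogeneous (Gs i)) \<longrightarrow>
        partial_cube (cart_prod I Gs) \<and> ph_homogeneous (cart_prod I Gs))
    \<and> (\<forall>(I :: 'i set) (Gs :: 'i \<Rightarrow> 'd graph) a.
        infinite I \<and> (\<forall>i\<in>I. partial_cube (Gs i) \<and> ph_homogeneous (Gs i)) \<and>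
        a \<in> PiE I (\<lambda>i. verts (Gs i)) \<longrightarrow>
        partial_cube (weak_cart_prod I Gs a) \<and> ph_homogeneous (weak_cart_prod I Gs a))"
  proof -
  have c1: "(\<forall>(G :: 'a graph) A. partial_cube G \<and> ph_homogeneous G \<and> convex G A \<and> A \<noteq> {} \<longrightarrow>
        partial_cube (induced G A) \<and> ph_homogeneous (induced G A))"
  proof (intro allI impI)
    fix G :: "'a graph" and A
    assume "partial_cube G \<and> ph_homogeneous G \<and> convex G A \<and> A \<noteq> {}"
    then show "partial_cube (induced G A) \<and> ph_homogeneous (induced G A)"
      using part1[of G A] by blast
  qed
  have c2: "(\<forall>(G :: 'a graph) (G0 :: 'b graph) (G1 :: 'c graph).
        partial_cube G0 \<and> ph_homogeneous G0 \<and> partial_cube G1 \<and> ph_homogeneous G1 \<and>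
        gated_amalgam G G0 G1 \<longrightarrow> partial_cube G \<and> ph_homogeneous G)"
  proof (intro allI impI)
    fix G :: "'a graph" and G0 :: "'b graph" and G1 :: "'c graph"
    assume h: "partial_cube G0 \<and> ph_homogeneous G0 \<and> partial_cube G1 \<and> ph_homogeneous G1 \<and>
        gated_amalgam G G0 G1"
    then show "partial_cube G \<and> ph_homogeneous G"
      using part2[of G0 G1 G] by blast
  qed
  have c3: "(\<forall>(I :: 'i set) (Gs :: 'i \<Rightarrow> 'd graph).
        finite I \<and> (\<forall>i\<in>I. partial_cube (Gs i) \<and> ph_homogeneous (Gs i)) \<longrightarrow>
        partial_cube (cart_prod I Gs) \<and> ph_homogeneous (cart_prod I Gs))"
  proof (intro allI impI)
    fix I :: "'i set" and Gs :: "'i \<Rightarrow> 'd graph"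
    assume h: "finite I \<and> (\<forall>i\<in>I. partial_cube (Gs i) \<and> ph_homogeneous (Gs i))"
    then show "partial_cube (cart_prod I Gs) \<and> ph_homogeneous (cart_prod I Gs)"
      using part3[of I Gs] by blast
  qed
  have c4: "(\<forall>(I :: 'i set) (Gs :: 'i \<Rightarrow> 'd graph) a.
        infinite I \<and> (\<forall>i\<in>I. partial_cube (Gs i) \<and> ph_homogeneous (Gs i)) \<and>
        a \<in> PiE I (\<lambda>i. verts (Gs i)) \<longrightarrow>
        partial_cube (weak_cart_prod I Gs a) \<and> ph_homogeneous (weak_cart_prod I Gs a))"
  proof (intro allI impI)
    fix I :: "'i set" and Gs :: "'i \<Rightarrow> 'd graph" and a
    assume h: "infinite I \<and> (\<forall>i\<in>I. partial_cube (Gs i) \<and> ph_homogeneous (Gs i)) \<and>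
        a \<in> PiE I (\<lambda>i. verts (Gs i))"
    then show "partial_cube (weak_cart_prod I Gs a) \<and> ph_homogeneous (weak_cart_prod I Gs a)"
      using part4[of I Gs a] by blast
  qed
  show ?thesis using c1 c2 c3 c4 by (intro conjI)
qed

end
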